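(* In the setting of the context, define for $\lambda\in Y$, $t\in\mathbb R$: $\hat P(t,\lambda)=\hat T(t,0,\lambda)S(0,\lambda)P(0)S(0,\lambda)^{-1}\hat T(0,t,\lambda)$ and $\hat Q(t,\lambda)=\hat T(t,0,\lambda)S(0,\lambda)Q(0)S(0,\lambda)^{-1}\hat T(0,t,\lambda)$, where $S(0,\lambda)=U^\lambda(0,0)+V^\lambda(0,0)$ (which is invertible) and $\hat T(t,s,\lambda)$ is the evolution operator of $x'=(A(t)+B(t,\lambda))x$. Then $\hat P(t,\lambda),\hat Q(t,\lambda)$ are complementary projections with $\hat P(t,\lambda)\hat T(t,s,\lambda)=\hat T(t,s,\lambda)\hat P(s,\lambda)$, and with $\hat K=K/(1-KcN)$: (1) $\|\hat T(t,s,\lambda)\hat P(s,\lambda)\|\le\hat K(h(t)/h(s))^a\mu(|s|)^\varepsilon\|\hat P(s,\lambda)\|$ for $t\ge s$, and $\|\hat T(t,s,\lambda)\hat Q(s,\lambda)\|\le\hat K(k(s)/k(t))^{-b}\nu(|s|)^\varepsilon\|\hat Q(s,\lambda)\|$ for $t\le s$; (2) $\|\hat P(t,\lambda)\|\le\frac{K}{1-2K\hat KcN}(\mu(|t|)^\varepsilon+\nu(|t|)^\varepsilon)$ and $\|\hat Q(t,\lambda)\|\le\frac{K}{1-2K\hat KcN}(\mu(|t|)^\varepsilon+\nu(|t|)^\varepsilon)$.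
   Context: Setting: $X$ Banach space, $Y$ open subset of a Banach space with norm $|\cdot|$; $A(t)\in\mathcal B(X)$ continuous with evolution operator $T(t,s)$; $x'=A(t)x$ admits a nonuniform $(h,k,\mu,\nu)$-dichotomy on $\mathbb R$: projections $P(t)$ with $P(t)T(t,s)=T(t,s)P(s)$, $Q=\mathrm{Id}-P$, constants $a<0\le b$, $\varepsilon\ge0$, $K>0$ with $\|T(t,s)P(s)\|\le K(h(t)/h(s))^a\mu(|s|)^\varepsilon$ ($t\ge s$), $\|T(t,s)Q(s)\|\le K(k(s)/k(t))^{-b}\nu(|s|)^\varepsilon$ ($s\ge t$), where $h,k,\mu,\nu$ are growth rates (increasing $u:\mathbb R\to(0,\infty)$, $u(0)=1$, $u(+\infty)=\infty$, $u(-\infty)=0$), with $\lim_{t\to\infty}k(t)^{-b}\nu(|t|)^\varepsilon=0$, $\lim_{t\to-\infty}h(t)^{-a}\mu(|t|)^\varepsilon=0$. $B:\mathbb R\times Y\to\mathcal B(X)$ with $\|B(t,\lambda)\|\le c\min\{\mu(|t|)^{-\omega-\varepsilon},\nu(|t|)^{-\omega-\varepsilon}\}$ and $\|B(t,\lambda_1)-B(t,\lambda_2)\|\le c|\lambda_1-\lambda_2|\min\{\mu(|t|)^{-\omega-\varepsilon},\nu(|t|)^{-\omega-\varepsilon}\}$, $c,\omega>0$; $\nu(|t|)^\varepsilon\int_{-\infty}^t\mu(|\tau|)^{-\omega}d\tau+\mu(|t|)^\varepsilon\int_t^\infty\nu(|\tau|)^{-\omega}d\tau\le N$ for all $t$;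 and $c<[KN(2K+1)]^{-1}$. $\Omega_1$ ($s$ fixed): continuous families $U(t,s)_{t\ge s}\subset\mathcal B(X)$ with $\|U\|_1=\sup_{t\ge s}\|U(t,s)\|(h(t)/h(s))^{-a}\mu(|s|)^{-\varepsilon}<\infty$; $\Omega_2$: continuous families $V(t,s)_{t\le s}$ with $\|V\|_2=\sup_{t\le s}\|V(t,s)\|(k(s)/k(t))^{b}\nu(|s|)^{-\varepsilon}<\infty$. $U^\lambda\in\Omega_1$ is the unique element with $U^\lambda(t,s)=T(t,s)P(s)+\int_s^tT(t,\tau)P(\tau)B(\tau,\lambda)U^\lambda(\tau,s)d\tau-\int_t^\infty T(t,\tau)Q(\tau)B(\tau,\lambda)U^\lambda(\tau,s)d\tau$ ($t\ge s$); $V^\lambda\in\Omega_2$ the unique element with $V^\lambda(t,s)=T(t,s)Q(s)+\int_{-\infty}^tT(t,\tau)P(\tau)B(\tau,\lambda)V^\lambda(\tau,s)d\tau-\int_t^sT(t,\tau)Q(\tau)B(\tau,\lambda)V^\lambda(\tau,s)d\tau$ ($t\le s$). *)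

theory Defs
  imports "HOL-Analysis.Analysis"
begin

definition growth_rate :: "(real \<Rightarrow> real) \<Rightarrow> bool" where
  "growth_rate u \<longleftrightarrow> (\<forall>t. u t > 0) \<and> mono u \<and> u 0 = 1 \<and>
     filterlim u at_top at_top \<and> (u \<longlongrightarrow> 0) at_bot"

definition evolution_operator ::
  "(real \<Rightarrow> 'a::banach \<Rightarrow>\<^sub>L 'a) \<Rightarrow> (real \<Rightarrow> real \<Rightarrow> 'a \<Rightarrow>\<^sub>L 'a) \<Rightarrow> bool" where
  "evolution_operator A T \<longleftrightarrow> (\<forall>s. T s s = id_blinfun) \<and>
     (\<forall>t s. ((\<lambda>t. T t s) has_vector_derivative (A t o\<^sub>L T t s)) (at t))"

end

theory Submission
  imports Defs
begin


lemma gronwall_fwd: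
  fixes \<phi> :: "real \<Rightarrow> real"
  assumes cont: "continuous_on {s..R} \<phi>" and nn: "\<And>t. t \<in> {s..R} \<Longrightarrow> 0 \<le> \<phi> t"
    and le: "\<And>t. t \<in> {s..R} \<Longrightarrow> \<phi> t \<le> C * integral {s..t} \<phi>" and C: "0 \<le> C"
    and t: "t \<in> {s..R}"
  shows "\<phi> t = 0"
proof -
  define \<Phi> where "\<Phi> x = integral {s..x} \<phi>" for x
  define \<Psi> where "\<Psi> x = exp (-C*x) * \<Phi> x" for x
  have intg: "\<phi> integrable_on {s..R}" using cont integrable_continuous_real by blast
  have Phi_cont: "continuous_on {s..R} \<Phi>" unfolding \<Phi>_def
    by (rule indefinite_integral_continuous_1[OF intg])
  have Phi_nn: "0 \<le> \<Phi> x" if "x \<in> {s..R}" for x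
    unfolding \<Phi>_def using that
    by (intro integral_nonneg integrable_on_subinterval[OF intg]) (auto intro: nn)
  have dPhi: "(\<Phi> has_real_derivative \<phi> x) (at x)" if "s < x" "x < R" for x
  proof -
    have "(\<Phi> has_vector_derivative \<phi> x) (at x within {s..R})"
      unfolding \<Phi>_def using that by (intro integral_has_vector_derivative cont) auto
    then show ?thesis using that by (simp add: at_within_Icc_at has_real_derivative_iff_has_vector_derivative)
  qed
  have "\<Psi> t \<le> \<Psi> s"
  proof (rule DERIV_nonpos_imp_decreasing_open[where f=\<Psi>])
    show "s \<le> t" using t by auto
    have "continuous_on {s..R} \<Psi>" unfolding \<Psi>_def
      by (intro continuous_intros Phi_cont)
    then show "continuous_on {s..t} \<Psi>" by (rule continuous_on_subset) (use t in auto)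
    fix x assume x: "s < x" "x < t"
    have "(\<Psi> has_real_derivative (-C * exp (-C*x) * \<Phi> x + exp (-C*x) * \<phi> x)) (at x)"
      unfolding \<Psi>_def using x t
      by (auto intro!: derivative_eq_intros dPhi)
    moreover have "-C * exp (-C*x) * \<Phi> x + exp (-C*x) * \<phi> x \<le> 0"
    proof -
      have "\<phi> x \<le> C * \<Phi> x" unfolding \<Phi>_def using le[of x] x t by auto
      then have "exp (-C*x) * \<phi> x \<le> exp (-C*x) * (C * \<Phi> x)" by (intro mult_left_mono) auto
      then show ?thesis by (simp add: algebra_simps)
    qed
    ultimately show "\<exists>y. (\<Psi> has_real_derivative y) (at x) \<and> y \<le> 0" by blast
  qed
  moreover have "\<Psi> s = 0" unfolding \<Psi>_def \<Phi>_def by simp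
  ultimately have "\<Phi> t \<le> 0" unfolding \<Psi>_def
    by (simp add: mult_le_0_iff)
  then have "\<Phi> t = 0" using Phi_nn[OF t] by auto
  then have "\<phi> t \<le> 0" using le[OF t] unfolding \<Phi>_def by simp
  then show ?thesis using nn[OF t] by auto
qed

lemma gronwall_bwd:
  fixes \<phi> :: "real \<Rightarrow> real"
  assumes cont: "continuous_on {R..s} \<phi>" and nn: "\<And>t. t \<in> {R..s} \<Longrightarrow> 0 \<le> \<phi> t"
    and le: "\<And>t. t \<in> {R..s} \<Longrightarrow> \<phi> t \<le> C * integral {t..s} \<phi>" and C: "0 \<le> C"
    and t: "t \<in> {R..s}"
  shows "\<phi> t = 0"
proof -
  have "(\<lambda>x. \<phi> (-x)) (-t) = 0"
  proof (rule gronwall_fwd[where s="-s" and R="-R" and C=C and \<phi>="\<lambda>x. \<phi> (-x)" and t="-t"])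
    have c1: "continuous_on {-s..-R} (\<lambda>x::real. -x)" by (intro continuous_intros)
    have c2: "(\<lambda>x::real. -x) ` {-s..-R} \<subseteq> {R..s}" by auto
    show "continuous_on {-s..-R} (\<lambda>x. \<phi> (-x))"
      using continuous_on_compose2[OF cont c1 c2] .
    fix x assume x: "x \<in> {-s..-R}"
    then show "0 \<le> \<phi> (-x)" by (intro nn) auto
    have "integral {-s..x} (\<lambda>x. \<phi> (-x)) = integral {-x..s} \<phi>"
      using Henstock_Kurzweil_Integration.integral_reflect_real[where a="-x" and b=s and f=\<phi>] by simp
    then show "\<phi> (-x) \<le> C * integral {-s..x} (\<lambda>x. \<phi> (-x))" using le[of "-x"] x by auto
  qed (use C t in auto)
  then show ?thesis by simp
qed


lemma cmp_assoc: "(a o\<^sub>L b) o\<^sub>L c = a o\<^sub>L (b o\<^sub>L c)" by (rule blinfun_eqI) simp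
lemma cmp_id1[simp]: "id_blinfun o\<^sub>L a = a" by (rule blinfun_eqI) simp
lemma cmp_id2[simp]: "a o\<^sub>L id_blinfun = a" by (rule blinfun_eqI) simp
lemmas cmp_id = cmp_id1 cmp_id2
lemma cmp_add1: "(a + b) o\<^sub>L c = (a o\<^sub>L c) + (b o\<^sub>L c)" by (rule blinfun_eqI) (simp add: blinfun.bilinear_simps)
lemma cmp_add2: "c o\<^sub>L (a + b) = (c o\<^sub>L a) + (c o\<^sub>L b)" by (rule blinfun_eqI) (simp add: blinfun.bilinear_simps)
lemmas cmp_add = cmp_add1 cmp_add2
lemma cmp_diff1: "(a - b) o\<^sub>L c = (a o\<^sub>L c) - (b o\<^sub>L c)" by (rule blinfun_eqI) (simp add: blinfun.bilinear_simps)
lemma cmp_diff2: "c o\<^sub>L (a - b) = (c o\<^sub>L a) - (c o\<^sub>L b)" by (rule blinfun_eqI) (simp add: blinfun.bilinear_simps)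
lemmas cmp_diff = cmp_diff1 cmp_diff2
lemma cmp_minus1: "(- a) o\<^sub>L c = - (a o\<^sub>L c)" by (rule blinfun_eqI) (simp add: blinfun.bilinear_simps)
lemma cmp_minus2: "c o\<^sub>L (- a) = - (c o\<^sub>L a)" by (rule blinfun_eqI) (simp add: blinfun.bilinear_simps)
lemmas cmp_minus = cmp_minus1 cmp_minus2
lemma norm_cmp: "norm (a o\<^sub>L b) \<le> norm a * norm b" by (rule norm_blinfun_compose)

lemma bl_cmp_left: "bounded_linear (\<lambda>x. c o\<^sub>L x)"
  by (rule bounded_bilinear.bounded_linear_right[OF bounded_bilinear_blinfun_compose])
lemma bl_cmp_right: "bounded_linear (\<lambda>x. x o\<^sub>L c)"
  by (rule bounded_bilinear.bounded_linear_left[OF bounded_bilinear_blinfun_compose])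

lemma has_integral_cmp_left:
  "(f has_integral I) S \<Longrightarrow> ((\<lambda>x. c o\<^sub>L f x) has_integral (c o\<^sub>L I)) S"
  using has_integral_linear[OF _ bl_cmp_left, of f I S c] by (simp add: o_def)
lemma has_integral_cmp_right:
  "(f has_integral I) S \<Longrightarrow> ((\<lambda>x. f x o\<^sub>L c) has_integral (I o\<^sub>L c)) S"
  using has_integral_linear[OF _ bl_cmp_right, of f I S c] by (simp add: o_def)

lemma ode_unique:
  fixes d :: "real \<Rightarrow> 'a::banach"
  assumes der: "\<And>\<tau>. (d has_vector_derivative d' \<tau>) (at \<tau>)"
    and bnd: "\<And>\<tau>. \<tau> \<in> {min r t..max r t} \<Longrightarrow> norm (d' \<tau>) \<le> C * norm (d \<tau>)"
    and C: "0 \<le> C" and d0: "d r = 0"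
  shows "d t = 0"
proof -
  have cont: "continuous_on S d" for S
    using der by (meson continuous_at_imp_continuous_on has_vector_derivative_continuous)
  have contn: "continuous_on S (\<lambda>x. norm (d x))" for S
    by (intro continuous_intros cont)
  have der': "(d has_vector_derivative d' \<tau>) (at \<tau> within S)" for \<tau> S
    using der has_vector_derivative_at_within by blast
  show ?thesis
  proof (cases "r \<le> t")
    case True
    have "norm (d t) = 0"
    proof (rule gronwall_fwd[where \<phi>="\<lambda>x. norm (d x)" and s=r and R=t and C=C])
      fix \<tau> assume \<tau>: "\<tau> \<in> {r..t}"
      have fi: "(d' has_integral (d \<tau> - d r)) {r..\<tau>}"
        using \<tau> by (intro fundamental_theorem_of_calculus der') auto
      have i1: "(\<lambda>x. C * norm (d x)) integrable_on {r..\<tau>}"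
        by (intro integrable_continuous_real continuous_intros contn)
      have "norm (integral {r..\<tau>} d') \<le> integral {r..\<tau>} (\<lambda>x. C * norm (d x))"
        by (rule integral_norm_bound_integral[OF _ i1]) (use fi \<tau> in \<open>auto intro!: bnd simp: integrable_on_def\<close>)
      then have "norm (d \<tau>) \<le> integral {r..\<tau>} (\<lambda>x. C * norm (d x))"
        using integral_unique[OF fi] d0 by simp
      then show "norm (d \<tau>) \<le> C * integral {r..\<tau>} (\<lambda>x. norm (d x))" by simp
    qed (use C True contn in auto)
    then show ?thesis by simp
  next
    case False
    have "norm (d t) = 0"
    proof (rule gronwall_bwd[where \<phi>="\<lambda>x. norm (d x)" and s=r and R=t and C=C])
      fix \<tau> assume \<tau>: "\<tau> \<in> {t..r}"
      have fi: "(d' has_integral (d r - d \<tau>)) {\<tau>..r}"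
        using \<tau> by (intro fundamental_theorem_of_calculus der') auto
      have i1: "(\<lambda>x. C * norm (d x)) integrable_on {\<tau>..r}"
        by (intro integrable_continuous_real continuous_intros contn)
      have "norm (integral {\<tau>..r} d') \<le> integral {\<tau>..r} (\<lambda>x. C * norm (d x))"
        by (rule integral_norm_bound_integral[OF _ i1]) (use fi \<tau> in \<open>auto intro!: bnd simp: integrable_on_def\<close>)
      then have "norm (d \<tau>) \<le> integral {\<tau>..r} (\<lambda>x. C * norm (d x))"
        using integral_unique[OF fi] d0 by simp
      then show "norm (d \<tau>) \<le> C * integral {\<tau>..r} (\<lambda>x. norm (d x))" by simp
    qed (use C False contn in auto)
    then show ?thesis by simp
  qed
qed


lemma inv_deriv:
  fixes F Gm :: "real \<Rightarrow> 'a::banach \<Rightarrow>\<^sub>L 'a"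
  assumes inv1: "\<And>y. F y o\<^sub>L Gm y = id_blinfun" and inv2: "\<And>y. Gm y o\<^sub>L F y = id_blinfun"
    and dG: "(Gm has_vector_derivative G') (at x)"
  shows "(F has_vector_derivative - (F x o\<^sub>L G' o\<^sub>L F x)) (at x)"
proof -
  have i1: "blinfun_apply (F y) (blinfun_apply (Gm y) w) = w" for y w
    using arg_cong[OF inv1[of y], of "\<lambda>f. blinfun_apply f w"] by simp
  have i2: "blinfun_apply (Gm y) (blinfun_apply (F y) w) = w" for y w
    using arg_cong[OF inv2[of y], of "\<lambda>f. blinfun_apply f w"] by simp
  have key: "F y - F x = - (F y o\<^sub>L (Gm y - Gm x) o\<^sub>L F x)" for y
    by (rule blinfun_eqI) (simp add: blinfun.bilinear_simps i1 i2)
  have Gc: "(Gm \<longlongrightarrow> Gm x) (at x)"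
    using has_vector_derivative_continuous[OF dG] by (simp add: isCont_def)
  have Gc0: "((\<lambda>y. norm (Gm y - Gm x)) \<longlongrightarrow> 0) (at x)"
    using tendsto_norm_zero[OF LIM_zero[OF Gc]] .
  have ev: "\<forall>\<^sub>F y in at x. norm (Gm y - Gm x) * norm (F x) \<le> 1/2"
  proof -
    have "((\<lambda>y. norm (Gm y - Gm x) * norm (F x)) \<longlongrightarrow> 0 * norm (F x)) (at x)"
      by (intro tendsto_intros Gc0)
    from order_tendstoD(2)[OF this, of "1/2"] show ?thesis by (auto elim: eventually_mono)
  qed
  have bF: "\<forall>\<^sub>F y in at x. norm (F y - F x) \<le> 2 * norm (F x) * norm (F x) * norm (Gm y - Gm x)"
    using ev
  proof eventually_elim
    case (elim y)
    have n1: "norm (F y - F x) \<le> norm (F y) * norm (Gm y - Gm x) * norm (F x)"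
      unfolding key norm_minus_cancel
      by (meson norm_cmp order_trans mult_right_mono norm_ge_zero)
    have "norm (F y) \<le> norm (F x) + norm (F y - F x)" by (metis add.commute diff_add_cancel norm_triangle_ineq)
    also have "\<dots> \<le> norm (F x) + norm (F y) * (norm (Gm y - Gm x) * norm (F x))"
      using n1 by (simp add: mult.assoc)
    also have "\<dots> \<le> norm (F x) + norm (F y) * (1/2)"
      using elim by (intro add_left_mono mult_left_mono) auto
    finally have "norm (F y) \<le> 2 * norm (F x)" by simp
    then have "norm (F y) * norm (Gm y - Gm x) * norm (F x) \<le> 2 * norm (F x) * norm (Gm y - Gm x) * norm (F x)"
      by (intro mult_right_mono) auto
    with n1 show ?case by (simp add: mult_ac)
  qed
  have Fc0: "((\<lambda>y. F y - F x) \<longlongrightarrow> 0) (at x)"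
  proof (rule Lim_null_comparison[OF bF])
    show "((\<lambda>y. 2 * norm (F x) * norm (F x) * norm (Gm y - Gm x)) \<longlongrightarrow> 0) (at x)"
      using tendsto_mult_right_zero[OF Gc0] by simp
  qed
  have Fc: "(F \<longlongrightarrow> F x) (at x)" using Fc0 by (simp add: LIM_zero_iff)
  define \<rho> where "\<rho> y = norm (Gm y - Gm x - (y - x) *\<^sub>R G') / norm (y - x)" for y
  have r0: "(\<rho> \<longlongrightarrow> 0) (at x)"
    using dG unfolding \<rho>_def has_vector_derivative_def has_derivative_iff_norm by simp
  define F' where "F' = - (F x o\<^sub>L G' o\<^sub>L F x)"
  have iden: "F y - F x - (y - x) *\<^sub>R F' = - (F y o\<^sub>L (Gm y - Gm x - (y - x) *\<^sub>R G') o\<^sub>L F x)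
      - (y - x) *\<^sub>R ((F y - F x) o\<^sub>L G' o\<^sub>L F x)" for y
    unfolding F'_def
    apply (subst (1) key)
    apply (rule blinfun_eqI)
    apply (simp add: blinfun.bilinear_simps scaleR_diff_right)
    done
  have "((\<lambda>y. norm (F y - F x - (y - x) *\<^sub>R F') / norm (y - x)) \<longlongrightarrow> 0) (at x)"
  proof (rule Lim_null_comparison)
    show "\<forall>\<^sub>F y in at x. norm (norm (F y - F x - (y - x) *\<^sub>R F') / norm (y - x))
        \<le> norm (F y) * \<rho> y * norm (F x) + norm (F y - F x) * norm G' * norm (F x)"
    proof (rule eventually_at_filter[THEN iffD2], rule always_eventually, intro allI impI)
      fix y assume "y \<noteq> x"
      then have yx: "norm (y - x) > 0" by simp
      have "norm (F y - F x - (y - x) *\<^sub>R F') \<le>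
          norm (F y) * norm (Gm y - Gm x - (y - x) *\<^sub>R G') * norm (F x)
          + norm (y - x) * (norm (F y - F x) * norm G' * norm (F x))"
      proof -
        have a: "norm (F y o\<^sub>L (Gm y - Gm x - (y - x) *\<^sub>R G') o\<^sub>L F x) \<le>
            norm (F y) * norm (Gm y - Gm x - (y - x) *\<^sub>R G') * norm (F x)"
          by (meson norm_cmp order_trans mult_right_mono norm_ge_zero)
        have b: "norm ((F y - F x) o\<^sub>L G' o\<^sub>L F x) \<le> norm (F y - F x) * norm G' * norm (F x)"
          by (meson norm_cmp order_trans mult_right_mono norm_ge_zero)
        have "norm (F y - F x - (y - x) *\<^sub>R F') \<le> norm (F y o\<^sub>L (Gm y - Gm x - (y - x) *\<^sub>R G') o\<^sub>L F x)
            + norm ((y - x) *\<^sub>R ((F y - F x) o\<^sub>L G' o\<^sub>L F x))"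
          unfolding iden by (metis norm_minus_cancel norm_triangle_ineq4)
        also have "\<dots> \<le> norm (F y) * norm (Gm y - Gm x - (y - x) *\<^sub>R G') * norm (F x)
          + norm (y - x) * (norm (F y - F x) * norm G' * norm (F x))" using a b by (auto intro!: add_mono mult_left_mono)
        finally show ?thesis .
      qed
      then have "norm (F y - F x - (y - x) *\<^sub>R F') / norm (y - x) \<le>
          (norm (F y) * norm (Gm y - Gm x - (y - x) *\<^sub>R G') * norm (F x)) / norm (y - x)
          + norm (F y - F x) * norm G' * norm (F x)"
        using yx by (simp add: divide_simps) (simp add: algebra_simps)
      then show "norm (norm (F y - F x - (y - x) *\<^sub>R F') / norm (y - x))
        \<le> norm (F y) * \<rho> y * norm (F x) + norm (F y - F x) * norm G' * norm (F x)"
        unfolding \<rho>_def by (simp add: mult_ac)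
    qed
    have "((\<lambda>y. norm (F y) * \<rho> y * norm (F x) + norm (F y - F x) * norm G' * norm (F x))
        \<longlongrightarrow> norm (F x) * 0 * norm (F x) + 0 * norm G' * norm (F x)) (at x)"
      by (intro tendsto_intros Fc r0) (use Fc0 tendsto_norm_zero in blast)
    then show "((\<lambda>y. norm (F y) * \<rho> y * norm (F x) + norm (F y - F x) * norm G' * norm (F x)) \<longlongrightarrow> 0) (at x)"
      by simp
  qed
  then have "(F has_derivative (\<lambda>h. h *\<^sub>R F')) (at x)"
    unfolding has_derivative_iff_norm by (auto intro: bounded_linear_scaleR_left)
  then show ?thesis unfolding has_vector_derivative_def F'_def .
qed


lemma neumann:
  fixes E :: "'a::banach \<Rightarrow>\<^sub>L 'a"
  assumes nE: "norm E < 1"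
  shows "\<exists>S. ((id_blinfun - E) o\<^sub>L S) = id_blinfun \<and> (S o\<^sub>L (id_blinfun - E)) = id_blinfun"
proof -
  define pw where "pw n = ((\<lambda>X. E o\<^sub>L X) ^^ n) id_blinfun" for n
  have pw0: "pw 0 = id_blinfun" unfolding pw_def by simp
  have pwS: "pw (Suc n) = (E o\<^sub>L pw n)" for n unfolding pw_def by simp
  have pwS': "pw (Suc n) = (pw n o\<^sub>L E)" for n
  proof (induction n)
    case 0 then show ?case by (simp add: pwS pw0)
  next
    case (Suc n)
    have "pw (Suc (Suc n)) = (E o\<^sub>L pw (Suc n))" by (rule pwS)
    also have "\<dots> = (E o\<^sub>L (pw n o\<^sub>L E))" using Suc by simp
    also have "\<dots> = ((E o\<^sub>L pw n) o\<^sub>L E)" by (simp add: cmp_assoc)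
    also have "\<dots> = (pw (Suc n) o\<^sub>L E)" by (simp add: pwS)
    finally show ?case .
  qed
  have nb: "norm (pw n) \<le> norm E ^ n" for n
  proof (induction n)
    case 0 then show ?case by (simp add: pw0 norm_blinfun_id_le)
  next
    case (Suc n)
    have "norm (pw (Suc n)) \<le> norm E * norm (pw n)" unfolding pwS by (rule norm_cmp)
    also have "\<dots> \<le> norm E * norm E ^ n" using Suc by (intro mult_left_mono) auto
    finally show ?case by simp
  qed
  have sn: "summable (\<lambda>n. norm (pw n))"
    by (rule summable_comparison_test[OF _ summable_geometric[of "norm E"]])
      (use nb nE in auto)
  have s: "summable pw" by (rule summable_norm_cancel[OF sn])
  define S where "S = suminf pw"
  have sS: "summable (\<lambda>n. pw (Suc n))" using s by (simp add: summable_Suc_iff)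
  have split: "S = pw 0 + (\<Sum>n. pw (Suc n))" unfolding S_def using suminf_split_head[OF s] by simp
  have ES: "(E o\<^sub>L S) = (\<Sum>n. pw (Suc n))"
    unfolding S_def using bounded_linear.suminf[OF bl_cmp_left s, of E] by (simp add: pwS)
  have SE: "(S o\<^sub>L E) = (\<Sum>n. pw (Suc n))"
    unfolding S_def using bounded_linear.suminf[OF bl_cmp_right s, of E] by (simp add: pwS')
  show ?thesis
  proof (intro exI conjI)
    show "((id_blinfun - E) o\<^sub>L S) = id_blinfun"
      using split ES pw0 by (simp add: cmp_diff1)
    show "(S o\<^sub>L (id_blinfun - E)) = id_blinfun"
      using split SE pw0 by (simp add: cmp_diff2)
  qed
qed


lemma evol_cocycle:
  fixes G :: "real \<Rightarrow> 'a::banach \<Rightarrow>\<^sub>L 'a"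
  assumes ev: "evolution_operator G E"
    and bnd: "\<And>a b. \<exists>C. \<forall>t\<in>{a..b}. norm (G t) \<le> C"
  shows "E t r o\<^sub>L E r s = E t s"
proof -
  define d where "d \<tau> = (E \<tau> r o\<^sub>L E r s) - E \<tau> s" for \<tau>
  have E0: "E s s = id_blinfun" for s using ev unfolding evolution_operator_def by auto
  have Ed: "((\<lambda>t. E t s) has_vector_derivative (G t o\<^sub>L E t s)) (at t)" for t s
    using ev unfolding evolution_operator_def by auto
  have dd: "(d has_vector_derivative (G \<tau> o\<^sub>L d \<tau>)) (at \<tau>)" for \<tau>
  proof -
    have "((\<lambda>\<tau>. E \<tau> r o\<^sub>L E r s) has_vector_derivative
        ((E \<tau> r o\<^sub>L 0) + ((G \<tau> o\<^sub>L E \<tau> r) o\<^sub>L E r s))) (at \<tau>)"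
      by (rule bounded_bilinear.has_vector_derivative[OF bounded_bilinear_blinfun_compose Ed])
        (rule has_vector_derivative_const)
    then have "((\<lambda>\<tau>. E \<tau> r o\<^sub>L E r s) has_vector_derivative (G \<tau> o\<^sub>L (E \<tau> r o\<^sub>L E r s))) (at \<tau>)"
      by (simp add: cmp_assoc)
    from has_vector_derivative_diff[OF this Ed[where t=\<tau> and s=s]]
    show ?thesis unfolding d_def by (simp add: cmp_diff)
  qed
  obtain C where C: "\<forall>t\<in>{min r t..max r t}. norm (G t) \<le> C" using bnd by blast
  have "d t = 0"
  proof (rule ode_unique[OF dd, where r=r and C="max C 0"])
    fix \<tau> assume "\<tau> \<in> {min r t..max r t}"
    then have "norm (G \<tau>) \<le> max C 0" using C by force
    then show "norm (G \<tau> o\<^sub>L d \<tau>) \<le> max C 0 * norm (d \<tau>)"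
      by (meson norm_cmp order_trans mult_right_mono norm_ge_zero)
  qed (auto simp: d_def E0)
  then show ?thesis unfolding d_def by simp
qed

lemma cont_bound_compact:
  fixes G :: "real \<Rightarrow> 'a::real_normed_vector"
  assumes "continuous_on UNIV G"
  shows "\<exists>C. \<forall>t\<in>{a..b}. norm (G t) \<le> C"
proof -
  have "compact (G ` {a..b})"
    by (rule compact_continuous_image) (use assms continuous_on_subset in auto)
  then obtain C where "\<forall>x\<in>G ` {a..b}. norm x \<le> C" using compact_imp_bounded bounded_iff by metis
  then show ?thesis by auto
qed

lemma evol_cont:
  assumes "evolution_operator G E"
  shows "continuous_on S (\<lambda>t. E t s)"
  using assms unfolding evolution_operator_def
  by (meson continuous_at_imp_continuous_on has_vector_derivative_continuous)

locale setting =
  fixes A :: "real \<Rightarrow> 'x::banach \<Rightarrow>\<^sub>L 'x"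
    and T :: "real \<Rightarrow> real \<Rightarrow> 'x \<Rightarrow>\<^sub>L 'x"
    and P :: "real \<Rightarrow> 'x \<Rightarrow>\<^sub>L 'x"
    and h k \<mu> \<nu> :: "real \<Rightarrow> real"
    and a b \<epsilon> K c \<omega> N :: real
    and Bl :: "real \<Rightarrow> 'x \<Rightarrow>\<^sub>L 'x"
    and U V That :: "real \<Rightarrow> real \<Rightarrow> 'x \<Rightarrow>\<^sub>L 'x"
  assumes A_cont: "continuous_on UNIV A"
    and T_evol: "evolution_operator A T"
    and gr_h: "growth_rate h" and gr_k: "growth_rate k" and gr_mu: "growth_rate \<mu>" and gr_nu: "growth_rate \<nu>"
    and P_proj: "\<And>t. P t o\<^sub>L P t = P t"
    and P_inv: "\<And>t s. P t o\<^sub>L T t s = T t s o\<^sub>L P s"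
    and a_neg: "a < 0" and b_nn: "0 \<le> b" and eps_nn: "\<epsilon> \<ge> 0" and K_pos: "K > 0"
    and dich_P: "\<And>t s. t \<ge> s \<Longrightarrow>
        norm (T t s o\<^sub>L P s) \<le> K * (h t / h s) powr a * \<mu> \<bar>s\<bar> powr \<epsilon>"
    and dich_Q: "\<And>t s. s \<ge> t \<Longrightarrow>
        norm (T t s o\<^sub>L (id_blinfun - P s)) \<le> K * (k s / k t) powr (-b) * \<nu> \<bar>s\<bar> powr \<epsilon>"
    and lim_k: "((\<lambda>t. k t powr (-b) * \<nu> \<bar>t\<bar> powr \<epsilon>) \<longlongrightarrow> 0) at_top"
    and lim_h: "((\<lambda>t. h t powr (-a) * \<mu> \<bar>t\<bar> powr \<epsilon>) \<longlongrightarrow> 0) at_bot"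
    and c_pos: "c > 0" and omega_pos: "\<omega> > 0"
    and B_bound: "\<And>t. norm (Bl t) \<le> c * min (\<mu> \<bar>t\<bar> powr (-\<omega>-\<epsilon>)) (\<nu> \<bar>t\<bar> powr (-\<omega>-\<epsilon>))"
    and N_int1: "\<And>t. (\<lambda>\<tau>. \<mu> \<bar>\<tau>\<bar> powr (-\<omega>)) integrable_on {..t}"
    and N_int2: "\<And>t. (\<lambda>\<tau>. \<nu> \<bar>\<tau>\<bar> powr (-\<omega>)) integrable_on {t..}"
    and N_bound: "\<And>t. \<nu> \<bar>t\<bar> powr \<epsilon> * integral {..t} (\<lambda>\<tau>. \<mu> \<bar>\<tau>\<bar> powr (-\<omega>))
        + \<mu> \<bar>t\<bar> powr \<epsilon> * integral {t..} (\<lambda>\<tau>. \<nu> \<bar>\<tau>\<bar> powr (-\<omega>)) \<le> N"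
    and c_small: "c < 1 / (K * N * (2 * K + 1))"
    and U_cont: "\<And>s. continuous_on {s..} (\<lambda>t. U t s)"
    and U_Omega1: "\<And>s. \<exists>M. \<forall>t\<ge>s.
        norm (U t s) * (h t / h s) powr (-a) * \<mu> \<bar>s\<bar> powr (-\<epsilon>) \<le> M"
    and U_eq: "\<And>t s. t \<ge> s \<Longrightarrow> \<exists>I1 I2.
        ((\<lambda>\<tau>. T t \<tau> o\<^sub>L P \<tau> o\<^sub>L Bl \<tau> o\<^sub>L U \<tau> s) has_integral I1) {s..t} \<and>
        ((\<lambda>\<tau>. T t \<tau> o\<^sub>L (id_blinfun - P \<tau>) o\<^sub>L Bl \<tau> o\<^sub>L U \<tau> s) has_integral I2) {t..} \<and>
        U t s = (T t s o\<^sub>L P s) + I1 - I2"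
    and V_cont: "\<And>s. continuous_on {..s} (\<lambda>t. V t s)"
    and V_Omega2: "\<And>s. \<exists>M. \<forall>t\<le>s.
        norm (V t s) * (k s / k t) powr b * \<nu> \<bar>s\<bar> powr (-\<epsilon>) \<le> M"
    and V_eq: "\<And>t s. t \<le> s \<Longrightarrow> \<exists>I1 I2.
        ((\<lambda>\<tau>. T t \<tau> o\<^sub>L P \<tau> o\<^sub>L Bl \<tau> o\<^sub>L V \<tau> s) has_integral I1) {..t} \<and>
        ((\<lambda>\<tau>. T t \<tau> o\<^sub>L (id_blinfun - P \<tau>) o\<^sub>L Bl \<tau> o\<^sub>L V \<tau> s) has_integral I2) {t..s} \<and>
        V t s = (T t s o\<^sub>L (id_blinfun - P s)) + I1 - I2"
    and That_evol: "evolution_operator (\<lambda>t. A t + Bl t) That"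
begin

abbreviation Q where "Q t \<equiv> id_blinfun - P t"

lemma gr_facts:
  assumes "growth_rate u"
  shows "u t > 0" "t \<le> s \<Longrightarrow> u t \<le> u s" "1 \<le> u \<bar>t\<bar>" "1 \<le> u \<bar>t\<bar> powr \<epsilon>"
proof -
  show u0: "u t > 0" for t using assms unfolding growth_rate_def by auto
  show "t \<le> s \<Longrightarrow> u t \<le> u s" using assms unfolding growth_rate_def mono_def by auto
  have "u 0 \<le> u \<bar>t\<bar>" using assms unfolding growth_rate_def mono_def by (meson abs_ge_zero)
  then show g1: "1 \<le> u \<bar>t\<bar>" using assms unfolding growth_rate_def by auto
  then show "1 \<le> u \<bar>t\<bar> powr \<epsilon>" using eps_nn by (simp add: ge_one_powr_ge_zero)
qed

lemma pos: "h t > 0" "k t > 0" "\<mu> t > 0" "\<nu> t > 0"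
  using gr_facts gr_h gr_k gr_mu gr_nu by auto
lemma mono_hk: "t \<le> s \<Longrightarrow> h t \<le> h s" "t \<le> s \<Longrightarrow> k t \<le> k s"
  using gr_facts gr_h gr_k by auto
lemma ge1: "1 \<le> \<mu> \<bar>t\<bar> powr \<epsilon>" "1 \<le> \<nu> \<bar>t\<bar> powr \<epsilon>" "1 \<le> \<mu> \<bar>t\<bar>" "1 \<le> \<nu> \<bar>t\<bar>"
  using gr_facts gr_mu gr_nu by auto

lemma powr_neg_le1: "1 \<le> x \<Longrightarrow> e \<le> 0 \<Longrightarrow> x powr e \<le> (1::real)"
  using powr_mono[of e 0 x] by simp

lemma Bl_le_c: "norm (Bl t) \<le> c"
proof -
  have "\<mu> \<bar>t\<bar> powr (-\<omega>-\<epsilon>) \<le> 1" using ge1 omega_pos eps_nn by (intro powr_neg_le1) auto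
  then have "c * min (\<mu> \<bar>t\<bar> powr (-\<omega>-\<epsilon>)) (\<nu> \<bar>t\<bar> powr (-\<omega>-\<epsilon>)) \<le> c * 1"
    using c_pos by (intro mult_left_mono) auto
  then show ?thesis using B_bound[of t] by simp
qed

lemma Bl_le: "norm (Bl t) \<le> c * \<mu> \<bar>t\<bar> powr (-\<omega>-\<epsilon>)" "norm (Bl t) \<le> c * \<nu> \<bar>t\<bar> powr (-\<omega>-\<epsilon>)"
  using B_bound[of t] c_pos by (auto intro: order_trans simp: mult_left_mono)

end


context setting begin

lemma AB_bnd: "\<exists>C. \<forall>t\<in>{a'..b'}. norm (A t + Bl t) \<le> C"
proof -
  obtain C where C: "\<forall>t\<in>{a'..b'}. norm (A t) \<le> C" using cont_bound_compact[OF A_cont] by blast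
  have "norm (A t + Bl t) \<le> C + c" if "t \<in> {a'..b'}" for t
    using C that Bl_le_c[of t] by (meson add_mono norm_triangle_ineq order_trans)
  then show ?thesis by blast
qed

lemma T_co: "T t r o\<^sub>L T r s = T t s"
  by (rule evol_cocycle[OF T_evol]) (rule cont_bound_compact[OF A_cont])
lemma Th_co: "That t r o\<^sub>L That r s = That t s"
  by (rule evol_cocycle[OF That_evol]) (rule AB_bnd)
lemma T_id[simp]: "T s s = id_blinfun" using T_evol unfolding evolution_operator_def by auto
lemma Th_id[simp]: "That s s = id_blinfun" using That_evol unfolding evolution_operator_def by auto
lemma T_der: "((\<lambda>t. T t s) has_vector_derivative (A t o\<^sub>L T t s)) (at t)"
  using T_evol unfolding evolution_operator_def by auto
lemma Th_der: "((\<lambda>t. That t s) has_vector_derivative ((A t + Bl t) o\<^sub>L That t s)) (at t)"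
  using That_evol unfolding evolution_operator_def by auto

lemma T_co3: "T t r o\<^sub>L (T r s o\<^sub>L X) = T t s o\<^sub>L X" by (simp add: T_co flip: cmp_assoc)
lemma Th_co3: "That t r o\<^sub>L (That r s o\<^sub>L X) = That t s o\<^sub>L X" by (simp add: Th_co flip: cmp_assoc)

lemma T_der2: "((\<lambda>\<tau>. T t \<tau>) has_vector_derivative - (T t \<tau> o\<^sub>L A \<tau>)) (at \<tau>)"
proof -
  have "((\<lambda>\<tau>. T 0 \<tau>) has_vector_derivative - (T 0 \<tau> o\<^sub>L (A \<tau> o\<^sub>L T \<tau> 0) o\<^sub>L T 0 \<tau>)) (at \<tau>)"
    by (rule inv_deriv[where Gm="\<lambda>\<tau>. T \<tau> 0"]) (auto simp: T_co T_der)
  moreover have "T 0 \<tau> o\<^sub>L (A \<tau> o\<^sub>L T \<tau> 0) o\<^sub>L T 0 \<tau> = T 0 \<tau> o\<^sub>L A \<tau>"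
    by (simp add: cmp_assoc T_co)
  ultimately have d0: "((\<lambda>\<tau>. T 0 \<tau>) has_vector_derivative - (T 0 \<tau> o\<^sub>L A \<tau>)) (at \<tau>)" by simp
  have "((\<lambda>\<tau>. T t 0 o\<^sub>L T 0 \<tau>) has_vector_derivative (T t 0 o\<^sub>L - (T 0 \<tau> o\<^sub>L A \<tau>)) + (0 o\<^sub>L T 0 \<tau>)) (at \<tau>)"
    by (rule bounded_bilinear.has_vector_derivative[OF bounded_bilinear_blinfun_compose
          has_vector_derivative_const d0])
  then show ?thesis by (simp add: T_co cmp_minus flip: cmp_assoc)
qed

lemma T_cont1: "continuous_on S (\<lambda>t. T t s)" by (rule evol_cont[OF T_evol])
lemma Th_cont1: "continuous_on S (\<lambda>t. That t s)" by (rule evol_cont[OF That_evol])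
lemma T_cont2: "continuous_on S (\<lambda>\<tau>. T t \<tau>)"
  using T_der2 by (meson continuous_at_imp_continuous_on has_vector_derivative_continuous)

lemma voc_der: "((\<lambda>\<tau>. T r \<tau> o\<^sub>L That \<tau> s) has_vector_derivative (T r \<tau> o\<^sub>L Bl \<tau> o\<^sub>L That \<tau> s)) (at \<tau>)"
proof -
  have "((\<lambda>\<tau>. T r \<tau> o\<^sub>L That \<tau> s) has_vector_derivative
      (T r \<tau> o\<^sub>L ((A \<tau> + Bl \<tau>) o\<^sub>L That \<tau> s)) + (- (T r \<tau> o\<^sub>L A \<tau>) o\<^sub>L That \<tau> s)) (at \<tau>)"
    by (rule bounded_bilinear.has_vector_derivative[OF bounded_bilinear_blinfun_compose T_der2 Th_der])
  moreover have "(T r \<tau> o\<^sub>L ((A \<tau> + Bl \<tau>) o\<^sub>L That \<tau> s)) + (- (T r \<tau> o\<^sub>L A \<tau>) o\<^sub>L That \<tau> s)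
      = T r \<tau> o\<^sub>L Bl \<tau> o\<^sub>L That \<tau> s"
    by (rule blinfun_eqI) (simp add: blinfun.bilinear_simps)
  ultimately show ?thesis by simp
qed

lemma voc_fwd: "s \<le> t \<Longrightarrow>
  ((\<lambda>\<tau>. T r \<tau> o\<^sub>L Bl \<tau> o\<^sub>L That \<tau> s) has_integral ((T r t o\<^sub>L That t s) - T r s)) {s..t}"
proof -
  assume st: "s \<le> t"
  have "((\<lambda>\<tau>. T r \<tau> o\<^sub>L Bl \<tau> o\<^sub>L That \<tau> s) has_integral
      ((T r t o\<^sub>L That t s) - (T r s o\<^sub>L That s s))) {s..t}"
    by (rule fundamental_theorem_of_calculus[OF st]) (rule has_vector_derivative_at_within[OF voc_der])
  then show ?thesis by simp
qed

lemma voc_bwd: "t \<le> s \<Longrightarrow>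
  ((\<lambda>\<tau>. T r \<tau> o\<^sub>L Bl \<tau> o\<^sub>L That \<tau> s) has_integral (T r s - (T r t o\<^sub>L That t s))) {t..s}"
proof -
  assume st: "t \<le> s"
  have "((\<lambda>\<tau>. T r \<tau> o\<^sub>L Bl \<tau> o\<^sub>L That \<tau> s) has_integral
      ((T r s o\<^sub>L That s s) - (T r t o\<^sub>L That t s))) {t..s}"
    by (rule fundamental_theorem_of_calculus[OF st]) (rule has_vector_derivative_at_within[OF voc_der])
  then show ?thesis by simp
qed

lemma PQ: "P t o\<^sub>L Q t = 0" "Q t o\<^sub>L P t = 0" "Q t o\<^sub>L Q t = Q t"
  by (simp_all add: cmp_diff P_proj)
lemma Q_inv: "Q t o\<^sub>L T t s = T t s o\<^sub>L Q s"
  by (simp add: cmp_diff P_inv)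
lemma P_plus_Q: "P t + Q t = id_blinfun" by simp

definition J1 where "J1 t = integral {..t} (\<lambda>\<tau>. \<mu> \<bar>\<tau>\<bar> powr (-\<omega>))"
definition J2 where "J2 t = integral {t..} (\<lambda>\<tau>. \<nu> \<bar>\<tau>\<bar> powr (-\<omega>))"

lemma J_nn: "0 \<le> J1 t" "0 \<le> J2 t"
  unfolding J1_def J2_def by (auto intro!: integral_nonneg N_int1 N_int2)

lemma J_N: "\<nu> \<bar>t\<bar> powr \<epsilon> * J1 t + \<mu> \<bar>t\<bar> powr \<epsilon> * J2 t \<le> N"
  using N_bound[of t] unfolding J1_def J2_def .

lemma J_sum: "J1 t + J2 t \<le> N"
proof -
  have "J1 t \<le> \<nu> \<bar>t\<bar> powr \<epsilon> * J1 t" using ge1(2)[of t] J_nn(1)[of t] by (simp add: mult_le_cancel_right1)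
  moreover have "J2 t \<le> \<mu> \<bar>t\<bar> powr \<epsilon> * J2 t" using ge1(1)[of t] J_nn(2)[of t] by (simp add: mult_le_cancel_right1)
  ultimately show ?thesis using J_N[of t] by linarith
qed

lemma N_pos: "N > 0"
proof -
  have N0: "N \<ge> 0" using J_sum[of 0] J_nn[of 0] by linarith
  show ?thesis
  proof (rule ccontr)
    assume "\<not> N > 0" then have "N = 0" using N0 by auto
    then show False using c_small c_pos by simp
  qed
qed

definition xx where "xx = K * c * N"
definition Kh where "Kh = K / (1 - xx)"

lemma xx_pos: "0 < xx" unfolding xx_def using K_pos c_pos N_pos by simp
lemma xx_small: "xx * (2 * K + 1) < 1"
proof -
  have D: "K * N * (2 * K + 1) > 0" using K_pos N_pos by simp
  have "c * (K * N * (2 * K + 1)) < 1" using c_small D by (simp add: field_simps)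
  then show ?thesis unfolding xx_def by (simp add: mult_ac)
qed
lemma xx_lt1: "xx < 1"
proof -
  have "xx * 1 \<le> xx * (2 * K + 1)" using xx_pos K_pos by (intro mult_left_mono) auto
  then show ?thesis using xx_small by simp
qed
lemma Kh_pos: "Kh > 0" unfolding Kh_def using K_pos xx_lt1 by simp
lemma Kh_eq: "K + xx * Kh = Kh" unfolding Kh_def using xx_lt1 by (simp add: field_simps)
lemma K_le_Kh: "K \<le> Kh"
proof -
  have "0 < xx * Kh" using xx_pos Kh_pos by simp
  then show ?thesis using Kh_eq by linarith
qed

lemma geom_bound:
  fixes v \<alpha> D x :: real
  assumes "\<And>n. v \<le> \<alpha> + x ^ n * D" "0 \<le> x" "x < 1"
  shows "v \<le> \<alpha>"
proof -
  have "(\<lambda>n. \<alpha> + x ^ n * D) \<longlonglongrightarrow> \<alpha> + 0 * D"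
    by (intro tendsto_intros LIMSEQ_power_zero) (use assms in auto)
  then show ?thesis using assms(1) by (intro LIMSEQ_le_const) (auto)
qed

end


lemma norm3: "norm (X o\<^sub>L Y o\<^sub>L Z) \<le> norm X * norm Y * norm Z"
  by (meson norm_cmp order_trans mult_right_mono norm_ge_zero)

lemma int_cmul_real: "f integrable_on S \<Longrightarrow> (\<lambda>x. C * f x) integrable_on S" for f :: "'a::euclidean_space \<Rightarrow> real"
  using integrable_cmul[of f S C] by simp

context setting begin

lemma pos_ne[simp]: "h t \<noteq> 0" "k t \<noteq> 0" "\<mu> t \<noteq> 0" "\<nu> t \<noteq> 0" using pos by (auto simp: less_le)
declare pos[simp]
lemma pos_le[simp]: "0 \<le> h t" "0 \<le> k t" "0 \<le> \<mu> t" "0 \<le> \<nu> t" using pos by (auto intro: less_imp_le)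
lemma consts_pos[simp]: "0 \<le> K" "0 < K" "0 \<le> c" "0 < c" using K_pos c_pos by auto

definition wU where "wU s t = (h t / h s) powr a * \<mu> \<bar>s\<bar> powr \<epsilon>"
definition wV where "wV s t = (k s / k t) powr (-b) * \<nu> \<bar>s\<bar> powr \<epsilon>"

lemma wU_pos: "wU s t > 0" unfolding wU_def using pos by simp
lemma wV_pos: "wV s t > 0" unfolding wV_def using pos by simp

lemma wU_anti: "t \<le> \<tau> \<Longrightarrow> wU s \<tau> \<le> wU s t"
proof -
  assume "t \<le> \<tau>"
  then have "h t / h s \<le> h \<tau> / h s" using mono_hk(1) by (intro divide_right_mono) auto
  then have "(h \<tau> / h s) powr a \<le> (h t / h s) powr a" using a_neg by (intro powr_mono2') auto
  then show ?thesis unfolding wU_def by (intro mult_right_mono) auto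
qed

lemma wV_mono: "\<tau> \<le> t \<Longrightarrow> wV s \<tau> \<le> wV s t"
proof -
  assume "\<tau> \<le> t"
  then have "k \<tau> \<le> k t" by (rule mono_hk)
  then have "k s / k t \<le> k s / k \<tau>" using pos[of s] pos[of t] pos[of \<tau>]
    by (intro divide_left_mono) (auto intro: less_imp_le)
  then have "(k s / k \<tau>) powr (-b) \<le> (k s / k t) powr (-b)"
    using pos b_nn by (intro powr_mono2') auto
  then show ?thesis unfolding wV_def by (intro mult_right_mono) auto
qed

lemma wU_ss: "wU s s = \<mu> \<bar>s\<bar> powr \<epsilon>" unfolding wU_def using pos by simp
lemma wV_ss: "wV s s = \<nu> \<bar>s\<bar> powr \<epsilon>" unfolding wV_def using pos by simp

lemma wU_le_ss: "s \<le> t \<Longrightarrow> wU s t \<le> \<mu> \<bar>s\<bar> powr \<epsilon>" using wU_anti wU_ss by metis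
lemma wV_le_ss: "t \<le> s \<Longrightarrow> wV s t \<le> \<nu> \<bar>s\<bar> powr \<epsilon>" using wV_mono wV_ss by metis

lemma ptU1:
  assumes "s \<le> \<tau>" "\<tau> \<le> t" "norm (Z \<tau>) \<le> M * wU s \<tau>" "0 \<le> M"
  shows "norm (T t \<tau> o\<^sub>L P \<tau> o\<^sub>L Bl \<tau> o\<^sub>L Z \<tau>) \<le> K * c * M * wU s t * \<mu> \<bar>\<tau>\<bar> powr (-\<omega>)"
proof -
  have a1: "norm (T t \<tau> o\<^sub>L P \<tau>) \<le> K * (h t / h \<tau>) powr a * \<mu> \<bar>\<tau>\<bar> powr \<epsilon>"
    using dich_P assms by auto
  have "norm (T t \<tau> o\<^sub>L P \<tau> o\<^sub>L Bl \<tau> o\<^sub>L Z \<tau>) \<le> norm (T t \<tau> o\<^sub>L P \<tau>) * norm (Bl \<tau>) * norm (Z \<tau>)"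
    by (rule norm3)
  also have "\<dots> \<le> (K * (h t / h \<tau>) powr a * \<mu> \<bar>\<tau>\<bar> powr \<epsilon>) * (c * \<mu> \<bar>\<tau>\<bar> powr (-\<omega>-\<epsilon>)) * (M * wU s \<tau>)"
    using a1 Bl_le(1)[of \<tau>] assms(3) by (intro mult_mono) auto
  also have "\<dots> = K * c * M * \<mu> \<bar>s\<bar> powr \<epsilon> * ((h t / h \<tau>) powr a * (h \<tau> / h s) powr a)
      * (\<mu> \<bar>\<tau>\<bar> powr \<epsilon> * \<mu> \<bar>\<tau>\<bar> powr (-\<omega>-\<epsilon>))"
    unfolding wU_def by (simp add: mult_ac)
  also have "(h t / h \<tau>) powr a * (h \<tau> / h s) powr a = (h t / h s) powr a"
    using pos by (simp add: powr_mult[symmetric])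
  also have "\<mu> \<bar>\<tau>\<bar> powr \<epsilon> * \<mu> \<bar>\<tau>\<bar> powr (-\<omega>-\<epsilon>) = \<mu> \<bar>\<tau>\<bar> powr (-\<omega>)"
    by (simp add: powr_add[symmetric])
  finally show ?thesis unfolding wU_def by (simp add: mult_ac)
qed

lemma ptU2:
  assumes "s \<le> t" "t \<le> \<tau>" "norm (Z \<tau>) \<le> M * wU s \<tau>" "0 \<le> M"
  shows "norm (T t \<tau> o\<^sub>L Q \<tau> o\<^sub>L Bl \<tau> o\<^sub>L Z \<tau>) \<le> K * c * M * wU s t * \<nu> \<bar>\<tau>\<bar> powr (-\<omega>)"
proof -
  have "1 \<le> k \<tau> / k t" using mono_hk(2)[OF assms(2)] pos by simp
  then have kk: "(k \<tau> / k t) powr (-b) \<le> 1" using b_nn by (intro powr_neg_le1) auto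
  have "K * (k \<tau> / k t) powr (-b) * \<nu> \<bar>\<tau>\<bar> powr \<epsilon> \<le> K * \<nu> \<bar>\<tau>\<bar> powr \<epsilon>"
    using mult_right_mono[OF mult_left_mono[OF kk, of K], of "\<nu> \<bar>\<tau>\<bar> powr \<epsilon>"] by simp
  note a1 = order_trans[OF dich_Q[OF assms(2)] this]
  have zb: "norm (Z \<tau>) \<le> M * wU s t"
    using assms(3) wU_anti[OF assms(2), of s] assms(4) by (meson mult_left_mono order_trans)
  have "norm (T t \<tau> o\<^sub>L Q \<tau> o\<^sub>L Bl \<tau> o\<^sub>L Z \<tau>) \<le> norm (T t \<tau> o\<^sub>L Q \<tau>) * norm (Bl \<tau>) * norm (Z \<tau>)"
    by (rule norm3)
  also have "\<dots> \<le> (K * \<nu> \<bar>\<tau>\<bar> powr \<epsilon>) * (c * \<nu> \<bar>\<tau>\<bar> powr (-\<omega>-\<epsilon>)) * (M * wU s t)"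
    using a1 Bl_le(2)[of \<tau>] zb by (intro mult_mono) auto
  also have "\<dots> = K * c * M * wU s t * (\<nu> \<bar>\<tau>\<bar> powr \<epsilon> * \<nu> \<bar>\<tau>\<bar> powr (-\<omega>-\<epsilon>))"
    by (simp add: mult_ac)
  also have "\<nu> \<bar>\<tau>\<bar> powr \<epsilon> * \<nu> \<bar>\<tau>\<bar> powr (-\<omega>-\<epsilon>) = \<nu> \<bar>\<tau>\<bar> powr (-\<omega>)"
    by (simp add: powr_add[symmetric])
  finally show ?thesis .
qed

lemma intJ1: "integral {s..t} (\<lambda>\<tau>. C * \<mu> \<bar>\<tau>\<bar> powr (-\<omega>)) \<le> C * J1 t" if "0 \<le> C"
proof -
  have i1: "(\<lambda>\<tau>. \<mu> \<bar>\<tau>\<bar> powr (-\<omega>)) integrable_on {s..t}"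
    by (rule integrable_on_subinterval[OF N_int1]) auto
  have "integral {s..t} (\<lambda>\<tau>. C * \<mu> \<bar>\<tau>\<bar> powr (-\<omega>)) \<le> integral {..t} (\<lambda>\<tau>. C * \<mu> \<bar>\<tau>\<bar> powr (-\<omega>))"
    using that by (intro integral_subset_le int_cmul_real i1 N_int1) auto
  then show ?thesis unfolding J1_def by simp
qed

lemma estU:
  assumes Zb: "\<And>\<tau>. \<tau> \<ge> s \<Longrightarrow> norm (Z \<tau>) \<le> M * wU s \<tau>" and st: "s \<le> t"
    and I1: "((\<lambda>\<tau>. T t \<tau> o\<^sub>L P \<tau> o\<^sub>L Bl \<tau> o\<^sub>L Z \<tau>) has_integral I1) {s..t}"
    and I2: "((\<lambda>\<tau>. T t \<tau> o\<^sub>L Q \<tau> o\<^sub>L Bl \<tau> o\<^sub>L Z \<tau>) has_integral I2) {t..}"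
  shows "norm I1 \<le> K * c * M * wU s t * J1 t" "norm I2 \<le> K * c * M * wU s t * J2 t"
    "norm (I1 - I2) \<le> xx * M * wU s t" "0 \<le> M"
proof -
  show M0: "0 \<le> M"
  proof -
    have "0 \<le> M * wU s s" using Zb[of s] norm_ge_zero[of "Z s"] by linarith
    then show ?thesis using wU_pos[of s s] by (simp add: zero_le_mult_iff)
  qed
  have C0: "0 \<le> K * c * M * wU s t" using K_pos c_pos M0 wU_pos[of s t] by simp
  have intg1: "(\<lambda>\<tau>. K * c * M * wU s t * \<mu> \<bar>\<tau>\<bar> powr (-\<omega>)) integrable_on {s..t}"
    by (rule int_cmul_real[OF integrable_on_subinterval[OF N_int1]]) auto
  have "norm (integral {s..t} (\<lambda>\<tau>. T t \<tau> o\<^sub>L P \<tau> o\<^sub>L Bl \<tau> o\<^sub>L Z \<tau>))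
      \<le> integral {s..t} (\<lambda>\<tau>. K * c * M * wU s t * \<mu> \<bar>\<tau>\<bar> powr (-\<omega>))"
  proof (rule integral_norm_bound_integral[OF has_integral_integrable[OF I1] intg1])
    fix \<tau> assume "\<tau> \<in> {s..t}"
    then show "norm (T t \<tau> o\<^sub>L P \<tau> o\<^sub>L Bl \<tau> o\<^sub>L Z \<tau>) \<le> K * c * M * wU s t * \<mu> \<bar>\<tau>\<bar> powr (-\<omega>)"
      using Zb M0 by (intro ptU1) auto
  qed
  then have "norm I1 \<le> integral {s..t} (\<lambda>\<tau>. K * c * M * wU s t * \<mu> \<bar>\<tau>\<bar> powr (-\<omega>))"
    using integral_unique[OF I1] by simp
  also have "\<dots> \<le> K * c * M * wU s t * J1 t" by (rule intJ1[OF C0])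
  finally show n1: "norm I1 \<le> K * c * M * wU s t * J1 t" .
  have intg2: "(\<lambda>\<tau>. K * c * M * wU s t * \<nu> \<bar>\<tau>\<bar> powr (-\<omega>)) integrable_on {t..}"
    by (rule int_cmul_real[OF N_int2])
  have "norm (integral {t..} (\<lambda>\<tau>. T t \<tau> o\<^sub>L Q \<tau> o\<^sub>L Bl \<tau> o\<^sub>L Z \<tau>))
      \<le> integral {t..} (\<lambda>\<tau>. K * c * M * wU s t * \<nu> \<bar>\<tau>\<bar> powr (-\<omega>))"
  proof (rule integral_norm_bound_integral[OF has_integral_integrable[OF I2] intg2])
    fix \<tau> assume "\<tau> \<in> {t..}"
    then show "norm (T t \<tau> o\<^sub>L Q \<tau> o\<^sub>L Bl \<tau> o\<^sub>L Z \<tau>) \<le> K * c * M * wU s t * \<nu> \<bar>\<tau>\<bar> powr (-\<omega>)"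
      using Zb M0 st by (intro ptU2) auto
  qed
  then have "norm I2 \<le> integral {t..} (\<lambda>\<tau>. K * c * M * wU s t * \<nu> \<bar>\<tau>\<bar> powr (-\<omega>))"
    using integral_unique[OF I2] by simp
  also have "\<dots> = K * c * M * wU s t * J2 t" unfolding J2_def by simp
  finally show n2: "norm I2 \<le> K * c * M * wU s t * J2 t" .
  have "norm (I1 - I2) \<le> K * c * M * wU s t * (J1 t + J2 t)"
    using n1 n2 norm_triangle_ineq4[of I1 I2] by (simp add: distrib_left)
  also have "\<dots> \<le> K * c * M * wU s t * N" using J_sum C0 by (intro mult_left_mono) auto
  also have "\<dots> = xx * M * wU s t" unfolding xx_def by (simp add: mult_ac)
  finally show "norm (I1 - I2) \<le> xx * M * wU s t" .
qed

end


context setting begin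

lemma P_inv_r: "P t o\<^sub>L (T t s o\<^sub>L R) = T t s o\<^sub>L (P s o\<^sub>L R)"
  by (simp add: P_inv flip: cmp_assoc)
lemma Q_inv_r: "Q t o\<^sub>L (T t s o\<^sub>L R) = T t s o\<^sub>L (Q s o\<^sub>L R)"
  by (simp add: Q_inv flip: cmp_assoc)
lemma PQ_r: "P t o\<^sub>L (Q t o\<^sub>L R) = 0" "Q t o\<^sub>L (P t o\<^sub>L R) = 0"
  by (simp_all add: PQ flip: cmp_assoc)
lemma PP_r: "P t o\<^sub>L (P t o\<^sub>L R) = P t o\<^sub>L R" "Q t o\<^sub>L (Q t o\<^sub>L R) = Q t o\<^sub>L R"
  by (simp_all add: P_proj PQ(3) flip: cmp_assoc)

lemma PTQ0: "P t o\<^sub>L (T t s o\<^sub>L Q s o\<^sub>L X) = 0"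
  by (simp add: cmp_assoc P_inv_r PQ_r)
lemma QTP0: "Q t o\<^sub>L (T t s o\<^sub>L P s o\<^sub>L X) = 0"
  by (simp add: cmp_assoc Q_inv_r PQ_r)

lemma T_bnd: "\<exists>C\<ge>0. \<forall>t\<in>{a'..b'}. \<forall>\<tau>\<in>{a'..b'}. norm (T t \<tau>) \<le> C"
proof -
  obtain C1 where C1: "\<forall>t\<in>{a'..b'}. norm (T t 0) \<le> C1"
    using cont_bound_compact[OF T_cont1[of UNIV 0]] by blast
  obtain C2 where C2: "\<forall>t\<in>{a'..b'}. norm (T 0 t) \<le> C2"
    using cont_bound_compact[OF T_cont2[of UNIV 0]] by blast
  have "norm (T t \<tau>) \<le> max 0 C1 * max 0 C2" if "t \<in> {a'..b'}" "\<tau> \<in> {a'..b'}" for t \<tau>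
  proof -
    have "norm (T t \<tau>) = norm (T t 0 o\<^sub>L T 0 \<tau>)" by (simp add: T_co)
    also have "\<dots> \<le> norm (T t 0) * norm (T 0 \<tau>)" by (rule norm_cmp)
    also have "\<dots> \<le> max 0 C1 * max 0 C2"
    proof (rule mult_mono)
      show "norm (T t 0) \<le> max 0 C1" using C1 that by (meson atLeastAtMost_iff max.coboundedI2 order_trans)
      show "norm (T 0 \<tau>) \<le> max 0 C2" using C2 that by (meson atLeastAtMost_iff max.coboundedI2 order_trans)
    qed auto
    finally show ?thesis .
  qed
  then show ?thesis by (intro exI[of _ "max 0 C1 * max 0 C2"]) auto
qed

lemma volterra_fwd:
  assumes D: "\<And>t. t \<in> {s..R} \<Longrightarrow> ((\<lambda>\<tau>. T t \<tau> o\<^sub>L Bl \<tau> o\<^sub>L D \<tau>) has_integral D t) {s..t}"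
    and Dc: "continuous_on {s..R} D" and t: "t \<in> {s..R}"
  shows "D t = 0"
proof -
  obtain C where C: "C \<ge> 0" "\<forall>t\<in>{s..R}. \<forall>\<tau>\<in>{s..R}. norm (T t \<tau>) \<le> C" using T_bnd by blast
  have nc: "continuous_on {s..R} (\<lambda>x. norm (D x))" by (intro continuous_intros Dc)
  have "norm (D t) = 0"
  proof (rule gronwall_fwd[where \<phi>="\<lambda>x. norm (D x)" and C="C * c" and s=s and R=R, OF nc])
    fix t assume t: "t \<in> {s..R}"
    have i1: "(\<lambda>x. C * c * norm (D x)) integrable_on {s..t}"
      by (rule integrable_continuous_real) (intro continuous_intros continuous_on_subset[OF Dc], use t in auto)
    have "norm (integral {s..t} (\<lambda>\<tau>. T t \<tau> o\<^sub>L Bl \<tau> o\<^sub>L D \<tau>)) \<le> integral {s..t} (\<lambda>x. C * c * norm (D x))"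
    proof (rule integral_norm_bound_integral[OF has_integral_integrable[OF D[OF t]] i1])
      fix \<tau> assume \<tau>: "\<tau> \<in> {s..t}"
      have "norm (T t \<tau> o\<^sub>L Bl \<tau> o\<^sub>L D \<tau>) \<le> norm (T t \<tau>) * norm (Bl \<tau>) * norm (D \<tau>)" by (rule norm3)
      also have "\<dots> \<le> C * c * norm (D \<tau>)"
        using C \<tau> t Bl_le_c[of \<tau>] by (intro mult_mono) auto
      finally show "norm (T t \<tau> o\<^sub>L Bl \<tau> o\<^sub>L D \<tau>) \<le> C * c * norm (D \<tau>)" .
    qed
    then show "norm (D t) \<le> C * c * integral {s..t} (\<lambda>x. norm (D x))"
      using integral_unique[OF D[OF t]] by simp
  qed (use C t in auto)
  then show ?thesis by simp
qed

lemma volterra_bwd: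
  assumes D: "\<And>t. t \<in> {R..s} \<Longrightarrow> ((\<lambda>\<tau>. T t \<tau> o\<^sub>L Bl \<tau> o\<^sub>L D \<tau>) has_integral (- D t)) {t..s}"
    and Dc: "continuous_on {R..s} D" and t: "t \<in> {R..s}"
  shows "D t = 0"
proof -
  obtain C where C: "C \<ge> 0" "\<forall>t\<in>{R..s}. \<forall>\<tau>\<in>{R..s}. norm (T t \<tau>) \<le> C" using T_bnd by blast
  have nc: "continuous_on {R..s} (\<lambda>x. norm (D x))" by (intro continuous_intros Dc)
  have "norm (D t) = 0"
  proof (rule gronwall_bwd[where \<phi>="\<lambda>x. norm (D x)" and C="C * c" and s=s and R=R, OF nc])
    fix t assume t: "t \<in> {R..s}"
    have i1: "(\<lambda>x. C * c * norm (D x)) integrable_on {t..s}"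
      by (rule integrable_continuous_real) (intro continuous_intros continuous_on_subset[OF Dc], use t in auto)
    have "norm (integral {t..s} (\<lambda>\<tau>. T t \<tau> o\<^sub>L Bl \<tau> o\<^sub>L D \<tau>)) \<le> integral {t..s} (\<lambda>x. C * c * norm (D x))"
    proof (rule integral_norm_bound_integral[OF has_integral_integrable[OF D[OF t]] i1])
      fix \<tau> assume \<tau>: "\<tau> \<in> {t..s}"
      have "norm (T t \<tau> o\<^sub>L Bl \<tau> o\<^sub>L D \<tau>) \<le> norm (T t \<tau>) * norm (Bl \<tau>) * norm (D \<tau>)" by (rule norm3)
      also have "\<dots> \<le> C * c * norm (D \<tau>)"
        using C \<tau> t Bl_le_c[of \<tau>] by (intro mult_mono) auto
      finally show "norm (T t \<tau> o\<^sub>L Bl \<tau> o\<^sub>L D \<tau>) \<le> C * c * norm (D \<tau>)" .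
    qed
    then show "norm (D t) \<le> C * c * integral {t..s} (\<lambda>x. norm (D x))"
      using integral_unique[OF D[OF t]] by simp
  qed (use C t in auto)
  then show ?thesis by simp
qed

end


context setting begin

definition eqU where "eqU s Y Z \<longleftrightarrow> (\<forall>t\<ge>s. \<exists>I1 I2.
  ((\<lambda>\<tau>. T t \<tau> o\<^sub>L P \<tau> o\<^sub>L Bl \<tau> o\<^sub>L Z \<tau>) has_integral I1) {s..t} \<and>
  ((\<lambda>\<tau>. T t \<tau> o\<^sub>L Q \<tau> o\<^sub>L Bl \<tau> o\<^sub>L Z \<tau>) has_integral I2) {t..} \<and>
  Z t = (T t s o\<^sub>L Y) + I1 - I2)"
definition bndU where "bndU s Z \<longleftrightarrow> (\<exists>M. \<forall>t\<ge>s. norm (Z t) \<le> M * wU s t)"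

lemma uniqU0:
  assumes "bndU s Z" "eqU s 0 Z" "s \<le> t"
  shows "Z t = 0"
proof -
  obtain M where M: "\<And>t. t \<ge> s \<Longrightarrow> norm (Z t) \<le> M * wU s t" using assms(1) unfolding bndU_def by auto
  have M0: "0 \<le> M"
  proof -
    have "0 \<le> M * wU s s" using M[of s] norm_ge_zero[of "Z s"] by linarith
    then show ?thesis using wU_pos[of s s] by (simp add: zero_le_mult_iff)
  qed
  have ind: "\<forall>t\<ge>s. norm (Z t) \<le> xx ^ n * M * wU s t" for n
  proof (induction n)
    case 0 then show ?case using M by simp
  next
    case (Suc n)
    show ?case
    proof (intro allI impI)
      fix t assume st: "s \<le> t"
      obtain I1 I2 where I: "((\<lambda>\<tau>. T t \<tau> o\<^sub>L P \<tau> o\<^sub>L Bl \<tau> o\<^sub>L Z \<tau>) has_integral I1) {s..t}"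
        "((\<lambda>\<tau>. T t \<tau> o\<^sub>L Q \<tau> o\<^sub>L Bl \<tau> o\<^sub>L Z \<tau>) has_integral I2) {t..}" "Z t = (T t s o\<^sub>L 0) + I1 - I2"
        using assms(2) st unfolding eqU_def by blast
      have "norm (I1 - I2) \<le> xx * (xx ^ n * M) * wU s t"
        by (rule estU(3)[OF _ st I(1) I(2)]) (use Suc in auto)
      then show "norm (Z t) \<le> xx ^ Suc n * M * wU s t" using I(3) by (simp add: mult_ac)
    qed
  qed
  have "norm (Z t) \<le> 0"
  proof (rule geom_bound[where x=xx and D="M * wU s t"])
    show "norm (Z t) \<le> 0 + xx ^ n * (M * wU s t)" for n using ind[of n] assms(3) by (simp add: mult_ac)
  qed (use xx_pos xx_lt1 in auto)
  then show ?thesis by simp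
qed

lemma eqU_diff:
  assumes "eqU s Y1 Z1" "eqU s Y2 Z2"
  shows "eqU s (Y1 - Y2) (\<lambda>t. Z1 t - Z2 t)"
  unfolding eqU_def
proof (intro allI impI)
  fix t assume st: "s \<le> t"
  obtain I1 I2 where I: "((\<lambda>\<tau>. T t \<tau> o\<^sub>L P \<tau> o\<^sub>L Bl \<tau> o\<^sub>L Z1 \<tau>) has_integral I1) {s..t}"
    "((\<lambda>\<tau>. T t \<tau> o\<^sub>L Q \<tau> o\<^sub>L Bl \<tau> o\<^sub>L Z1 \<tau>) has_integral I2) {t..}" "Z1 t = (T t s o\<^sub>L Y1) + I1 - I2"
    using assms(1) st unfolding eqU_def by blast
  obtain J1 J2 where J: "((\<lambda>\<tau>. T t \<tau> o\<^sub>L P \<tau> o\<^sub>L Bl \<tau> o\<^sub>L Z2 \<tau>) has_integral J1) {s..t}"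
    "((\<lambda>\<tau>. T t \<tau> o\<^sub>L Q \<tau> o\<^sub>L Bl \<tau> o\<^sub>L Z2 \<tau>) has_integral J2) {t..}" "Z2 t = (T t s o\<^sub>L Y2) + J1 - J2"
    using assms(2) st unfolding eqU_def by blast
  show "\<exists>I1 I2. ((\<lambda>\<tau>. T t \<tau> o\<^sub>L P \<tau> o\<^sub>L Bl \<tau> o\<^sub>L (Z1 \<tau> - Z2 \<tau>)) has_integral I1) {s..t} \<and>
      ((\<lambda>\<tau>. T t \<tau> o\<^sub>L Q \<tau> o\<^sub>L Bl \<tau> o\<^sub>L (Z1 \<tau> - Z2 \<tau>)) has_integral I2) {t..} \<and>
      Z1 t - Z2 t = (T t s o\<^sub>L (Y1 - Y2)) + I1 - I2"
  proof (intro exI conjI)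
    show "((\<lambda>\<tau>. T t \<tau> o\<^sub>L P \<tau> o\<^sub>L Bl \<tau> o\<^sub>L (Z1 \<tau> - Z2 \<tau>)) has_integral I1 - J1) {s..t}"
      using has_integral_diff[OF I(1) J(1)] by (simp add: cmp_diff2)
    show "((\<lambda>\<tau>. T t \<tau> o\<^sub>L Q \<tau> o\<^sub>L Bl \<tau> o\<^sub>L (Z1 \<tau> - Z2 \<tau>)) has_integral I2 - J2) {t..}"
      using has_integral_diff[OF I(2) J(2)] by (simp add: cmp_diff2)
    show "Z1 t - Z2 t = (T t s o\<^sub>L (Y1 - Y2)) + (I1 - J1) - (I2 - J2)"
      unfolding I(3) J(3) by (simp add: cmp_diff2 algebra_simps)
  qed
qed

lemma eqU_right:
  assumes "eqU s Y Z"
  shows "eqU s (Y o\<^sub>L y) (\<lambda>t. Z t o\<^sub>L y)"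
  unfolding eqU_def
proof (intro allI impI)
  fix t assume st: "s \<le> t"
  obtain I1 I2 where I: "((\<lambda>\<tau>. T t \<tau> o\<^sub>L P \<tau> o\<^sub>L Bl \<tau> o\<^sub>L Z \<tau>) has_integral I1) {s..t}"
    "((\<lambda>\<tau>. T t \<tau> o\<^sub>L Q \<tau> o\<^sub>L Bl \<tau> o\<^sub>L Z \<tau>) has_integral I2) {t..}" "Z t = (T t s o\<^sub>L Y) + I1 - I2"
    using assms st unfolding eqU_def by blast
  show "\<exists>I1 I2. ((\<lambda>\<tau>. T t \<tau> o\<^sub>L P \<tau> o\<^sub>L Bl \<tau> o\<^sub>L (Z \<tau> o\<^sub>L y)) has_integral I1) {s..t} \<and>
      ((\<lambda>\<tau>. T t \<tau> o\<^sub>L Q \<tau> o\<^sub>L Bl \<tau> o\<^sub>L (Z \<tau> o\<^sub>L y)) has_integral I2) {t..} \<and>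
      (Z t o\<^sub>L y) = (T t s o\<^sub>L (Y o\<^sub>L y)) + I1 - I2"
  proof (intro exI conjI)
    show "((\<lambda>\<tau>. T t \<tau> o\<^sub>L P \<tau> o\<^sub>L Bl \<tau> o\<^sub>L (Z \<tau> o\<^sub>L y)) has_integral (I1 o\<^sub>L y)) {s..t}"
      using has_integral_cmp_right[OF I(1), of y] by (simp add: cmp_assoc)
    show "((\<lambda>\<tau>. T t \<tau> o\<^sub>L Q \<tau> o\<^sub>L Bl \<tau> o\<^sub>L (Z \<tau> o\<^sub>L y)) has_integral (I2 o\<^sub>L y)) {t..}"
      using has_integral_cmp_right[OF I(2), of y] by (simp add: cmp_assoc)
    show "(Z t o\<^sub>L y) = (T t s o\<^sub>L (Y o\<^sub>L y)) + (I1 o\<^sub>L y) - (I2 o\<^sub>L y)"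
      using I(3) by (simp add: cmp_diff cmp_add cmp_assoc)
  qed
qed

lemma bndU_diff: "bndU s Z1 \<Longrightarrow> bndU s Z2 \<Longrightarrow> bndU s (\<lambda>t. Z1 t - Z2 t)"
proof -
  assume "bndU s Z1" "bndU s Z2"
  then obtain M1 M2 where M: "\<forall>t\<ge>s. norm (Z1 t) \<le> M1 * wU s t" "\<forall>t\<ge>s. norm (Z2 t) \<le> M2 * wU s t"
    unfolding bndU_def by blast
  have "norm (Z1 t - Z2 t) \<le> (M1 + M2) * wU s t" if "t \<ge> s" for t
  proof -
    have "norm (Z1 t) \<le> M1 * wU s t" "norm (Z2 t) \<le> M2 * wU s t" using M that by auto
    then show ?thesis using norm_triangle_ineq4[of "Z1 t" "Z2 t"] by (simp add: distrib_right)
  qed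
  then show ?thesis unfolding bndU_def by blast
qed

lemma bndU_right: "bndU s Z \<Longrightarrow> bndU s (\<lambda>t. Z t o\<^sub>L y)"
proof -
  assume "bndU s Z"
  then obtain M where M: "\<forall>t\<ge>s. norm (Z t) \<le> M * wU s t" unfolding bndU_def by blast
  have "norm (Z t o\<^sub>L y) \<le> (M * norm y) * wU s t" if "t \<ge> s" for t
  proof -
    have "norm (Z t o\<^sub>L y) \<le> norm (Z t) * norm y" by (rule norm_cmp)
    also have "\<dots> \<le> M * wU s t * norm y" using M that by (intro mult_right_mono) auto
    finally show ?thesis by (simp add: mult_ac)
  qed
  then show ?thesis unfolding bndU_def by blast
qed

lemma uniqU:
  assumes "eqU s Y Z1" "eqU s Y Z2" "bndU s Z1" "bndU s Z2" "s \<le> t"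
  shows "Z1 t = Z2 t"
proof -
  have "(\<lambda>t. Z1 t - Z2 t) t = 0"
    using uniqU0[OF bndU_diff[OF assms(3,4)] _ assms(5)] eqU_diff[OF assms(1,2)] by simp
  then show ?thesis by simp
qed

lemma U_eqU: "eqU s (P s) (\<lambda>t. U t s)"
  unfolding eqU_def using U_eq by blast

lemma powr_inv_mult: "x > 0 \<Longrightarrow> x powr (-e) * x powr e = (1::real)"
  by (simp add: powr_add[symmetric])

lemma U_bndU: "bndU s (\<lambda>t. U t s)"
proof -
  obtain M where M: "\<forall>t\<ge>s. norm (U t s) * (h t / h s) powr (-a) * \<mu> \<bar>s\<bar> powr (-\<epsilon>) \<le> M"
    using U_Omega1 by blast
  have "norm (U t s) \<le> M * wU s t" if "t \<ge> s" for t
  proof -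
    have "norm (U t s) = (norm (U t s) * (h t / h s) powr (-a) * \<mu> \<bar>s\<bar> powr (-\<epsilon>)) * wU s t"
      unfolding wU_def
      using powr_inv_mult[of "h t / h s" a] powr_inv_mult[of "\<mu> \<bar>s\<bar>" \<epsilon>]
      by (simp add: algebra_simps)
    also have "\<dots> \<le> M * wU s t" using M that wU_pos[of s t] by (intro mult_right_mono) auto
    finally show ?thesis .
  qed
  then show ?thesis unfolding bndU_def by blast
qed

lemma TP_le: "s \<le> t \<Longrightarrow> norm (T t s o\<^sub>L P s) \<le> K * wU s t"
  unfolding wU_def using dich_P by (simp add: mult.assoc)

lemma U_le: "s \<le> t \<Longrightarrow> norm (U t s) \<le> Kh * wU s t"
proof -
  assume st0: "s \<le> t"
  obtain M where M: "\<forall>t\<ge>s. norm (U t s) \<le> M * wU s t" using U_bndU unfolding bndU_def by blast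
  have ind: "\<forall>t\<ge>s. norm (U t s) \<le> (Kh + xx ^ n * \<bar>M\<bar>) * wU s t" for n
  proof (induction n)
    case 0
    show ?case
    proof (intro allI impI)
      fix t assume "s \<le> t"
      then have "norm (U t s) \<le> M * wU s t" using M by blast
      also have "\<dots> \<le> (Kh + xx ^ 0 * \<bar>M\<bar>) * wU s t"
        using Kh_pos wU_pos[of s t] by (intro mult_right_mono) auto
      finally show "norm (U t s) \<le> (Kh + xx ^ 0 * \<bar>M\<bar>) * wU s t" .
    qed
  next
    case (Suc n)
    show ?case
    proof (intro allI impI)
      fix t assume st: "s \<le> t"
      obtain I1 I2 where I: "((\<lambda>\<tau>. T t \<tau> o\<^sub>L P \<tau> o\<^sub>L Bl \<tau> o\<^sub>L U \<tau> s) has_integral I1) {s..t}"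
        "((\<lambda>\<tau>. T t \<tau> o\<^sub>L Q \<tau> o\<^sub>L Bl \<tau> o\<^sub>L U \<tau> s) has_integral I2) {t..}" "U t s = (T t s o\<^sub>L P s) + I1 - I2"
        using U_eq st by blast
      have e: "norm (I1 - I2) \<le> xx * (Kh + xx ^ n * \<bar>M\<bar>) * wU s t"
        by (rule estU(3)[OF _ st I(1) I(2)]) (use Suc in auto)
      have "norm (U t s) \<le> norm (T t s o\<^sub>L P s) + norm (I1 - I2)"
        unfolding I(3) by (metis add_diff_eq norm_triangle_ineq)
      also have "\<dots> \<le> K * wU s t + xx * (Kh + xx ^ n * \<bar>M\<bar>) * wU s t"
        using TP_le[OF st] e by (rule add_mono)
      also have "\<dots> = (K + xx * Kh + xx ^ Suc n * \<bar>M\<bar>) * wU s t" by (simp add: algebra_simps)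
      also have "\<dots> = (Kh + xx ^ Suc n * \<bar>M\<bar>) * wU s t" using Kh_eq by simp
      finally show "norm (U t s) \<le> (Kh + xx ^ Suc n * \<bar>M\<bar>) * wU s t" .
    qed
  qed
  show "norm (U t s) \<le> Kh * wU s t"
  proof (rule geom_bound[where x=xx and D="\<bar>M\<bar> * wU s t"])
    show "norm (U t s) \<le> Kh * wU s t + xx ^ n * (\<bar>M\<bar> * wU s t)" for n
      using ind[of n] st0 by (simp add: algebra_simps)
  qed (use xx_pos xx_lt1 in auto)
qed

lemma U_P: "s \<le> t \<Longrightarrow> (U t s o\<^sub>L P s) = U t s"
  using uniqU[OF _ U_eqU bndU_right[OF U_bndU] U_bndU, of s "P s"]
    eqU_right[OF U_eqU, of s "P s"] by (simp add: P_proj)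

lemma U_Q: "s \<le> t \<Longrightarrow> (U t s o\<^sub>L Q s) = 0"
  using U_P by (simp add: cmp_diff)

lemma I_refl0: "(f has_integral I) {s..s} \<Longrightarrow> I = 0" for f :: "real \<Rightarrow> 'z::banach"
  using has_integral_unique has_integral_refl(1)[of f s] by (metis cbox_interval)

lemma U_ss: "\<exists>I2. ((\<lambda>\<tau>. T s \<tau> o\<^sub>L Q \<tau> o\<^sub>L Bl \<tau> o\<^sub>L U \<tau> s) has_integral I2) {s..} \<and> U s s = P s - I2"
proof -
  obtain I1 I2 where I: "((\<lambda>\<tau>. T s \<tau> o\<^sub>L P \<tau> o\<^sub>L Bl \<tau> o\<^sub>L U \<tau> s) has_integral I1) {s..s}"
    "((\<lambda>\<tau>. T s \<tau> o\<^sub>L Q \<tau> o\<^sub>L Bl \<tau> o\<^sub>L U \<tau> s) has_integral I2) {s..}" "U s s = (T s s o\<^sub>L P s) + I1 - I2"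
    using U_eq[of s s] by blast
  then show ?thesis using I_refl0[OF I(1)] by auto
qed

lemma PU: "(P s o\<^sub>L U s s) = P s"
proof -
  obtain I2 where I: "((\<lambda>\<tau>. T s \<tau> o\<^sub>L Q \<tau> o\<^sub>L Bl \<tau> o\<^sub>L U \<tau> s) has_integral I2) {s..}" "U s s = P s - I2"
    using U_ss by blast
  have "((\<lambda>\<tau>. P s o\<^sub>L (T s \<tau> o\<^sub>L Q \<tau> o\<^sub>L Bl \<tau> o\<^sub>L U \<tau> s)) has_integral (P s o\<^sub>L I2)) {s..}"
    by (rule has_integral_cmp_left[OF I(1)])
  moreover have "(\<lambda>\<tau>. P s o\<^sub>L (T s \<tau> o\<^sub>L Q \<tau> o\<^sub>L Bl \<tau> o\<^sub>L U \<tau> s)) = (\<lambda>\<tau>. 0)"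
    by (rule ext) (simp add: cmp_assoc P_inv_r PQ_r)
  ultimately have "P s o\<^sub>L I2 = 0" using has_integral_0 has_integral_unique by metis
  then show ?thesis using I(2) by (simp add: cmp_diff P_proj)
qed

lemma UU: "s \<le> t \<Longrightarrow> (U t s o\<^sub>L U s s) = U t s"
  using uniqU[OF _ U_eqU bndU_right[OF U_bndU] U_bndU, of s "U s s"]
    eqU_right[OF U_eqU, of s "U s s"] by (simp add: PU)

end


context setting begin

lemma cont_cmp: "continuous_on S f \<Longrightarrow> continuous_on S g \<Longrightarrow> continuous_on S (\<lambda>x. f x o\<^sub>L g x)"
  by (rule bounded_bilinear.continuous_on[OF bounded_bilinear_blinfun_compose])

lemma negl_pt: "(s::real) \<le> t \<Longrightarrow> negligible ({s..t} \<inter> {t..})"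
proof -
  assume "s \<le> t"
  then have "{s..t} \<inter> {t..} = {t::real}" by auto
  then show ?thesis by simp
qed
lemma negl_pt2: "(t::real) \<le> s \<Longrightarrow> negligible ({..t} \<inter> {t..s})"
proof -
  assume "t \<le> s"
  then have "{..t} \<inter> {t..s} = {t::real}" by auto
  then show ?thesis by simp
qed

lemma split_PQ: "(T t \<tau> o\<^sub>L Bl \<tau> o\<^sub>L Z) = (T t \<tau> o\<^sub>L P \<tau> o\<^sub>L Bl \<tau> o\<^sub>L Z) + (T t \<tau> o\<^sub>L Q \<tau> o\<^sub>L Bl \<tau> o\<^sub>L Z)"
  by (rule blinfun_eqI) (simp add: blinfun.bilinear_simps)

lemma U_voc: "s \<le> t \<Longrightarrow> U t s = (That t s o\<^sub>L U s s)"
proof -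
  assume st0: "s \<le> t"
  define D where "D \<tau> = U \<tau> s - (That \<tau> s o\<^sub>L U s s)" for \<tau>
  obtain I2s where I2s: "((\<lambda>\<tau>. T s \<tau> o\<^sub>L Q \<tau> o\<^sub>L Bl \<tau> o\<^sub>L U \<tau> s) has_integral I2s) {s..}" "U s s = P s - I2s"
    using U_ss by blast
  have key: "((\<lambda>\<tau>. T t \<tau> o\<^sub>L Bl \<tau> o\<^sub>L D \<tau>) has_integral D t) {s..t}" if st: "t \<in> {s..t0}" for t t0
  proof -
    from st have st: "s \<le> t" by auto
    obtain I1 I2 where I: "((\<lambda>\<tau>. T t \<tau> o\<^sub>L P \<tau> o\<^sub>L Bl \<tau> o\<^sub>L U \<tau> s) has_integral I1) {s..t}"
      "((\<lambda>\<tau>. T t \<tau> o\<^sub>L Q \<tau> o\<^sub>L Bl \<tau> o\<^sub>L U \<tau> s) has_integral I2) {t..}" "U t s = (T t s o\<^sub>L P s) + I1 - I2"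
      using U_eq st by blast
    define gQ where "gQ \<tau> = T t \<tau> o\<^sub>L Q \<tau> o\<^sub>L Bl \<tau> o\<^sub>L U \<tau> s" for \<tau>
    have a: "(gQ has_integral (T t s o\<^sub>L I2s)) {s..}"
    proof -
      have "((\<lambda>\<tau>. T t s o\<^sub>L (T s \<tau> o\<^sub>L Q \<tau> o\<^sub>L Bl \<tau> o\<^sub>L U \<tau> s)) has_integral (T t s o\<^sub>L I2s)) {s..}"
        by (rule has_integral_cmp_left[OF I2s(1)])
      moreover have "(\<lambda>\<tau>. T t s o\<^sub>L (T s \<tau> o\<^sub>L Q \<tau> o\<^sub>L Bl \<tau> o\<^sub>L U \<tau> s)) = gQ"
        unfolding gQ_def by (rule ext) (simp add: cmp_assoc T_co3)
      ultimately show ?thesis by simp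
    qed
    have "gQ integrable_on {s..t}"
      by (rule integrable_on_subinterval[OF has_integral_integrable[OF a]]) auto
    then obtain I2' where c: "(gQ has_integral I2') {s..t}" by (auto simp: integrable_on_def)
    have "(gQ has_integral (I2' + I2)) ({s..t} \<union> {t..})"
      by (rule has_integral_Un[OF c I(2)[folded gQ_def] negl_pt[OF st]])
    moreover have "{s..t} \<union> {t..} = {s..}" using st by auto
    ultimately have e: "I2' + I2 = (T t s o\<^sub>L I2s)" using a has_integral_unique by metis
    have "((\<lambda>\<tau>. T t \<tau> o\<^sub>L Bl \<tau> o\<^sub>L U \<tau> s) has_integral (I1 + I2')) {s..t}"
      using has_integral_add[OF I(1) c[unfolded gQ_def]] by (simp add: split_PQ[symmetric])
    moreover have "((\<lambda>\<tau>. T t \<tau> o\<^sub>L Bl \<tau> o\<^sub>L That \<tau> s o\<^sub>L U s s) has_integral (((T t t o\<^sub>L That t s) - T t s) o\<^sub>L U s s)) {s..t}"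
      by (rule has_integral_cmp_right[OF voc_fwd[OF st]])
    ultimately have "((\<lambda>\<tau>. (T t \<tau> o\<^sub>L Bl \<tau> o\<^sub>L U \<tau> s) - (T t \<tau> o\<^sub>L Bl \<tau> o\<^sub>L That \<tau> s o\<^sub>L U s s)) has_integral
        ((I1 + I2') - (((T t t o\<^sub>L That t s) - T t s) o\<^sub>L U s s))) {s..t}"
      by (rule has_integral_diff)
    moreover have "(\<lambda>\<tau>. (T t \<tau> o\<^sub>L Bl \<tau> o\<^sub>L U \<tau> s) - (T t \<tau> o\<^sub>L Bl \<tau> o\<^sub>L That \<tau> s o\<^sub>L U s s))
        = (\<lambda>\<tau>. T t \<tau> o\<^sub>L Bl \<tau> o\<^sub>L D \<tau>)"
      unfolding D_def by (rule ext) (simp add: cmp_diff2 cmp_assoc)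
    moreover have "(I1 + I2') - (((T t t o\<^sub>L That t s) - T t s) o\<^sub>L U s s) = D t"
    proof -
      have "I2' = (T t s o\<^sub>L I2s) - I2" using e by (simp add: algebra_simps)
      then show ?thesis unfolding D_def I(3) I2s(2)
        by (simp add: cmp_diff algebra_simps)
    qed
    ultimately show ?thesis by simp
  qed
  have Dc: "continuous_on {s..t} D"
    unfolding D_def
    by (intro continuous_on_diff cont_cmp continuous_on_const Th_cont1
        continuous_on_subset[OF U_cont[of s]]) auto
  have "D t = 0" by (rule volterra_fwd[OF key Dc]) (use st0 in auto)
  then show ?thesis unfolding D_def by simp
qed

end


context setting begin

lemma ptV1:
  assumes "\<tau> \<le> t" "t \<le> s" "norm (Z \<tau>) \<le> M * wV s \<tau>" "0 \<le> M"
  shows "norm (T t \<tau> o\<^sub>L P \<tau> o\<^sub>L Bl \<tau> o\<^sub>L Z \<tau>) \<le> K * c * M * wV s t * \<mu> \<bar>\<tau>\<bar> powr (-\<omega>)"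
proof -
  have "1 \<le> h t / h \<tau>" using mono_hk(1)[OF assms(1)] by simp
  then have hh: "(h t / h \<tau>) powr a \<le> 1" using a_neg by (intro powr_neg_le1) auto
  have "K * (h t / h \<tau>) powr a * \<mu> \<bar>\<tau>\<bar> powr \<epsilon> \<le> K * \<mu> \<bar>\<tau>\<bar> powr \<epsilon>"
    using mult_right_mono[OF mult_left_mono[OF hh, of K], of "\<mu> \<bar>\<tau>\<bar> powr \<epsilon>"] by simp
  note a1 = order_trans[OF dich_P[OF assms(1)] this]
  have zb: "norm (Z \<tau>) \<le> M * wV s t"
    using assms(3) wV_mono[OF assms(1), of s] assms(4) by (meson mult_left_mono order_trans)
  have "norm (T t \<tau> o\<^sub>L P \<tau> o\<^sub>L Bl \<tau> o\<^sub>L Z \<tau>) \<le> norm (T t \<tau> o\<^sub>L P \<tau>) * norm (Bl \<tau>) * norm (Z \<tau>)"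
    by (rule norm3)
  also have "\<dots> \<le> (K * \<mu> \<bar>\<tau>\<bar> powr \<epsilon>) * (c * \<mu> \<bar>\<tau>\<bar> powr (-\<omega>-\<epsilon>)) * (M * wV s t)"
    using a1 Bl_le(1)[of \<tau>] zb by (intro mult_mono) auto
  also have "\<dots> = K * c * M * wV s t * (\<mu> \<bar>\<tau>\<bar> powr \<epsilon> * \<mu> \<bar>\<tau>\<bar> powr (-\<omega>-\<epsilon>))"
    by (simp add: mult_ac)
  also have "\<mu> \<bar>\<tau>\<bar> powr \<epsilon> * \<mu> \<bar>\<tau>\<bar> powr (-\<omega>-\<epsilon>) = \<mu> \<bar>\<tau>\<bar> powr (-\<omega>)"
    by (simp add: powr_add[symmetric])
  finally show ?thesis .
qed

lemma ptV2:
  assumes "t \<le> \<tau>" "\<tau> \<le> s" "norm (Z \<tau>) \<le> M * wV s \<tau>" "0 \<le> M"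
  shows "norm (T t \<tau> o\<^sub>L Q \<tau> o\<^sub>L Bl \<tau> o\<^sub>L Z \<tau>) \<le> K * c * M * wV s t * \<nu> \<bar>\<tau>\<bar> powr (-\<omega>)"
proof -
  have a1: "norm (T t \<tau> o\<^sub>L Q \<tau>) \<le> K * (k \<tau> / k t) powr (-b) * \<nu> \<bar>\<tau>\<bar> powr \<epsilon>"
    using dich_Q assms by auto
  have "norm (T t \<tau> o\<^sub>L Q \<tau> o\<^sub>L Bl \<tau> o\<^sub>L Z \<tau>) \<le> norm (T t \<tau> o\<^sub>L Q \<tau>) * norm (Bl \<tau>) * norm (Z \<tau>)"
    by (rule norm3)
  also have "\<dots> \<le> (K * (k \<tau> / k t) powr (-b) * \<nu> \<bar>\<tau>\<bar> powr \<epsilon>) * (c * \<nu> \<bar>\<tau>\<bar> powr (-\<omega>-\<epsilon>)) * (M * wV s \<tau>)"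
    using a1 Bl_le(2)[of \<tau>] assms(3) by (intro mult_mono) auto
  also have "\<dots> = K * c * M * \<nu> \<bar>s\<bar> powr \<epsilon> * ((k \<tau> / k t) powr (-b) * (k s / k \<tau>) powr (-b))
      * (\<nu> \<bar>\<tau>\<bar> powr \<epsilon> * \<nu> \<bar>\<tau>\<bar> powr (-\<omega>-\<epsilon>))"
    unfolding wV_def by (simp add: mult_ac)
  also have "(k \<tau> / k t) powr (-b) * (k s / k \<tau>) powr (-b) = (k s / k t) powr (-b)"
    by (simp add: powr_mult[symmetric])
  also have "\<nu> \<bar>\<tau>\<bar> powr \<epsilon> * \<nu> \<bar>\<tau>\<bar> powr (-\<omega>-\<epsilon>) = \<nu> \<bar>\<tau>\<bar> powr (-\<omega>)"
    by (simp add: powr_add[symmetric])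
  finally show ?thesis unfolding wV_def by (simp add: mult_ac)
qed

lemma intJ2: "integral {t..s} (\<lambda>\<tau>. C * \<nu> \<bar>\<tau>\<bar> powr (-\<omega>)) \<le> C * J2 t" if "0 \<le> C"
proof -
  have i1: "(\<lambda>\<tau>. \<nu> \<bar>\<tau>\<bar> powr (-\<omega>)) integrable_on {t..s}"
    by (rule integrable_on_subinterval[OF N_int2]) auto
  have "integral {t..s} (\<lambda>\<tau>. C * \<nu> \<bar>\<tau>\<bar> powr (-\<omega>)) \<le> integral {t..} (\<lambda>\<tau>. C * \<nu> \<bar>\<tau>\<bar> powr (-\<omega>))"
    using that by (intro integral_subset_le int_cmul_real i1 N_int2) auto
  then show ?thesis unfolding J2_def by simp
qed

lemma estV:
  assumes Zb: "\<And>\<tau>. \<tau> \<le> s \<Longrightarrow> norm (Z \<tau>) \<le> M * wV s \<tau>" and ts: "t \<le> s"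
    and I1: "((\<lambda>\<tau>. T t \<tau> o\<^sub>L P \<tau> o\<^sub>L Bl \<tau> o\<^sub>L Z \<tau>) has_integral I1) {..t}"
    and I2: "((\<lambda>\<tau>. T t \<tau> o\<^sub>L Q \<tau> o\<^sub>L Bl \<tau> o\<^sub>L Z \<tau>) has_integral I2) {t..s}"
  shows "norm I1 \<le> K * c * M * wV s t * J1 t" "norm I2 \<le> K * c * M * wV s t * J2 t"
    "norm (I1 - I2) \<le> xx * M * wV s t" "0 \<le> M"
proof -
  show M0: "0 \<le> M"
  proof -
    have "0 \<le> M * wV s s" using Zb[of s] norm_ge_zero[of "Z s"] by linarith
    then show ?thesis using wV_pos[of s s] by (simp add: zero_le_mult_iff)
  qed
  have C0: "0 \<le> K * c * M * wV s t" using K_pos c_pos M0 wV_pos[of s t] by simp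
  have intg1: "(\<lambda>\<tau>. K * c * M * wV s t * \<mu> \<bar>\<tau>\<bar> powr (-\<omega>)) integrable_on {..t}"
    by (rule int_cmul_real[OF N_int1])
  have "norm (integral {..t} (\<lambda>\<tau>. T t \<tau> o\<^sub>L P \<tau> o\<^sub>L Bl \<tau> o\<^sub>L Z \<tau>))
      \<le> integral {..t} (\<lambda>\<tau>. K * c * M * wV s t * \<mu> \<bar>\<tau>\<bar> powr (-\<omega>))"
  proof (rule integral_norm_bound_integral[OF has_integral_integrable[OF I1] intg1])
    fix \<tau> assume "\<tau> \<in> {..t}"
    then show "norm (T t \<tau> o\<^sub>L P \<tau> o\<^sub>L Bl \<tau> o\<^sub>L Z \<tau>) \<le> K * c * M * wV s t * \<mu> \<bar>\<tau>\<bar> powr (-\<omega>)"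
      using Zb M0 ts by (intro ptV1) auto
  qed
  then have "norm I1 \<le> integral {..t} (\<lambda>\<tau>. K * c * M * wV s t * \<mu> \<bar>\<tau>\<bar> powr (-\<omega>))"
    using integral_unique[OF I1] by simp
  also have "\<dots> = K * c * M * wV s t * J1 t" unfolding J1_def by simp
  finally show n1: "norm I1 \<le> K * c * M * wV s t * J1 t" .
  have intg2: "(\<lambda>\<tau>. K * c * M * wV s t * \<nu> \<bar>\<tau>\<bar> powr (-\<omega>)) integrable_on {t..s}"
    by (rule int_cmul_real[OF integrable_on_subinterval[OF N_int2]]) auto
  have "norm (integral {t..s} (\<lambda>\<tau>. T t \<tau> o\<^sub>L Q \<tau> o\<^sub>L Bl \<tau> o\<^sub>L Z \<tau>))
      \<le> integral {t..s} (\<lambda>\<tau>. K * c * M * wV s t * \<nu> \<bar>\<tau>\<bar> powr (-\<omega>))"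
  proof (rule integral_norm_bound_integral[OF has_integral_integrable[OF I2] intg2])
    fix \<tau> assume "\<tau> \<in> {t..s}"
    then show "norm (T t \<tau> o\<^sub>L Q \<tau> o\<^sub>L Bl \<tau> o\<^sub>L Z \<tau>) \<le> K * c * M * wV s t * \<nu> \<bar>\<tau>\<bar> powr (-\<omega>)"
      using Zb M0 by (intro ptV2) auto
  qed
  then have "norm I2 \<le> integral {t..s} (\<lambda>\<tau>. K * c * M * wV s t * \<nu> \<bar>\<tau>\<bar> powr (-\<omega>))"
    using integral_unique[OF I2] by simp
  also have "\<dots> \<le> K * c * M * wV s t * J2 t" by (rule intJ2[OF C0])
  finally show n2: "norm I2 \<le> K * c * M * wV s t * J2 t" .
  have "norm (I1 - I2) \<le> K * c * M * wV s t * (J1 t + J2 t)"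
    using n1 n2 norm_triangle_ineq4[of I1 I2] by (simp add: distrib_left)
  also have "\<dots> \<le> K * c * M * wV s t * N" using J_sum C0 by (intro mult_left_mono) auto
  also have "\<dots> = xx * M * wV s t" unfolding xx_def by (simp add: mult_ac)
  finally show "norm (I1 - I2) \<le> xx * M * wV s t" .
qed

definition eqV where "eqV s Y Z \<longleftrightarrow> (\<forall>t\<le>s. \<exists>I1 I2.
  ((\<lambda>\<tau>. T t \<tau> o\<^sub>L P \<tau> o\<^sub>L Bl \<tau> o\<^sub>L Z \<tau>) has_integral I1) {..t} \<and>
  ((\<lambda>\<tau>. T t \<tau> o\<^sub>L Q \<tau> o\<^sub>L Bl \<tau> o\<^sub>L Z \<tau>) has_integral I2) {t..s} \<and>
  Z t = (T t s o\<^sub>L Y) + I1 - I2)"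
definition bndV where "bndV s Z \<longleftrightarrow> (\<exists>M. \<forall>t\<le>s. norm (Z t) \<le> M * wV s t)"

lemma uniqV0:
  assumes "bndV s Z" "eqV s 0 Z" "t \<le> s"
  shows "Z t = 0"
proof -
  obtain M where M: "\<And>t. t \<le> s \<Longrightarrow> norm (Z t) \<le> M * wV s t" using assms(1) unfolding bndV_def by auto
  have ind: "\<forall>t\<le>s. norm (Z t) \<le> xx ^ n * M * wV s t" for n
  proof (induction n)
    case 0 then show ?case using M by simp
  next
    case (Suc n)
    show ?case
    proof (intro allI impI)
      fix t assume ts: "t \<le> s"
      obtain I1 I2 where I: "((\<lambda>\<tau>. T t \<tau> o\<^sub>L P \<tau> o\<^sub>L Bl \<tau> o\<^sub>L Z \<tau>) has_integral I1) {..t}"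
        "((\<lambda>\<tau>. T t \<tau> o\<^sub>L Q \<tau> o\<^sub>L Bl \<tau> o\<^sub>L Z \<tau>) has_integral I2) {t..s}" "Z t = (T t s o\<^sub>L 0) + I1 - I2"
        using assms(2) ts unfolding eqV_def by blast
      have "norm (I1 - I2) \<le> xx * (xx ^ n * M) * wV s t"
        by (rule estV(3)[OF _ ts I(1) I(2)]) (use Suc in auto)
      then show "norm (Z t) \<le> xx ^ Suc n * M * wV s t" using I(3) by (simp add: mult_ac)
    qed
  qed
  have "norm (Z t) \<le> 0"
  proof (rule geom_bound[where x=xx and D="M * wV s t"])
    show "norm (Z t) \<le> 0 + xx ^ n * (M * wV s t)" for n using ind[of n] assms(3) by (simp add: mult_ac)
  qed (use xx_pos xx_lt1 in auto)
  then show ?thesis by simp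
qed

lemma eqV_diff:
  assumes "eqV s Y1 Z1" "eqV s Y2 Z2"
  shows "eqV s (Y1 - Y2) (\<lambda>t. Z1 t - Z2 t)"
  unfolding eqV_def
proof (intro allI impI)
  fix t assume ts: "t \<le> s"
  obtain I1 I2 where I: "((\<lambda>\<tau>. T t \<tau> o\<^sub>L P \<tau> o\<^sub>L Bl \<tau> o\<^sub>L Z1 \<tau>) has_integral I1) {..t}"
    "((\<lambda>\<tau>. T t \<tau> o\<^sub>L Q \<tau> o\<^sub>L Bl \<tau> o\<^sub>L Z1 \<tau>) has_integral I2) {t..s}" "Z1 t = (T t s o\<^sub>L Y1) + I1 - I2"
    using assms(1) ts unfolding eqV_def by blast
  obtain J1 J2 where J: "((\<lambda>\<tau>. T t \<tau> o\<^sub>L P \<tau> o\<^sub>L Bl \<tau> o\<^sub>L Z2 \<tau>) has_integral J1) {..t}"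
    "((\<lambda>\<tau>. T t \<tau> o\<^sub>L Q \<tau> o\<^sub>L Bl \<tau> o\<^sub>L Z2 \<tau>) has_integral J2) {t..s}" "Z2 t = (T t s o\<^sub>L Y2) + J1 - J2"
    using assms(2) ts unfolding eqV_def by blast
  show "\<exists>I1 I2. ((\<lambda>\<tau>. T t \<tau> o\<^sub>L P \<tau> o\<^sub>L Bl \<tau> o\<^sub>L (Z1 \<tau> - Z2 \<tau>)) has_integral I1) {..t} \<and>
      ((\<lambda>\<tau>. T t \<tau> o\<^sub>L Q \<tau> o\<^sub>L Bl \<tau> o\<^sub>L (Z1 \<tau> - Z2 \<tau>)) has_integral I2) {t..s} \<and>
      Z1 t - Z2 t = (T t s o\<^sub>L (Y1 - Y2)) + I1 - I2"
  proof (intro exI conjI)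
    show "((\<lambda>\<tau>. T t \<tau> o\<^sub>L P \<tau> o\<^sub>L Bl \<tau> o\<^sub>L (Z1 \<tau> - Z2 \<tau>)) has_integral I1 - J1) {..t}"
      using has_integral_diff[OF I(1) J(1)] by (simp add: cmp_diff2)
    show "((\<lambda>\<tau>. T t \<tau> o\<^sub>L Q \<tau> o\<^sub>L Bl \<tau> o\<^sub>L (Z1 \<tau> - Z2 \<tau>)) has_integral I2 - J2) {t..s}"
      using has_integral_diff[OF I(2) J(2)] by (simp add: cmp_diff2)
    show "Z1 t - Z2 t = (T t s o\<^sub>L (Y1 - Y2)) + (I1 - J1) - (I2 - J2)"
      unfolding I(3) J(3) by (simp add: cmp_diff2 algebra_simps)
  qed
qed

lemma eqV_right:
  assumes "eqV s Y Z"
  shows "eqV s (Y o\<^sub>L y) (\<lambda>t. Z t o\<^sub>L y)"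
  unfolding eqV_def
proof (intro allI impI)
  fix t assume ts: "t \<le> s"
  obtain I1 I2 where I: "((\<lambda>\<tau>. T t \<tau> o\<^sub>L P \<tau> o\<^sub>L Bl \<tau> o\<^sub>L Z \<tau>) has_integral I1) {..t}"
    "((\<lambda>\<tau>. T t \<tau> o\<^sub>L Q \<tau> o\<^sub>L Bl \<tau> o\<^sub>L Z \<tau>) has_integral I2) {t..s}" "Z t = (T t s o\<^sub>L Y) + I1 - I2"
    using assms ts unfolding eqV_def by blast
  show "\<exists>I1 I2. ((\<lambda>\<tau>. T t \<tau> o\<^sub>L P \<tau> o\<^sub>L Bl \<tau> o\<^sub>L (Z \<tau> o\<^sub>L y)) has_integral I1) {..t} \<and>
      ((\<lambda>\<tau>. T t \<tau> o\<^sub>L Q \<tau> o\<^sub>L Bl \<tau> o\<^sub>L (Z \<tau> o\<^sub>L y)) has_integral I2) {t..s} \<and>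
      (Z t o\<^sub>L y) = (T t s o\<^sub>L (Y o\<^sub>L y)) + I1 - I2"
  proof (intro exI conjI)
    show "((\<lambda>\<tau>. T t \<tau> o\<^sub>L P \<tau> o\<^sub>L Bl \<tau> o\<^sub>L (Z \<tau> o\<^sub>L y)) has_integral (I1 o\<^sub>L y)) {..t}"
      using has_integral_cmp_right[OF I(1), of y] by (simp add: cmp_assoc)
    show "((\<lambda>\<tau>. T t \<tau> o\<^sub>L Q \<tau> o\<^sub>L Bl \<tau> o\<^sub>L (Z \<tau> o\<^sub>L y)) has_integral (I2 o\<^sub>L y)) {t..s}"
      using has_integral_cmp_right[OF I(2), of y] by (simp add: cmp_assoc)
    show "(Z t o\<^sub>L y) = (T t s o\<^sub>L (Y o\<^sub>L y)) + (I1 o\<^sub>L y) - (I2 o\<^sub>L y)"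
      unfolding I(3) by (simp add: cmp_diff1 cmp_add1 cmp_assoc)
  qed
qed

lemma bndV_diff: "bndV s Z1 \<Longrightarrow> bndV s Z2 \<Longrightarrow> bndV s (\<lambda>t. Z1 t - Z2 t)"
proof -
  assume "bndV s Z1" "bndV s Z2"
  then obtain M1 M2 where M: "\<forall>t\<le>s. norm (Z1 t) \<le> M1 * wV s t" "\<forall>t\<le>s. norm (Z2 t) \<le> M2 * wV s t"
    unfolding bndV_def by blast
  have "norm (Z1 t - Z2 t) \<le> (M1 + M2) * wV s t" if "t \<le> s" for t
  proof -
    have "norm (Z1 t) \<le> M1 * wV s t" "norm (Z2 t) \<le> M2 * wV s t" using M that by auto
    then show ?thesis using norm_triangle_ineq4[of "Z1 t" "Z2 t"] by (simp add: distrib_right)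
  qed
  then show ?thesis unfolding bndV_def by blast
qed

lemma bndV_right: "bndV s Z \<Longrightarrow> bndV s (\<lambda>t. Z t o\<^sub>L y)"
proof -
  assume "bndV s Z"
  then obtain M where M: "\<forall>t\<le>s. norm (Z t) \<le> M * wV s t" unfolding bndV_def by blast
  have "norm (Z t o\<^sub>L y) \<le> (M * norm y) * wV s t" if "t \<le> s" for t
  proof -
    have "norm (Z t o\<^sub>L y) \<le> norm (Z t) * norm y" by (rule norm_cmp)
    also have "\<dots> \<le> M * wV s t * norm y" using M that by (intro mult_right_mono) auto
    finally show ?thesis by (simp add: mult_ac)
  qed
  then show ?thesis unfolding bndV_def by blast
qed

lemma uniqV:
  assumes "eqV s Y Z1" "eqV s Y Z2" "bndV s Z1" "bndV s Z2" "t \<le> s"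
  shows "Z1 t = Z2 t"
proof -
  have "(\<lambda>t. Z1 t - Z2 t) t = 0"
    using uniqV0[OF bndV_diff[OF assms(3,4)] _ assms(5)] eqV_diff[OF assms(1,2)] by simp
  then show ?thesis by simp
qed

lemma V_eqV: "eqV s (Q s) (\<lambda>t. V t s)"
  unfolding eqV_def using V_eq by blast

lemma V_bndV: "bndV s (\<lambda>t. V t s)"
proof -
  obtain M where M: "\<forall>t\<le>s. norm (V t s) * (k s / k t) powr b * \<nu> \<bar>s\<bar> powr (-\<epsilon>) \<le> M"
    using V_Omega2 by blast
  have "norm (V t s) \<le> M * wV s t" if "t \<le> s" for t
  proof -
    have "norm (V t s) = (norm (V t s) * (k s / k t) powr b * \<nu> \<bar>s\<bar> powr (-\<epsilon>)) * wV s t"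
      unfolding wV_def
      using powr_inv_mult[of "k s / k t" "-b"] powr_inv_mult[of "\<nu> \<bar>s\<bar>" \<epsilon>]
      by (simp add: algebra_simps)
    also have "\<dots> \<le> M * wV s t" using M that wV_pos[of s t] by (intro mult_right_mono) auto
    finally show ?thesis .
  qed
  then show ?thesis unfolding bndV_def by blast
qed

lemma TQ_le: "t \<le> s \<Longrightarrow> norm (T t s o\<^sub>L Q s) \<le> K * wV s t"
  unfolding wV_def using dich_Q by (simp add: mult.assoc)

lemma V_le: "t \<le> s \<Longrightarrow> norm (V t s) \<le> Kh * wV s t"
proof -
  assume ts0: "t \<le> s"
  obtain M where M: "\<forall>t\<le>s. norm (V t s) \<le> M * wV s t" using V_bndV unfolding bndV_def by blast
  have ind: "\<forall>t\<le>s. norm (V t s) \<le> (Kh + xx ^ n * \<bar>M\<bar>) * wV s t" for n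
  proof (induction n)
    case 0
    show ?case
    proof (intro allI impI)
      fix t assume "t \<le> s"
      then have "norm (V t s) \<le> M * wV s t" using M by blast
      also have "\<dots> \<le> (Kh + xx ^ 0 * \<bar>M\<bar>) * wV s t"
        using Kh_pos wV_pos[of s t] by (intro mult_right_mono) auto
      finally show "norm (V t s) \<le> (Kh + xx ^ 0 * \<bar>M\<bar>) * wV s t" .
    qed
  next
    case (Suc n)
    show ?case
    proof (intro allI impI)
      fix t assume ts: "t \<le> s"
      obtain I1 I2 where I: "((\<lambda>\<tau>. T t \<tau> o\<^sub>L P \<tau> o\<^sub>L Bl \<tau> o\<^sub>L V \<tau> s) has_integral I1) {..t}"
        "((\<lambda>\<tau>. T t \<tau> o\<^sub>L Q \<tau> o\<^sub>L Bl \<tau> o\<^sub>L V \<tau> s) has_integral I2) {t..s}" "V t s = (T t s o\<^sub>L Q s) + I1 - I2"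
        using V_eq ts by blast
      have e: "norm (I1 - I2) \<le> xx * (Kh + xx ^ n * \<bar>M\<bar>) * wV s t"
        by (rule estV(3)[OF _ ts I(1) I(2)]) (use Suc in auto)
      have "norm (V t s) \<le> norm (T t s o\<^sub>L Q s) + norm (I1 - I2)"
        unfolding I(3) by (metis add_diff_eq norm_triangle_ineq)
      also have "\<dots> \<le> K * wV s t + xx * (Kh + xx ^ n * \<bar>M\<bar>) * wV s t"
        using TQ_le[OF ts] e by (rule add_mono)
      also have "\<dots> = (K + xx * Kh + xx ^ Suc n * \<bar>M\<bar>) * wV s t" by (simp add: algebra_simps)
      also have "\<dots> = (Kh + xx ^ Suc n * \<bar>M\<bar>) * wV s t" using Kh_eq by simp
      finally show "norm (V t s) \<le> (Kh + xx ^ Suc n * \<bar>M\<bar>) * wV s t" .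
    qed
  qed
  show "norm (V t s) \<le> Kh * wV s t"
  proof (rule geom_bound[where x=xx and D="\<bar>M\<bar> * wV s t"])
    show "norm (V t s) \<le> Kh * wV s t + xx ^ n * (\<bar>M\<bar> * wV s t)" for n
      using ind[of n] ts0 by (simp add: algebra_simps)
  qed (use xx_pos xx_lt1 in auto)
qed

lemma V_Q: "t \<le> s \<Longrightarrow> (V t s o\<^sub>L Q s) = V t s"
  using uniqV[OF _ V_eqV bndV_right[OF V_bndV] V_bndV, of s "Q s"]
    eqV_right[OF V_eqV, of s "Q s"] by (simp add: PQ(3))

lemma V_P: "t \<le> s \<Longrightarrow> (V t s o\<^sub>L P s) = 0"
proof -
  assume "t \<le> s"
  then have "(V t s o\<^sub>L Q s) = V t s" by (rule V_Q)
  then show ?thesis by (simp add: cmp_diff2)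
qed

lemma V_ss: "\<exists>I1. ((\<lambda>\<tau>. T s \<tau> o\<^sub>L P \<tau> o\<^sub>L Bl \<tau> o\<^sub>L V \<tau> s) has_integral I1) {..s} \<and> V s s = Q s + I1"
proof -
  obtain I1 I2 where I: "((\<lambda>\<tau>. T s \<tau> o\<^sub>L P \<tau> o\<^sub>L Bl \<tau> o\<^sub>L V \<tau> s) has_integral I1) {..s}"
    "((\<lambda>\<tau>. T s \<tau> o\<^sub>L Q \<tau> o\<^sub>L Bl \<tau> o\<^sub>L V \<tau> s) has_integral I2) {s..s}" "V s s = (T s s o\<^sub>L Q s) + I1 - I2"
    using V_eq[of s s] by blast
  then show ?thesis using I_refl0[OF I(2)] by auto
qed

lemma QV: "(Q s o\<^sub>L V s s) = Q s"
proof -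
  obtain I1 where I: "((\<lambda>\<tau>. T s \<tau> o\<^sub>L P \<tau> o\<^sub>L Bl \<tau> o\<^sub>L V \<tau> s) has_integral I1) {..s}" "V s s = Q s + I1"
    using V_ss by blast
  have "((\<lambda>\<tau>. Q s o\<^sub>L (T s \<tau> o\<^sub>L P \<tau> o\<^sub>L Bl \<tau> o\<^sub>L V \<tau> s)) has_integral (Q s o\<^sub>L I1)) {..s}"
    by (rule has_integral_cmp_left[OF I(1)])
  moreover have "(\<lambda>\<tau>. Q s o\<^sub>L (T s \<tau> o\<^sub>L P \<tau> o\<^sub>L Bl \<tau> o\<^sub>L V \<tau> s)) = (\<lambda>\<tau>. 0)"
    by (rule ext) (simp add: cmp_assoc Q_inv_r PQ_r)
  ultimately have "Q s o\<^sub>L I1 = 0" using has_integral_0 has_integral_unique by metis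
  then show ?thesis using I(2) by (simp add: cmp_add2 PQ(3))
qed

lemma VV: "t \<le> s \<Longrightarrow> (V t s o\<^sub>L V s s) = V t s"
  using uniqV[OF _ V_eqV bndV_right[OF V_bndV] V_bndV, of s "V s s"]
    eqV_right[OF V_eqV, of s "V s s"] by (simp add: QV)

lemma V_voc: "t \<le> s \<Longrightarrow> V t s = (That t s o\<^sub>L V s s)"
proof -
  assume ts0: "t \<le> s"
  define D where "D \<tau> = V \<tau> s - (That \<tau> s o\<^sub>L V s s)" for \<tau>
  obtain I1s where I1s: "((\<lambda>\<tau>. T s \<tau> o\<^sub>L P \<tau> o\<^sub>L Bl \<tau> o\<^sub>L V \<tau> s) has_integral I1s) {..s}" "V s s = Q s + I1s"
    using V_ss by blast
  have key: "((\<lambda>\<tau>. T t \<tau> o\<^sub>L Bl \<tau> o\<^sub>L D \<tau>) has_integral (- D t)) {t..s}" if ts: "t \<in> {t0..s}" for t t0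
  proof -
    from ts have ts: "t \<le> s" by auto
    obtain I1 I2 where I: "((\<lambda>\<tau>. T t \<tau> o\<^sub>L P \<tau> o\<^sub>L Bl \<tau> o\<^sub>L V \<tau> s) has_integral I1) {..t}"
      "((\<lambda>\<tau>. T t \<tau> o\<^sub>L Q \<tau> o\<^sub>L Bl \<tau> o\<^sub>L V \<tau> s) has_integral I2) {t..s}" "V t s = (T t s o\<^sub>L Q s) + I1 - I2"
      using V_eq ts by blast
    define gP where "gP \<tau> = T t \<tau> o\<^sub>L P \<tau> o\<^sub>L Bl \<tau> o\<^sub>L V \<tau> s" for \<tau>
    have a: "(gP has_integral (T t s o\<^sub>L I1s)) {..s}"
    proof -
      have "((\<lambda>\<tau>. T t s o\<^sub>L (T s \<tau> o\<^sub>L P \<tau> o\<^sub>L Bl \<tau> o\<^sub>L V \<tau> s)) has_integral (T t s o\<^sub>L I1s)) {..s}"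
        by (rule has_integral_cmp_left[OF I1s(1)])
      moreover have "(\<lambda>\<tau>. T t s o\<^sub>L (T s \<tau> o\<^sub>L P \<tau> o\<^sub>L Bl \<tau> o\<^sub>L V \<tau> s)) = gP"
        unfolding gP_def by (rule ext) (simp add: cmp_assoc T_co3)
      ultimately show ?thesis by simp
    qed
    have "gP integrable_on {t..s}"
      by (rule integrable_on_subinterval[OF has_integral_integrable[OF a]]) auto
    then obtain I1' where c: "(gP has_integral I1') {t..s}" by (auto simp: integrable_on_def)
    have "(gP has_integral (I1 + I1')) ({..t} \<union> {t..s})"
      by (rule has_integral_Un[OF I(1)[folded gP_def] c negl_pt2[OF ts]])
    moreover have "{..t} \<union> {t..s} = {..s}" using ts by auto
    ultimately have e: "I1 + I1' = (T t s o\<^sub>L I1s)" using a has_integral_unique by metis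
    have "((\<lambda>\<tau>. T t \<tau> o\<^sub>L Bl \<tau> o\<^sub>L V \<tau> s) has_integral (I1' + I2)) {t..s}"
      using has_integral_add[OF c[unfolded gP_def] I(2)] by (simp add: split_PQ[symmetric])
    moreover have "((\<lambda>\<tau>. T t \<tau> o\<^sub>L Bl \<tau> o\<^sub>L That \<tau> s o\<^sub>L V s s) has_integral ((T t s - (T t t o\<^sub>L That t s)) o\<^sub>L V s s)) {t..s}"
      by (rule has_integral_cmp_right[OF voc_bwd[OF ts]])
    ultimately have "((\<lambda>\<tau>. (T t \<tau> o\<^sub>L Bl \<tau> o\<^sub>L V \<tau> s) - (T t \<tau> o\<^sub>L Bl \<tau> o\<^sub>L That \<tau> s o\<^sub>L V s s)) has_integral
        ((I1' + I2) - ((T t s - (T t t o\<^sub>L That t s)) o\<^sub>L V s s))) {t..s}"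
      by (rule has_integral_diff)
    moreover have "(\<lambda>\<tau>. (T t \<tau> o\<^sub>L Bl \<tau> o\<^sub>L V \<tau> s) - (T t \<tau> o\<^sub>L Bl \<tau> o\<^sub>L That \<tau> s o\<^sub>L V s s))
        = (\<lambda>\<tau>. T t \<tau> o\<^sub>L Bl \<tau> o\<^sub>L D \<tau>)"
      unfolding D_def by (rule ext) (simp add: cmp_diff2 cmp_assoc)
    moreover have "(I1' + I2) - ((T t s - (T t t o\<^sub>L That t s)) o\<^sub>L V s s) = - D t"
    proof -
      have "I1' = (T t s o\<^sub>L I1s) - I1" using e by (simp add: algebra_simps)
      then show ?thesis unfolding D_def I(3) I1s(2)
        by (simp add: cmp_diff cmp_add algebra_simps)
    qed
    ultimately show ?thesis by simp
  qed
  have Dc: "continuous_on {t..s} D"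
    unfolding D_def
    by (intro continuous_on_diff cont_cmp continuous_on_const Th_cont1
        continuous_on_subset[OF V_cont[of s]]) auto
  have "D t = 0" by (rule volterra_bwd[OF key Dc]) (use ts0 in auto)
  then show ?thesis unfolding D_def by simp
qed

end


context setting begin

lemma T_ap: "blinfun_apply (T t r) (blinfun_apply (T r s) v) = blinfun_apply (T t s) v"
  using arg_cong[OF T_co[of t r s], of "\<lambda>f. blinfun_apply f v"] by simp

lemma H_U:
  assumes bnd: "\<exists>M. \<forall>\<tau>\<ge>s. norm (That \<tau> s o\<^sub>L w) \<le> M * wU s \<tau>"
    and intQ: "\<And>t. s \<le> t \<Longrightarrow> (\<lambda>\<tau>. T t \<tau> o\<^sub>L Q \<tau> o\<^sub>L Bl \<tau> o\<^sub>L (That \<tau> s o\<^sub>L w)) integrable_on {t..}"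
  shows "(U s s o\<^sub>L w) = w"
proof -
  define Z where "Z \<tau> = That \<tau> s o\<^sub>L w" for \<tau>
  obtain M where M: "\<And>\<tau>. \<tau> \<ge> s \<Longrightarrow> norm (Z \<tau>) \<le> M * wU s \<tau>" using bnd unfolding Z_def by auto
  have M0: "0 \<le> M"
  proof -
    have "0 \<le> M * wU s s" using M[of s] norm_ge_zero[of "Z s"] by linarith
    then show ?thesis using wU_pos[of s s] by (simp add: zero_le_mult_iff)
  qed
  obtain R' where R: "((\<lambda>\<tau>. T s \<tau> o\<^sub>L Q \<tau> o\<^sub>L Bl \<tau> o\<^sub>L Z \<tau>) has_integral R') {s..}"
    using intQ[of s] unfolding Z_def integrable_on_def by auto
  define y0 where "y0 = w + R'"
  define x0 where "x0 = Q s o\<^sub>L y0"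
  define \<Phi> where "\<Phi> t = (T s t o\<^sub>L That t s) - T s s" for t
  define I1 where "I1 t = (T t s o\<^sub>L P s) o\<^sub>L (\<Phi> t o\<^sub>L w)" for t
  define IQ where "IQ t = (T t s o\<^sub>L Q s) o\<^sub>L (\<Phi> t o\<^sub>L w)" for t
  have vF: "((\<lambda>\<tau>. T s \<tau> o\<^sub>L Bl \<tau> o\<^sub>L That \<tau> s) has_integral \<Phi> t) {s..t}" if "s \<le> t" for t
    unfolding \<Phi>_def by (rule voc_fwd[OF that])
  have gP: "((\<lambda>\<tau>. T t \<tau> o\<^sub>L P \<tau> o\<^sub>L Bl \<tau> o\<^sub>L Z \<tau>) has_integral I1 t) {s..t}" if st: "s \<le> t" for t
  proof -
    have "((\<lambda>\<tau>. (T t s o\<^sub>L P s) o\<^sub>L ((T s \<tau> o\<^sub>L Bl \<tau> o\<^sub>L That \<tau> s) o\<^sub>L w)) has_integral I1 t) {s..t}"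
      unfolding I1_def by (intro has_integral_cmp_left has_integral_cmp_right vF st)
    moreover have "(\<lambda>\<tau>. (T t s o\<^sub>L P s) o\<^sub>L ((T s \<tau> o\<^sub>L Bl \<tau> o\<^sub>L That \<tau> s) o\<^sub>L w))
        = (\<lambda>\<tau>. T t \<tau> o\<^sub>L P \<tau> o\<^sub>L Bl \<tau> o\<^sub>L Z \<tau>)"
      unfolding Z_def by (rule ext) (simp add: cmp_assoc P_inv_r T_co3)
    ultimately show ?thesis by simp
  qed
  have gQ: "((\<lambda>\<tau>. T t \<tau> o\<^sub>L Q \<tau> o\<^sub>L Bl \<tau> o\<^sub>L Z \<tau>) has_integral IQ t) {s..t}" if st: "s \<le> t" for t
  proof -
    have "((\<lambda>\<tau>. (T t s o\<^sub>L Q s) o\<^sub>L ((T s \<tau> o\<^sub>L Bl \<tau> o\<^sub>L That \<tau> s) o\<^sub>L w)) has_integral IQ t) {s..t}"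
      unfolding IQ_def by (intro has_integral_cmp_left has_integral_cmp_right vF st)
    moreover have "(\<lambda>\<tau>. (T t s o\<^sub>L Q s) o\<^sub>L ((T s \<tau> o\<^sub>L Bl \<tau> o\<^sub>L That \<tau> s) o\<^sub>L w))
        = (\<lambda>\<tau>. T t \<tau> o\<^sub>L Q \<tau> o\<^sub>L Bl \<tau> o\<^sub>L Z \<tau>)"
      unfolding Z_def by (rule ext) (simp add: cmp_assoc Q_inv_r T_co3)
    ultimately show ?thesis by simp
  qed
  have eq: "\<exists>I2. ((\<lambda>\<tau>. T t \<tau> o\<^sub>L Q \<tau> o\<^sub>L Bl \<tau> o\<^sub>L Z \<tau>) has_integral I2) {t..} \<and>
      Z t = (T t s o\<^sub>L y0) + I1 t - I2" if st: "s \<le> t" for t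
  proof -
    obtain I2 where I2: "((\<lambda>\<tau>. T t \<tau> o\<^sub>L Q \<tau> o\<^sub>L Bl \<tau> o\<^sub>L Z \<tau>) has_integral I2) {t..}"
      using intQ[OF st] unfolding Z_def integrable_on_def by auto
    have a: "((\<lambda>\<tau>. T t \<tau> o\<^sub>L Q \<tau> o\<^sub>L Bl \<tau> o\<^sub>L Z \<tau>) has_integral (T t s o\<^sub>L R')) {s..}"
    proof -
      have "((\<lambda>\<tau>. T t s o\<^sub>L (T s \<tau> o\<^sub>L Q \<tau> o\<^sub>L Bl \<tau> o\<^sub>L Z \<tau>)) has_integral (T t s o\<^sub>L R')) {s..}"
        by (rule has_integral_cmp_left[OF R])
      moreover have "(\<lambda>\<tau>. T t s o\<^sub>L (T s \<tau> o\<^sub>L Q \<tau> o\<^sub>L Bl \<tau> o\<^sub>L Z \<tau>)) = (\<lambda>\<tau>. T t \<tau> o\<^sub>L Q \<tau> o\<^sub>L Bl \<tau> o\<^sub>L Z \<tau>)"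
        by (rule ext) (simp add: cmp_assoc T_co3)
      ultimately show ?thesis by simp
    qed
    have "((\<lambda>\<tau>. T t \<tau> o\<^sub>L Q \<tau> o\<^sub>L Bl \<tau> o\<^sub>L Z \<tau>) has_integral (IQ t + I2)) ({s..t} \<union> {t..})"
      by (rule has_integral_Un[OF gQ[OF st] I2 negl_pt[OF st]])
    moreover have "{s..t} \<union> {t..} = {s..}" using st by auto
    ultimately have e: "IQ t + I2 = (T t s o\<^sub>L R')" using a has_integral_unique by metis
    have z: "Z t = (T t s o\<^sub>L w) + I1 t + IQ t"
      unfolding Z_def I1_def IQ_def \<Phi>_def
      by (rule blinfun_eqI) (simp add: blinfun.bilinear_simps T_ap)
    show ?thesis
    proof (intro exI conjI)
      show "((\<lambda>\<tau>. T t \<tau> o\<^sub>L Q \<tau> o\<^sub>L Bl \<tau> o\<^sub>L Z \<tau>) has_integral I2) {t..}" by (rule I2)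
      have "IQ t = (T t s o\<^sub>L R') - I2" using e by (simp add: algebra_simps)
      then show "Z t = (T t s o\<^sub>L y0) + I1 t - I2" unfolding z y0_def by (simp add: cmp_add2)
    qed
  qed
  \<comment> \<open>x0 = 0 by growth\<close>
  define C0 where "C0 = (M + xx * M + K * norm y0) * \<mu> \<bar>s\<bar> powr \<epsilon>"
  have Tx0: "norm (T t s o\<^sub>L x0) \<le> C0" if st: "s \<le> t" for t
  proof -
    obtain I2 where I2: "((\<lambda>\<tau>. T t \<tau> o\<^sub>L Q \<tau> o\<^sub>L Bl \<tau> o\<^sub>L Z \<tau>) has_integral I2) {t..}"
      and z: "Z t = (T t s o\<^sub>L y0) + I1 t - I2" using eq[OF st] by blast
    have ex: "(T t s o\<^sub>L x0) = Z t - (I1 t - I2) - ((T t s o\<^sub>L P s) o\<^sub>L y0)"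
      unfolding z x0_def by (simp add: cmp_diff cmp_assoc)
    have "norm (Z t - (I1 t - I2) - ((T t s o\<^sub>L P s) o\<^sub>L y0)) \<le> norm (Z t - (I1 t - I2)) + norm ((T t s o\<^sub>L P s) o\<^sub>L y0)"
      by (rule norm_triangle_ineq4)
    moreover have "norm (Z t - (I1 t - I2)) \<le> norm (Z t) + norm (I1 t - I2)"
      by (rule norm_triangle_ineq4)
    ultimately have "norm (T t s o\<^sub>L x0) \<le> norm (Z t) + norm (I1 t - I2) + norm ((T t s o\<^sub>L P s) o\<^sub>L y0)"
      unfolding ex by linarith
    also have "\<dots> \<le> M * wU s t + xx * M * wU s t + K * wU s t * norm y0"
    proof (intro add_mono)
      show "norm (Z t) \<le> M * wU s t" by (rule M[OF st])
      show "norm (I1 t - I2) \<le> xx * M * wU s t" by (rule estU(3)[OF M st gP[OF st] I2])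
      show "norm ((T t s o\<^sub>L P s) o\<^sub>L y0) \<le> K * wU s t * norm y0"
        using order_trans[OF norm_cmp mult_right_mono[OF TP_le[OF st]]] by simp
    qed
    also have "\<dots> = (M + xx * M + K * norm y0) * wU s t" by (simp add: algebra_simps)
    also have "\<dots> \<le> C0" unfolding C0_def
      using wU_le_ss[OF st] M0 xx_pos by (intro mult_left_mono) auto
    finally show ?thesis .
  qed
  have x0_eq: "x0 = (T s t o\<^sub>L Q t) o\<^sub>L (T t s o\<^sub>L x0)" for t
    unfolding x0_def by (simp add: cmp_assoc Q_inv_r T_co3 PP_r)
  have x0_le: "norm x0 \<le> K * C0 * k s powr b * (k t powr (-b) * \<nu> \<bar>t\<bar> powr \<epsilon>)" if st: "s \<le> t" for t
  proof -
    have "norm x0 \<le> norm (T s t o\<^sub>L Q t) * norm (T t s o\<^sub>L x0)"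
      by (subst x0_eq[of t]) (rule norm_cmp)
    also have "\<dots> \<le> (K * (k t / k s) powr (-b) * \<nu> \<bar>t\<bar> powr \<epsilon>) * C0"
      using dich_Q[OF st] Tx0[OF st] by (intro mult_mono) auto
    also have "(k t / k s) powr (-b) = k t powr (-b) * k s powr b"
      by (simp add: powr_divide powr_minus_divide field_simps)
    finally show ?thesis by (simp add: mult_ac)
  qed
  have "norm x0 \<le> 0"
  proof (rule tendsto_le[OF trivial_limit_at_top_linorder])
    show "((\<lambda>t. K * C0 * k s powr b * (k t powr (-b) * \<nu> \<bar>t\<bar> powr \<epsilon>)) \<longlongrightarrow> 0) at_top"
      using tendsto_mult_left[OF lim_k, of "K * C0 * k s powr b"] by simp
    show "((\<lambda>t. norm x0) \<longlongrightarrow> norm x0) at_top" by simp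
    show "\<forall>\<^sub>F t in at_top. norm x0 \<le> K * C0 * k s powr b * (k t powr (-b) * \<nu> \<bar>t\<bar> powr \<epsilon>)"
      using x0_le eventually_at_top_linorder by blast
  qed
  then have x00: "x0 = 0" by simp
  have Py0: "(T t s o\<^sub>L y0) = (T t s o\<^sub>L (P s o\<^sub>L y0))" for t
  proof -
    have "y0 = (P s o\<^sub>L y0) + x0"
      unfolding x0_def by (rule blinfun_eqI) (simp add: blinfun.bilinear_simps)
    then have "(T t s o\<^sub>L y0) = (T t s o\<^sub>L (P s o\<^sub>L y0)) + (T t s o\<^sub>L x0)"
      by (metis cmp_add2)
    then show ?thesis using x00 by simp
  qed
  have eqZ: "eqU s (P s o\<^sub>L y0) Z"
    unfolding eqU_def
  proof (intro allI impI)
    fix t assume st: "s \<le> t"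
    obtain I2 where I2: "((\<lambda>\<tau>. T t \<tau> o\<^sub>L Q \<tau> o\<^sub>L Bl \<tau> o\<^sub>L Z \<tau>) has_integral I2) {t..}"
      and z: "Z t = (T t s o\<^sub>L y0) + I1 t - I2" using eq[OF st] by blast
    show "\<exists>I1 I2. ((\<lambda>\<tau>. T t \<tau> o\<^sub>L P \<tau> o\<^sub>L Bl \<tau> o\<^sub>L Z \<tau>) has_integral I1) {s..t} \<and>
        ((\<lambda>\<tau>. T t \<tau> o\<^sub>L Q \<tau> o\<^sub>L Bl \<tau> o\<^sub>L Z \<tau>) has_integral I2) {t..} \<and>
        Z t = (T t s o\<^sub>L (P s o\<^sub>L y0)) + I1 - I2"
    proof (intro exI conjI)
      show "((\<lambda>\<tau>. T t \<tau> o\<^sub>L P \<tau> o\<^sub>L Bl \<tau> o\<^sub>L Z \<tau>) has_integral I1 t) {s..t}" by (rule gP[OF st])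
      show "((\<lambda>\<tau>. T t \<tau> o\<^sub>L Q \<tau> o\<^sub>L Bl \<tau> o\<^sub>L Z \<tau>) has_integral I2) {t..}" by (rule I2)
      show "Z t = (T t s o\<^sub>L (P s o\<^sub>L y0)) + I1 t - I2" using z Py0[of t] by simp
    qed
  qed
  have bZ: "bndU s Z" unfolding bndU_def using M by blast
  have "Z s = (U s s o\<^sub>L y0)"
    using uniqU[OF eqZ eqU_right[OF U_eqU] bZ bndU_right[OF U_bndU]] by simp
  then have wU: "w = (U s s o\<^sub>L y0)" unfolding Z_def by simp
  have "(U s s o\<^sub>L w) = ((U s s o\<^sub>L U s s) o\<^sub>L y0)" unfolding wU by (simp add: cmp_assoc)
  also have "\<dots> = w" using UU[of s s] wU by simp
  finally show ?thesis .
qed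

end


context setting begin

lemma T_ap': "blinfun_apply (T t r) (blinfun_apply (T r s) v) = blinfun_apply (T t s) v"
  using arg_cong[OF T_co[of t r s], of "\<lambda>f. blinfun_apply f v"] by simp

lemma H_V:
  assumes bnd: "\<exists>M. \<forall>\<tau>\<le>s. norm (That \<tau> s o\<^sub>L w) \<le> M * wV s \<tau>"
    and intP: "\<And>t. t \<le> s \<Longrightarrow> (\<lambda>\<tau>. T t \<tau> o\<^sub>L P \<tau> o\<^sub>L Bl \<tau> o\<^sub>L (That \<tau> s o\<^sub>L w)) integrable_on {..t}"
  shows "(V s s o\<^sub>L w) = w"
proof -
  define Z where "Z \<tau> = That \<tau> s o\<^sub>L w" for \<tau>
  obtain M where M: "\<And>\<tau>. \<tau> \<le> s \<Longrightarrow> norm (Z \<tau>) \<le> M * wV s \<tau>" using bnd unfolding Z_def by auto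
  have M0: "0 \<le> M"
  proof -
    have "0 \<le> M * wV s s" using M[of s] norm_ge_zero[of "Z s"] by linarith
    then show ?thesis using wV_pos[of s s] by (simp add: zero_le_mult_iff)
  qed
  obtain R' where R: "((\<lambda>\<tau>. T s \<tau> o\<^sub>L P \<tau> o\<^sub>L Bl \<tau> o\<^sub>L Z \<tau>) has_integral R') {..s}"
    using intP[of s] unfolding Z_def integrable_on_def by auto
  define y0 where "y0 = w - R'"
  define x0 where "x0 = P s o\<^sub>L y0"
  define \<Psi> where "\<Psi> t = T s s - (T s t o\<^sub>L That t s)" for t
  define IP where "IP t = (T t s o\<^sub>L P s) o\<^sub>L (\<Psi> t o\<^sub>L w)" for t
  define I2 where "I2 t = (T t s o\<^sub>L Q s) o\<^sub>L (\<Psi> t o\<^sub>L w)" for t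
  have vB: "((\<lambda>\<tau>. T s \<tau> o\<^sub>L Bl \<tau> o\<^sub>L That \<tau> s) has_integral \<Psi> t) {t..s}" if "t \<le> s" for t
    unfolding \<Psi>_def by (rule voc_bwd[OF that])
  have gP: "((\<lambda>\<tau>. T t \<tau> o\<^sub>L P \<tau> o\<^sub>L Bl \<tau> o\<^sub>L Z \<tau>) has_integral IP t) {t..s}" if ts: "t \<le> s" for t
  proof -
    have "((\<lambda>\<tau>. (T t s o\<^sub>L P s) o\<^sub>L ((T s \<tau> o\<^sub>L Bl \<tau> o\<^sub>L That \<tau> s) o\<^sub>L w)) has_integral IP t) {t..s}"
      unfolding IP_def by (intro has_integral_cmp_left has_integral_cmp_right vB ts)
    moreover have "(\<lambda>\<tau>. (T t s o\<^sub>L P s) o\<^sub>L ((T s \<tau> o\<^sub>L Bl \<tau> o\<^sub>L That \<tau> s) o\<^sub>L w))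
        = (\<lambda>\<tau>. T t \<tau> o\<^sub>L P \<tau> o\<^sub>L Bl \<tau> o\<^sub>L Z \<tau>)"
      unfolding Z_def by (rule ext) (simp add: cmp_assoc P_inv_r T_co3)
    ultimately show ?thesis by simp
  qed
  have gQ: "((\<lambda>\<tau>. T t \<tau> o\<^sub>L Q \<tau> o\<^sub>L Bl \<tau> o\<^sub>L Z \<tau>) has_integral I2 t) {t..s}" if ts: "t \<le> s" for t
  proof -
    have "((\<lambda>\<tau>. (T t s o\<^sub>L Q s) o\<^sub>L ((T s \<tau> o\<^sub>L Bl \<tau> o\<^sub>L That \<tau> s) o\<^sub>L w)) has_integral I2 t) {t..s}"
      unfolding I2_def by (intro has_integral_cmp_left has_integral_cmp_right vB ts)
    moreover have "(\<lambda>\<tau>. (T t s o\<^sub>L Q s) o\<^sub>L ((T s \<tau> o\<^sub>L Bl \<tau> o\<^sub>L That \<tau> s) o\<^sub>L w))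
        = (\<lambda>\<tau>. T t \<tau> o\<^sub>L Q \<tau> o\<^sub>L Bl \<tau> o\<^sub>L Z \<tau>)"
      unfolding Z_def by (rule ext) (simp add: cmp_assoc Q_inv_r T_co3)
    ultimately show ?thesis by simp
  qed
  have eq: "\<exists>I1. ((\<lambda>\<tau>. T t \<tau> o\<^sub>L P \<tau> o\<^sub>L Bl \<tau> o\<^sub>L Z \<tau>) has_integral I1) {..t} \<and>
      Z t = (T t s o\<^sub>L y0) + I1 - I2 t" if ts: "t \<le> s" for t
  proof -
    obtain I1 where I1: "((\<lambda>\<tau>. T t \<tau> o\<^sub>L P \<tau> o\<^sub>L Bl \<tau> o\<^sub>L Z \<tau>) has_integral I1) {..t}"
      using intP[OF ts] unfolding Z_def integrable_on_def by auto
    have a: "((\<lambda>\<tau>. T t \<tau> o\<^sub>L P \<tau> o\<^sub>L Bl \<tau> o\<^sub>L Z \<tau>) has_integral (T t s o\<^sub>L R')) {..s}"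
    proof -
      have "((\<lambda>\<tau>. T t s o\<^sub>L (T s \<tau> o\<^sub>L P \<tau> o\<^sub>L Bl \<tau> o\<^sub>L Z \<tau>)) has_integral (T t s o\<^sub>L R')) {..s}"
        by (rule has_integral_cmp_left[OF R])
      moreover have "(\<lambda>\<tau>. T t s o\<^sub>L (T s \<tau> o\<^sub>L P \<tau> o\<^sub>L Bl \<tau> o\<^sub>L Z \<tau>)) = (\<lambda>\<tau>. T t \<tau> o\<^sub>L P \<tau> o\<^sub>L Bl \<tau> o\<^sub>L Z \<tau>)"
        by (rule ext) (simp add: cmp_assoc T_co3)
      ultimately show ?thesis by simp
    qed
    have "((\<lambda>\<tau>. T t \<tau> o\<^sub>L P \<tau> o\<^sub>L Bl \<tau> o\<^sub>L Z \<tau>) has_integral (I1 + IP t)) ({..t} \<union> {t..s})"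
      by (rule has_integral_Un[OF I1 gP[OF ts] negl_pt2[OF ts]])
    moreover have "{..t} \<union> {t..s} = {..s}" using ts by auto
    ultimately have e: "I1 + IP t = (T t s o\<^sub>L R')" using a has_integral_unique by metis
    have z: "Z t = (T t s o\<^sub>L w) - IP t - I2 t"
      unfolding Z_def IP_def I2_def \<Psi>_def
      by (rule blinfun_eqI) (simp add: blinfun.bilinear_simps T_ap')
    show ?thesis
    proof (intro exI conjI)
      show "((\<lambda>\<tau>. T t \<tau> o\<^sub>L P \<tau> o\<^sub>L Bl \<tau> o\<^sub>L Z \<tau>) has_integral I1) {..t}" by (rule I1)
      have "IP t = (T t s o\<^sub>L R') - I1" using e by (simp add: algebra_simps)
      then show "Z t = (T t s o\<^sub>L y0) + I1 - I2 t" unfolding z y0_def by (simp add: cmp_diff2)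
    qed
  qed
  define C0 where "C0 = (M + xx * M + K * norm y0) * \<nu> \<bar>s\<bar> powr \<epsilon>"
  have Tx0: "norm (T t s o\<^sub>L x0) \<le> C0" if ts: "t \<le> s" for t
  proof -
    obtain I1 where I1: "((\<lambda>\<tau>. T t \<tau> o\<^sub>L P \<tau> o\<^sub>L Bl \<tau> o\<^sub>L Z \<tau>) has_integral I1) {..t}"
      and z: "Z t = (T t s o\<^sub>L y0) + I1 - I2 t" using eq[OF ts] by blast
    have ex: "(T t s o\<^sub>L x0) = Z t - (I1 - I2 t) - ((T t s o\<^sub>L Q s) o\<^sub>L y0)"
      unfolding z x0_def by (simp add: cmp_diff cmp_assoc)
    have n1: "norm (Z t - (I1 - I2 t) - ((T t s o\<^sub>L Q s) o\<^sub>L y0)) \<le> norm (Z t - (I1 - I2 t)) + norm ((T t s o\<^sub>L Q s) o\<^sub>L y0)"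
      by (rule norm_triangle_ineq4)
    have n2: "norm (Z t - (I1 - I2 t)) \<le> norm (Z t) + norm (I1 - I2 t)"
      by (rule norm_triangle_ineq4)
    have "norm (T t s o\<^sub>L x0) \<le> norm (Z t) + norm (I1 - I2 t) + norm ((T t s o\<^sub>L Q s) o\<^sub>L y0)"
      using n1 n2 unfolding ex by linarith
    also have "\<dots> \<le> M * wV s t + xx * M * wV s t + K * wV s t * norm y0"
    proof (intro add_mono)
      show "norm (Z t) \<le> M * wV s t" by (rule M[OF ts])
      show "norm (I1 - I2 t) \<le> xx * M * wV s t" by (rule estV(3)[OF M ts I1 gQ[OF ts]])
      show "norm ((T t s o\<^sub>L Q s) o\<^sub>L y0) \<le> K * wV s t * norm y0"
        using order_trans[OF norm_cmp mult_right_mono[OF TQ_le[OF ts]]] by simp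
    qed
    also have "\<dots> = (M + xx * M + K * norm y0) * wV s t" by (simp add: algebra_simps)
    also have "\<dots> \<le> C0" unfolding C0_def
      using wV_le_ss[OF ts] M0 xx_pos by (intro mult_left_mono) auto
    finally show ?thesis .
  qed
  have x0_eq: "x0 = (T s t o\<^sub>L P t) o\<^sub>L (T t s o\<^sub>L x0)" for t
    unfolding x0_def by (simp add: cmp_assoc P_inv_r T_co3 PP_r)
  have x0_le: "norm x0 \<le> K * C0 * h s powr a * (h t powr (-a) * \<mu> \<bar>t\<bar> powr \<epsilon>)" if ts: "t \<le> s" for t
  proof -
    have "norm x0 \<le> norm (T s t o\<^sub>L P t) * norm (T t s o\<^sub>L x0)"
      by (subst x0_eq[of t]) (rule norm_cmp)
    also have "\<dots> \<le> (K * (h s / h t) powr a * \<mu> \<bar>t\<bar> powr \<epsilon>) * C0"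
      using dich_P[OF ts] Tx0[OF ts] by (intro mult_mono) auto
    also have "(h s / h t) powr a = h s powr a * h t powr (-a)"
      by (simp add: powr_divide powr_minus_divide field_simps)
    finally show ?thesis by (simp add: mult_ac)
  qed
  have "norm x0 \<le> 0"
  proof (rule tendsto_le[OF trivial_limit_at_bot_linorder])
    show "((\<lambda>t. K * C0 * h s powr a * (h t powr (-a) * \<mu> \<bar>t\<bar> powr \<epsilon>)) \<longlongrightarrow> 0) at_bot"
      using tendsto_mult_left[OF lim_h, of "K * C0 * h s powr a"] by simp
    show "((\<lambda>t. norm x0) \<longlongrightarrow> norm x0) at_bot" by simp
    show "\<forall>\<^sub>F t in at_bot. norm x0 \<le> K * C0 * h s powr a * (h t powr (-a) * \<mu> \<bar>t\<bar> powr \<epsilon>)"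
      using x0_le eventually_at_bot_linorder by blast
  qed
  then have x00: "x0 = 0" by simp
  have Qy0: "(T t s o\<^sub>L y0) = (T t s o\<^sub>L (Q s o\<^sub>L y0))" for t
  proof -
    have "y0 = (Q s o\<^sub>L y0) + x0"
      unfolding x0_def by (rule blinfun_eqI) (simp add: blinfun.bilinear_simps)
    then have "(T t s o\<^sub>L y0) = (T t s o\<^sub>L (Q s o\<^sub>L y0)) + (T t s o\<^sub>L x0)"
      by (metis cmp_add2)
    then show ?thesis using x00 by simp
  qed
  have eqZ: "eqV s (Q s o\<^sub>L y0) Z"
    unfolding eqV_def
  proof (intro allI impI)
    fix t assume ts: "t \<le> s"
    obtain I1 where I1: "((\<lambda>\<tau>. T t \<tau> o\<^sub>L P \<tau> o\<^sub>L Bl \<tau> o\<^sub>L Z \<tau>) has_integral I1) {..t}"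
      and z: "Z t = (T t s o\<^sub>L y0) + I1 - I2 t" using eq[OF ts] by blast
    show "\<exists>I1 I2. ((\<lambda>\<tau>. T t \<tau> o\<^sub>L P \<tau> o\<^sub>L Bl \<tau> o\<^sub>L Z \<tau>) has_integral I1) {..t} \<and>
        ((\<lambda>\<tau>. T t \<tau> o\<^sub>L Q \<tau> o\<^sub>L Bl \<tau> o\<^sub>L Z \<tau>) has_integral I2) {t..s} \<and>
        Z t = (T t s o\<^sub>L (Q s o\<^sub>L y0)) + I1 - I2"
    proof (intro exI conjI)
      show "((\<lambda>\<tau>. T t \<tau> o\<^sub>L P \<tau> o\<^sub>L Bl \<tau> o\<^sub>L Z \<tau>) has_integral I1) {..t}" by (rule I1)
      show "((\<lambda>\<tau>. T t \<tau> o\<^sub>L Q \<tau> o\<^sub>L Bl \<tau> o\<^sub>L Z \<tau>) has_integral I2 t) {t..s}" by (rule gQ[OF ts])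
      show "Z t = (T t s o\<^sub>L (Q s o\<^sub>L y0)) + I1 - I2 t" using z Qy0[of t] by simp
    qed
  qed
  have bZ: "bndV s Z" unfolding bndV_def using M by blast
  have "Z s = (V s s o\<^sub>L y0)"
    using uniqV[OF eqZ eqV_right[OF V_eqV] bZ bndV_right[OF V_bndV]] by simp
  then have wV: "w = (V s s o\<^sub>L y0)" unfolding Z_def by simp
  have "(V s s o\<^sub>L w) = ((V s s o\<^sub>L V s s) o\<^sub>L y0)" unfolding wV by (simp add: cmp_assoc)
  also have "\<dots> = w" using VV[of s s] wV by simp
  finally show ?thesis .
qed

end


context setting begin

lemma ratio_powr: "x > 0 \<Longrightarrow> y > 0 \<Longrightarrow> z > 0 \<Longrightarrow> (x / z) powr e = (x / y) powr e * (y / z) powr e"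
  for x y z :: real by (simp add: powr_mult[symmetric])

lemma cont_Th_w: "continuous_on UNIV (\<lambda>\<tau>. That \<tau> r o\<^sub>L X)"
  by (intro cont_cmp Th_cont1 continuous_on_const)

lemma G_U: "(U s s o\<^sub>L (That s r o\<^sub>L U r r)) = (That s r o\<^sub>L U r r)"
proof (rule H_U)
  have rw: "(That \<tau> s o\<^sub>L (That s r o\<^sub>L U r r)) = (That \<tau> r o\<^sub>L U r r)" for \<tau> by (rule Th_co3)
  show "\<exists>M. \<forall>\<tau>\<ge>s. norm (That \<tau> s o\<^sub>L (That s r o\<^sub>L U r r)) \<le> M * wU s \<tau>"
  proof -
    define m where "m = max s r"
    obtain B0 where B0: "\<forall>\<tau>\<in>{s..m}. norm (That \<tau> r o\<^sub>L U r r) \<le> B0"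
      using cont_bound_compact[OF cont_Th_w] by blast
    define M1 where "M1 = Kh * (h s / h r) powr a * \<mu> \<bar>r\<bar> powr \<epsilon> / \<mu> \<bar>s\<bar> powr \<epsilon>"
    define M2 where "M2 = max 0 B0 / wU s m"
    have M2: "norm (That \<tau> r o\<^sub>L U r r) \<le> M2 * wU s \<tau>" if "s \<le> \<tau>" "\<tau> \<le> m" for \<tau>
    proof -
      have "norm (That \<tau> r o\<^sub>L U r r) \<le> max 0 B0" using B0 that by force
      also have "\<dots> = M2 * wU s m" unfolding M2_def using wU_pos[of s m] by simp
      also have "\<dots> \<le> M2 * wU s \<tau>" unfolding M2_def using wU_anti[OF that(2), of s] wU_pos[of s m]
        by (intro mult_left_mono) auto
      finally show ?thesis .
    qed
    have M1: "norm (That \<tau> r o\<^sub>L U r r) \<le> M1 * wU s \<tau>" if "r \<le> \<tau>" for \<tau>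
    proof -
      have "(That \<tau> r o\<^sub>L U r r) = U \<tau> r" using U_voc[OF that] by simp
      then have "norm (That \<tau> r o\<^sub>L U r r) \<le> Kh * wU r \<tau>" using U_le[OF that] by simp
      also have "Kh * wU r \<tau> = M1 * wU s \<tau>"
        unfolding M1_def wU_def using ratio_powr[of "h \<tau>" "h s" "h r" a] by (simp add: field_simps)
      finally show ?thesis .
    qed
    have "norm (That \<tau> r o\<^sub>L U r r) \<le> max M1 M2 * wU s \<tau>" if "s \<le> \<tau>" for \<tau>
    proof (cases "\<tau> \<le> m")
      case True
      then show ?thesis using M2[OF that True] wU_pos[of s \<tau>]
        by (meson max.cobounded2 mult_right_mono order_trans less_imp_le)
    next
      case False
      then have "r \<le> \<tau>" unfolding m_def by auto
      then show ?thesis using M1[of \<tau>] wU_pos[of s \<tau>]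
        by (meson max.cobounded1 mult_right_mono order_trans less_imp_le)
    qed
    then show ?thesis unfolding rw by blast
  qed
  show "(\<lambda>\<tau>. T t \<tau> o\<^sub>L Q \<tau> o\<^sub>L Bl \<tau> o\<^sub>L (That \<tau> s o\<^sub>L (That s r o\<^sub>L U r r))) integrable_on {t..}" if st: "s \<le> t" for t
  proof -
    have rI: "((\<lambda>\<tau>. T t \<tau> o\<^sub>L Q \<tau> o\<^sub>L Bl \<tau> o\<^sub>L (That \<tau> r o\<^sub>L U r r)) has_integral (T t r o\<^sub>L I)) {r..}"
      if I: "((\<lambda>\<tau>. T r \<tau> o\<^sub>L Q \<tau> o\<^sub>L Bl \<tau> o\<^sub>L U \<tau> r) has_integral I) {r..}" for I
    proof -
      have h1: "((\<lambda>\<tau>. T t r o\<^sub>L (T r \<tau> o\<^sub>L Q \<tau> o\<^sub>L Bl \<tau> o\<^sub>L U \<tau> r)) has_integral (T t r o\<^sub>L I)) {r..}"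
        by (rule has_integral_cmp_left[OF I])
      have eqf: "(T t r o\<^sub>L (T r \<tau> o\<^sub>L Q \<tau> o\<^sub>L Bl \<tau> o\<^sub>L U \<tau> r)) =
          (T t \<tau> o\<^sub>L Q \<tau> o\<^sub>L Bl \<tau> o\<^sub>L (That \<tau> r o\<^sub>L U r r))" if "\<tau> \<in> {r..}" for \<tau>
      proof -
        have "r \<le> \<tau>" using that by simp
        from U_voc[OF this] show ?thesis by (simp add: cmp_assoc T_co3)
      qed
      show ?thesis by (rule iffD1[OF has_integral_cong[OF eqf] h1])
    qed
    have main: "(\<lambda>\<tau>. T t \<tau> o\<^sub>L Q \<tau> o\<^sub>L Bl \<tau> o\<^sub>L (That \<tau> r o\<^sub>L U r r)) integrable_on {t..}"
    proof (cases "r \<le> t")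
      case True
      obtain I1 I2 where I: "((\<lambda>\<tau>. T t \<tau> o\<^sub>L P \<tau> o\<^sub>L Bl \<tau> o\<^sub>L U \<tau> r) has_integral I1) {r..t}"
        "((\<lambda>\<tau>. T t \<tau> o\<^sub>L Q \<tau> o\<^sub>L Bl \<tau> o\<^sub>L U \<tau> r) has_integral I2) {t..}" "U t r = (T t r o\<^sub>L P r) + I1 - I2"
        using U_eq True by blast
      have eqf: "(T t \<tau> o\<^sub>L Q \<tau> o\<^sub>L Bl \<tau> o\<^sub>L U \<tau> r) =
          (T t \<tau> o\<^sub>L Q \<tau> o\<^sub>L Bl \<tau> o\<^sub>L (That \<tau> r o\<^sub>L U r r))" if "\<tau> \<in> {t..}" for \<tau>
      proof -
        have "r \<le> \<tau>" using that True by simp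
        from U_voc[OF this] show ?thesis by simp
      qed
      have "((\<lambda>\<tau>. T t \<tau> o\<^sub>L Q \<tau> o\<^sub>L Bl \<tau> o\<^sub>L (That \<tau> r o\<^sub>L U r r)) has_integral I2) {t..}"
        by (rule iffD1[OF has_integral_cong[OF eqf] I(2)])
      then show ?thesis by (auto simp: integrable_on_def)
    next
      case False
      then have tr: "t \<le> r" by simp
      obtain I where I: "((\<lambda>\<tau>. T r \<tau> o\<^sub>L Q \<tau> o\<^sub>L Bl \<tau> o\<^sub>L U \<tau> r) has_integral I) {r..}"
        using U_ss[of r] by blast
      have p2: "((\<lambda>\<tau>. T t \<tau> o\<^sub>L Q \<tau> o\<^sub>L Bl \<tau> o\<^sub>L (That \<tau> r o\<^sub>L U r r)) has_integral
          ((T t r o\<^sub>L Q r) o\<^sub>L ((T r r - (T r t o\<^sub>L That t r)) o\<^sub>L U r r))) {t..r}"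
      proof -
        have "((\<lambda>\<tau>. (T t r o\<^sub>L Q r) o\<^sub>L ((T r \<tau> o\<^sub>L Bl \<tau> o\<^sub>L That \<tau> r) o\<^sub>L U r r)) has_integral
          ((T t r o\<^sub>L Q r) o\<^sub>L ((T r r - (T r t o\<^sub>L That t r)) o\<^sub>L U r r))) {t..r}"
          by (intro has_integral_cmp_left has_integral_cmp_right voc_bwd tr)
        moreover have "(\<lambda>\<tau>. (T t r o\<^sub>L Q r) o\<^sub>L ((T r \<tau> o\<^sub>L Bl \<tau> o\<^sub>L That \<tau> r) o\<^sub>L U r r)) =
            (\<lambda>\<tau>. T t \<tau> o\<^sub>L Q \<tau> o\<^sub>L Bl \<tau> o\<^sub>L (That \<tau> r o\<^sub>L U r r))"
          by (rule ext) (simp add: cmp_assoc Q_inv_r T_co3)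
        ultimately show ?thesis by simp
      qed
      have "((\<lambda>\<tau>. T t \<tau> o\<^sub>L Q \<tau> o\<^sub>L Bl \<tau> o\<^sub>L (That \<tau> r o\<^sub>L U r r)) has_integral
          ((T t r o\<^sub>L Q r) o\<^sub>L ((T r r - (T r t o\<^sub>L That t r)) o\<^sub>L U r r)) + (T t r o\<^sub>L I)) ({t..r} \<union> {r..})"
        by (rule has_integral_Un[OF p2 rI[OF I] negl_pt[OF tr]])
      moreover have "{t..r} \<union> {r..} = {t..}" using tr by auto
      ultimately show ?thesis by (auto simp: integrable_on_def)
    qed
    then show ?thesis unfolding rw .
  qed
qed

lemma G_V: "(V s s o\<^sub>L (That s r o\<^sub>L V r r)) = (That s r o\<^sub>L V r r)"
proof (rule H_V)
  have rw: "(That \<tau> s o\<^sub>L (That s r o\<^sub>L V r r)) = (That \<tau> r o\<^sub>L V r r)" for \<tau> by (rule Th_co3)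
  show "\<exists>M. \<forall>\<tau>\<le>s. norm (That \<tau> s o\<^sub>L (That s r o\<^sub>L V r r)) \<le> M * wV s \<tau>"
  proof -
    define m where "m = min s r"
    obtain B0 where B0: "\<forall>\<tau>\<in>{m..s}. norm (That \<tau> r o\<^sub>L V r r) \<le> B0"
      using cont_bound_compact[OF cont_Th_w] by blast
    define M1 where "M1 = Kh * (k r / k s) powr (-b) * \<nu> \<bar>r\<bar> powr \<epsilon> / \<nu> \<bar>s\<bar> powr \<epsilon>"
    define M2 where "M2 = max 0 B0 / wV s m"
    have M2: "norm (That \<tau> r o\<^sub>L V r r) \<le> M2 * wV s \<tau>" if "m \<le> \<tau>" "\<tau> \<le> s" for \<tau>
    proof -
      have "norm (That \<tau> r o\<^sub>L V r r) \<le> max 0 B0" using B0 that by force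
      also have "\<dots> = M2 * wV s m" unfolding M2_def using wV_pos[of s m] by simp
      also have "\<dots> \<le> M2 * wV s \<tau>" unfolding M2_def using wV_mono[OF that(1), of s] wV_pos[of s m]
        by (intro mult_left_mono) auto
      finally show ?thesis .
    qed
    have M1: "norm (That \<tau> r o\<^sub>L V r r) \<le> M1 * wV s \<tau>" if "\<tau> \<le> r" for \<tau>
    proof -
      have "(That \<tau> r o\<^sub>L V r r) = V \<tau> r" using V_voc[OF that] by simp
      then have "norm (That \<tau> r o\<^sub>L V r r) \<le> Kh * wV r \<tau>" using V_le[OF that] by simp
      also have "Kh * wV r \<tau> = M1 * wV s \<tau>"
        unfolding M1_def wV_def using ratio_powr[of "k r" "k s" "k \<tau>" "-b"] by (simp add: field_simps)
      finally show ?thesis .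
    qed
    have "norm (That \<tau> r o\<^sub>L V r r) \<le> max M1 M2 * wV s \<tau>" if "\<tau> \<le> s" for \<tau>
    proof (cases "m \<le> \<tau>")
      case True
      then show ?thesis using M2[OF True that] wV_pos[of s \<tau>]
        by (meson max.cobounded2 mult_right_mono order_trans less_imp_le)
    next
      case False
      then have "\<tau> \<le> r" unfolding m_def by auto
      then show ?thesis using M1[of \<tau>] wV_pos[of s \<tau>]
        by (meson max.cobounded1 mult_right_mono order_trans less_imp_le)
    qed
    then show ?thesis unfolding rw by blast
  qed
  show "(\<lambda>\<tau>. T t \<tau> o\<^sub>L P \<tau> o\<^sub>L Bl \<tau> o\<^sub>L (That \<tau> s o\<^sub>L (That s r o\<^sub>L V r r))) integrable_on {..t}" if ts: "t \<le> s" for t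
  proof -
    have rI: "((\<lambda>\<tau>. T t \<tau> o\<^sub>L P \<tau> o\<^sub>L Bl \<tau> o\<^sub>L (That \<tau> r o\<^sub>L V r r)) has_integral (T t r o\<^sub>L I)) {..r}"
      if I: "((\<lambda>\<tau>. T r \<tau> o\<^sub>L P \<tau> o\<^sub>L Bl \<tau> o\<^sub>L V \<tau> r) has_integral I) {..r}" for I
    proof -
      have h1: "((\<lambda>\<tau>. T t r o\<^sub>L (T r \<tau> o\<^sub>L P \<tau> o\<^sub>L Bl \<tau> o\<^sub>L V \<tau> r)) has_integral (T t r o\<^sub>L I)) {..r}"
        by (rule has_integral_cmp_left[OF I])
      have eqf: "(T t r o\<^sub>L (T r \<tau> o\<^sub>L P \<tau> o\<^sub>L Bl \<tau> o\<^sub>L V \<tau> r)) =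
          (T t \<tau> o\<^sub>L P \<tau> o\<^sub>L Bl \<tau> o\<^sub>L (That \<tau> r o\<^sub>L V r r))" if "\<tau> \<in> {..r}" for \<tau>
      proof -
        have "\<tau> \<le> r" using that by simp
        from V_voc[OF this] show ?thesis by (simp add: cmp_assoc T_co3)
      qed
      show ?thesis by (rule iffD1[OF has_integral_cong[OF eqf] h1])
    qed
    have main: "(\<lambda>\<tau>. T t \<tau> o\<^sub>L P \<tau> o\<^sub>L Bl \<tau> o\<^sub>L (That \<tau> r o\<^sub>L V r r)) integrable_on {..t}"
    proof (cases "t \<le> r")
      case True
      obtain I1 I2 where I: "((\<lambda>\<tau>. T t \<tau> o\<^sub>L P \<tau> o\<^sub>L Bl \<tau> o\<^sub>L V \<tau> r) has_integral I1) {..t}"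
        "((\<lambda>\<tau>. T t \<tau> o\<^sub>L Q \<tau> o\<^sub>L Bl \<tau> o\<^sub>L V \<tau> r) has_integral I2) {t..r}" "V t r = (T t r o\<^sub>L Q r) + I1 - I2"
        using V_eq True by blast
      have eqf: "(T t \<tau> o\<^sub>L P \<tau> o\<^sub>L Bl \<tau> o\<^sub>L V \<tau> r) =
          (T t \<tau> o\<^sub>L P \<tau> o\<^sub>L Bl \<tau> o\<^sub>L (That \<tau> r o\<^sub>L V r r))" if "\<tau> \<in> {..t}" for \<tau>
      proof -
        have "\<tau> \<le> r" using that True by simp
        from V_voc[OF this] show ?thesis by simp
      qed
      have "((\<lambda>\<tau>. T t \<tau> o\<^sub>L P \<tau> o\<^sub>L Bl \<tau> o\<^sub>L (That \<tau> r o\<^sub>L V r r)) has_integral I1) {..t}"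
        by (rule iffD1[OF has_integral_cong[OF eqf] I(1)])
      then show ?thesis by (auto simp: integrable_on_def)
    next
      case False
      then have rt: "r \<le> t" by simp
      obtain I where I: "((\<lambda>\<tau>. T r \<tau> o\<^sub>L P \<tau> o\<^sub>L Bl \<tau> o\<^sub>L V \<tau> r) has_integral I) {..r}"
        using V_ss[of r] by blast
      have p2: "((\<lambda>\<tau>. T t \<tau> o\<^sub>L P \<tau> o\<^sub>L Bl \<tau> o\<^sub>L (That \<tau> r o\<^sub>L V r r)) has_integral
          ((T t r o\<^sub>L P r) o\<^sub>L (((T r t o\<^sub>L That t r) - T r r) o\<^sub>L V r r))) {r..t}"
      proof -
        have "((\<lambda>\<tau>. (T t r o\<^sub>L P r) o\<^sub>L ((T r \<tau> o\<^sub>L Bl \<tau> o\<^sub>L That \<tau> r) o\<^sub>L V r r)) has_integral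
          ((T t r o\<^sub>L P r) o\<^sub>L (((T r t o\<^sub>L That t r) - T r r) o\<^sub>L V r r))) {r..t}"
          by (intro has_integral_cmp_left has_integral_cmp_right voc_fwd rt)
        moreover have "(\<lambda>\<tau>. (T t r o\<^sub>L P r) o\<^sub>L ((T r \<tau> o\<^sub>L Bl \<tau> o\<^sub>L That \<tau> r) o\<^sub>L V r r)) =
            (\<lambda>\<tau>. T t \<tau> o\<^sub>L P \<tau> o\<^sub>L Bl \<tau> o\<^sub>L (That \<tau> r o\<^sub>L V r r))"
          by (rule ext) (simp add: cmp_assoc P_inv_r T_co3)
        ultimately show ?thesis by simp
      qed
      have "((\<lambda>\<tau>. T t \<tau> o\<^sub>L P \<tau> o\<^sub>L Bl \<tau> o\<^sub>L (That \<tau> r o\<^sub>L V r r)) has_integral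
          (T t r o\<^sub>L I) + ((T t r o\<^sub>L P r) o\<^sub>L (((T r t o\<^sub>L That t r) - T r r) o\<^sub>L V r r))) ({..r} \<union> {r..t})"
        by (rule has_integral_Un[OF rI[OF I] p2 negl_pt2[OF rt]])
      moreover have "{..r} \<union> {r..t} = {..t}" using rt by auto
      ultimately show ?thesis by (auto simp: integrable_on_def)
    qed
    then show ?thesis unfolding rw .
  qed
qed

end


lemma arith_final:
  fixes n q K m m' :: real
  assumes "n \<le> K * m + q + n * q" "0 \<le> q" "2 * q < 1" "q \<le> K" "1 \<le> m'" "0 \<le> n" "0 \<le> K"
  shows "n \<le> K / (1 - 2 * q) * (m + m')"
proof -
  have "n * (1 - 2 * q) \<le> n * (1 - q)" using assms by (intro mult_left_mono) auto
  also have "\<dots> \<le> K * m + q" using assms(1) by (simp add: algebra_simps)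
  also have "\<dots> \<le> K * m + K * m'" using assms mult_left_mono[of 1 m' K] by auto
  finally have "n * (1 - 2 * q) \<le> K * (m + m')" by (simp add: algebra_simps)
  then show ?thesis using assms(3) by (simp add: field_simps)
qed

context setting begin

definition qq where "qq = K * Kh * c * N"

lemma qq_eq: "qq = Kh * xx" unfolding qq_def xx_def by (simp add: mult_ac)
lemma qq_nn: "0 \<le> qq" using qq_eq Kh_pos xx_pos by simp
lemma qq_small: "2 * qq < 1"
proof -
  have "2 * K * xx < 1 - xx" using xx_small by (simp add: algebra_simps)
  then show ?thesis unfolding qq_eq Kh_def using xx_lt1 by (simp add: field_simps)
qed
lemma qq_le_K: "1/2 \<le> K \<Longrightarrow> qq \<le> K"
proof -
  assume K2: "1/2 \<le> K"
  have "xx * 2 \<le> xx * (2 * K + 1)" using xx_pos K2 by (intro mult_left_mono) auto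
  then have "xx \<le> 1 - xx" using xx_small by simp
  then have "xx / (1 - xx) \<le> 1" using xx_lt1 by simp
  then have "K * (xx / (1 - xx)) \<le> K * 1" by (intro mult_left_mono) auto
  then show ?thesis unfolding qq_eq Kh_def by simp
qed

lemma mu0: "\<mu> 0 = 1" "\<nu> 0 = 1" using gr_mu gr_nu unfolding growth_rate_def by auto

lemma K_half:
  assumes "\<exists>v::'x. v \<noteq> 0"
  shows "1/2 \<le> K"
proof -
  obtain v :: 'x where v: "v \<noteq> 0" using assms by blast
  have "norm v = norm (blinfun_apply id_blinfun v)" by simp
  also have "\<dots> \<le> norm (id_blinfun :: 'x \<Rightarrow>\<^sub>L 'x) * norm v" by (rule norm_blinfun)
  finally have n1: "1 \<le> norm (id_blinfun :: 'x \<Rightarrow>\<^sub>L 'x)" using v by simp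
  have "norm (P 0) \<le> K" using dich_P[of 0 0] mu0 by simp
  moreover have "norm (Q 0) \<le> K" using dich_Q[of 0 0] mu0 by simp
  moreover have "norm (id_blinfun :: 'x \<Rightarrow>\<^sub>L 'x) \<le> norm (P 0) + norm (Q 0)"
    using norm_triangle_ineq[of "P 0" "Q 0"] by simp
  ultimately show ?thesis using n1 by linarith
qed

lemma diag_bounds:
  "norm ((U t t + V t t) - id_blinfun) \<le> qq"
  "norm (U t t) \<le> K * \<mu> \<bar>t\<bar> powr \<epsilon> + qq"
  "norm (V t t) \<le> K * \<nu> \<bar>t\<bar> powr \<epsilon> + qq"
proof -
  obtain I1u I2u where Iu: "((\<lambda>\<tau>. T t \<tau> o\<^sub>L P \<tau> o\<^sub>L Bl \<tau> o\<^sub>L U \<tau> t) has_integral I1u) {t..t}"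
    "((\<lambda>\<tau>. T t \<tau> o\<^sub>L Q \<tau> o\<^sub>L Bl \<tau> o\<^sub>L U \<tau> t) has_integral I2u) {t..}" "U t t = (T t t o\<^sub>L P t) + I1u - I2u"
    using U_eq[of t t] by blast
  obtain I1v I2v where Iv: "((\<lambda>\<tau>. T t \<tau> o\<^sub>L P \<tau> o\<^sub>L Bl \<tau> o\<^sub>L V \<tau> t) has_integral I1v) {..t}"
    "((\<lambda>\<tau>. T t \<tau> o\<^sub>L Q \<tau> o\<^sub>L Bl \<tau> o\<^sub>L V \<tau> t) has_integral I2v) {t..t}" "V t t = (T t t o\<^sub>L Q t) + I1v - I2v"
    using V_eq[of t t] by blast
  have Ue: "U t t = P t - I2u" using Iu(3) I_refl0[OF Iu(1)] by simp
  have Ve: "V t t = Q t + I1v" using Iv(3) I_refl0[OF Iv(2)] by simp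
  have nu: "norm I2u \<le> K * c * Kh * \<mu> \<bar>t\<bar> powr \<epsilon> * J2 t"
    using estU(2)[of t "\<lambda>\<tau>. U \<tau> t" Kh t, OF U_le _ Iu(1) Iu(2)] wU_ss by simp
  have nv: "norm I1v \<le> K * c * Kh * \<nu> \<bar>t\<bar> powr \<epsilon> * J1 t"
    using estV(1)[of t "\<lambda>\<tau>. V \<tau> t" Kh t, OF V_le _ Iv(1) Iv(2)] wV_ss by simp
  have C0: "0 \<le> K * c * Kh" using Kh_pos by simp
  have JN: "\<nu> \<bar>t\<bar> powr \<epsilon> * J1 t + \<mu> \<bar>t\<bar> powr \<epsilon> * J2 t \<le> N" by (rule J_N)
  have j1: "0 \<le> \<nu> \<bar>t\<bar> powr \<epsilon> * J1 t" "0 \<le> \<mu> \<bar>t\<bar> powr \<epsilon> * J2 t" using J_nn by auto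
  have "(U t t + V t t) - id_blinfun = I1v - I2u" unfolding Ue Ve by simp
  then have "norm ((U t t + V t t) - id_blinfun) \<le> norm I1v + norm I2u" by (simp add: norm_triangle_ineq4)
  also have "\<dots> \<le> K * c * Kh * (\<nu> \<bar>t\<bar> powr \<epsilon> * J1 t + \<mu> \<bar>t\<bar> powr \<epsilon> * J2 t)"
    using nu nv by (simp add: algebra_simps)
  also have "\<dots> \<le> K * c * Kh * N" using C0 JN by (intro mult_left_mono)
  also have "\<dots> = qq" unfolding qq_def by (simp add: mult_ac)
  finally show "norm ((U t t + V t t) - id_blinfun) \<le> qq" .
  have "norm I2u \<le> qq"
  proof -
    have "norm I2u \<le> K * c * Kh * (\<mu> \<bar>t\<bar> powr \<epsilon> * J2 t)" using nu by (simp add: mult.assoc)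
    also have "\<dots> \<le> K * c * Kh * N" using C0 JN j1 by (intro mult_left_mono) auto
    also have "\<dots> = qq" unfolding qq_def by (simp add: mult_ac)
    finally show ?thesis .
  qed
  moreover have "norm (P t) \<le> K * \<mu> \<bar>t\<bar> powr \<epsilon>" using dich_P[of t t] by simp
  ultimately show "norm (U t t) \<le> K * \<mu> \<bar>t\<bar> powr \<epsilon> + qq"
    unfolding Ue using norm_triangle_ineq4[of "P t" I2u] by linarith
  have "norm I1v \<le> qq"
  proof -
    have "norm I1v \<le> K * c * Kh * (\<nu> \<bar>t\<bar> powr \<epsilon> * J1 t)" using nv by (simp add: mult.assoc)
    also have "\<dots> \<le> K * c * Kh * N" using C0 JN j1 by (intro mult_left_mono) auto
    also have "\<dots> = qq" unfolding qq_def by (simp add: mult_ac)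
    finally show ?thesis .
  qed
  moreover have "norm (Q t) \<le> K * \<nu> \<bar>t\<bar> powr \<epsilon>" using dich_Q[of t t] by simp
  ultimately show "norm (V t t) \<le> K * \<nu> \<bar>t\<bar> powr \<epsilon> + qq"
    unfolding Ve using norm_triangle_ineq[of "Q t" I1v] by linarith
qed

end


context setting begin

lemma cmp_zero: "(X o\<^sub>L 0) = 0" by simp

lemma Kh_alt: "K / (1 - K * c * N) = Kh" unfolding Kh_def xx_def by simp

lemma main_result:
  "\<exists>Sinv. (U 0 0 + V 0 0) o\<^sub>L Sinv = id_blinfun \<and> Sinv o\<^sub>L (U 0 0 + V 0 0) = id_blinfun \<and>
     (\<forall>t. (That t 0 o\<^sub>L (U 0 0 + V 0 0) o\<^sub>L P 0 o\<^sub>L Sinv o\<^sub>L That 0 t) o\<^sub>L (That t 0 o\<^sub>L (U 0 0 + V 0 0) o\<^sub>L P 0 o\<^sub>L Sinv o\<^sub>L That 0 t) = (That t 0 o\<^sub>L (U 0 0 + V 0 0) o\<^sub>L P 0 o\<^sub>L Sinv o\<^sub>L That 0 t) \<and>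
          (That t 0 o\<^sub>L (U 0 0 + V 0 0) o\<^sub>L (id_blinfun - P 0) o\<^sub>L Sinv o\<^sub>L That 0 t) o\<^sub>L (That t 0 o\<^sub>L (U 0 0 + V 0 0) o\<^sub>L (id_blinfun - P 0) o\<^sub>L Sinv o\<^sub>L That 0 t) = (That t 0 o\<^sub>L (U 0 0 + V 0 0) o\<^sub>L (id_blinfun - P 0) o\<^sub>L Sinv o\<^sub>L That 0 t) \<and>
          (That t 0 o\<^sub>L (U 0 0 + V 0 0) o\<^sub>L P 0 o\<^sub>L Sinv o\<^sub>L That 0 t) + (That t 0 o\<^sub>L (U 0 0 + V 0 0) o\<^sub>L (id_blinfun - P 0) o\<^sub>L Sinv o\<^sub>L That 0 t) = id_blinfun) \<and>
     (\<forall>t s. (That t 0 o\<^sub>L (U 0 0 + V 0 0) o\<^sub>L P 0 o\<^sub>L Sinv o\<^sub>L That 0 t) o\<^sub>L That t s = That t s o\<^sub>L (That s 0 o\<^sub>L (U 0 0 + V 0 0) o\<^sub>L P 0 o\<^sub>L Sinv o\<^sub>L That 0 s)) \<and>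
     (\<forall>t s. t \<ge> s \<longrightarrow>
        norm (That t s o\<^sub>L (That s 0 o\<^sub>L (U 0 0 + V 0 0) o\<^sub>L P 0 o\<^sub>L Sinv o\<^sub>L That 0 s)) \<le> K / (1 - K * c * N) * (h t / h s) powr a * \<mu> \<bar>s\<bar> powr \<epsilon> * norm (That s 0 o\<^sub>L (U 0 0 + V 0 0) o\<^sub>L P 0 o\<^sub>L Sinv o\<^sub>L That 0 s)) \<and>
     (\<forall>t s. t \<le> s \<longrightarrow>
        norm (That t s o\<^sub>L (That s 0 o\<^sub>L (U 0 0 + V 0 0) o\<^sub>L (id_blinfun - P 0) o\<^sub>L Sinv o\<^sub>L That 0 s)) \<le> K / (1 - K * c * N) * (k s / k t) powr (-b) * \<nu> \<bar>s\<bar> powr \<epsilon> * norm (That s 0 o\<^sub>L (U 0 0 + V 0 0) o\<^sub>L (id_blinfun - P 0) o\<^sub>L Sinv o\<^sub>L That 0 s)) \<and>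
     (\<forall>t. norm (That t 0 o\<^sub>L (U 0 0 + V 0 0) o\<^sub>L P 0 o\<^sub>L Sinv o\<^sub>L That 0 t) \<le> K / (1 - 2 * K * (K / (1 - K * c * N)) * c * N) * (\<mu> \<bar>t\<bar> powr \<epsilon> + \<nu> \<bar>t\<bar> powr \<epsilon>)) \<and>
     (\<forall>t. norm (That t 0 o\<^sub>L (U 0 0 + V 0 0) o\<^sub>L (id_blinfun - P 0) o\<^sub>L Sinv o\<^sub>L That 0 t) \<le> K / (1 - 2 * K * (K / (1 - K * c * N)) * c * N) * (\<mu> \<bar>t\<bar> powr \<epsilon> + \<nu> \<bar>t\<bar> powr \<epsilon>))"
proof -
  define S0 where "S0 = U 0 0 + V 0 0"
  have nE: "norm (id_blinfun - S0) < 1"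
  proof -
    have "norm (id_blinfun - S0) = norm (S0 - id_blinfun)" by (rule norm_minus_commute)
    also have "\<dots> \<le> qq" unfolding S0_def by (rule diag_bounds(1))
    also have "\<dots> < 1" using qq_small qq_nn by simp
    finally show ?thesis .
  qed
  obtain Sinv where Si: "((id_blinfun - (id_blinfun - S0)) o\<^sub>L Sinv) = id_blinfun"
      "(Sinv o\<^sub>L (id_blinfun - (id_blinfun - S0))) = id_blinfun"
    using neumann[OF nE] by blast
  have Si1: "(S0 o\<^sub>L Sinv) = id_blinfun" and Si2: "(Sinv o\<^sub>L S0) = id_blinfun" using Si by simp_all
  have U0P: "(U 0 0 o\<^sub>L P 0) = U 0 0" by (rule U_P) simp
  have U0Q: "(U 0 0 o\<^sub>L Q 0) = 0" by (rule U_Q) simp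
  have V0Q: "(V 0 0 o\<^sub>L Q 0) = V 0 0" by (rule V_Q) simp
  have V0P: "(V 0 0 o\<^sub>L P 0) = 0" by (rule V_P) simp
  have SP: "(S0 o\<^sub>L P 0) = U 0 0" unfolding S0_def cmp_add1 U0P V0P by simp
  have SQ: "(S0 o\<^sub>L Q 0) = V 0 0" unfolding S0_def cmp_add1 U0Q V0Q by simp
  have SiU: "(Sinv o\<^sub>L U 0 0) = P 0" unfolding SP[symmetric] by (simp add: Si2 flip: cmp_assoc)
  have SiV: "(Sinv o\<^sub>L V 0 0) = Q 0" unfolding SQ[symmetric] by (simp add: Si2 flip: cmp_assoc)
  have r_SP: "(S0 o\<^sub>L (P 0 o\<^sub>L X)) = (U 0 0 o\<^sub>L X)" for X by (simp add: SP flip: cmp_assoc)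
  have r_SQ: "(S0 o\<^sub>L (Q 0 o\<^sub>L X)) = (V 0 0 o\<^sub>L X)" for X by (simp add: SQ flip: cmp_assoc)
  have r_SiU: "(Sinv o\<^sub>L (U 0 0 o\<^sub>L X)) = (P 0 o\<^sub>L X)" for X by (simp add: SiU flip: cmp_assoc)
  have r_SiV: "(Sinv o\<^sub>L (V 0 0 o\<^sub>L X)) = (Q 0 o\<^sub>L X)" for X by (simp add: SiV flip: cmp_assoc)
  have r_U0P: "(U 0 0 o\<^sub>L (P 0 o\<^sub>L X)) = (U 0 0 o\<^sub>L X)" for X by (simp add: U0P flip: cmp_assoc)
  have r_U0Q: "(U 0 0 o\<^sub>L (Q 0 o\<^sub>L X)) = 0" for X by (simp add: U0Q flip: cmp_assoc)
  have r_V0Q: "(V 0 0 o\<^sub>L (Q 0 o\<^sub>L X)) = (V 0 0 o\<^sub>L X)" for X by (simp add: V0Q flip: cmp_assoc)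
  have r_V0P: "(V 0 0 o\<^sub>L (P 0 o\<^sub>L X)) = 0" for X by (simp add: V0P flip: cmp_assoc)
  have r_Th: "(That s t o\<^sub>L (That t s o\<^sub>L X)) = X" for s t X by (simp add: Th_co3)
  define Ph where "Ph t = (That t 0 o\<^sub>L (U 0 0 o\<^sub>L (Sinv o\<^sub>L That 0 t)))" for t
  define Qh where "Qh t = (That t 0 o\<^sub>L (V 0 0 o\<^sub>L (Sinv o\<^sub>L That 0 t)))" for t
  have Ph_eq: "(That t 0 o\<^sub>L (U 0 0 + V 0 0) o\<^sub>L P 0 o\<^sub>L Sinv o\<^sub>L That 0 t) = Ph t" for t
    unfolding Ph_def S0_def[symmetric] by (simp add: cmp_assoc r_SP)
  have Qh_eq: "(That t 0 o\<^sub>L (U 0 0 + V 0 0) o\<^sub>L (id_blinfun - P 0) o\<^sub>L Sinv o\<^sub>L That 0 t) = Qh t" for t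
    unfolding Qh_def S0_def[symmetric] by (simp add: cmp_assoc r_SQ)
  have sum: "Ph t + Qh t = id_blinfun" for t
  proof -
    have "Ph t + Qh t = (That t 0 o\<^sub>L ((U 0 0 + V 0 0) o\<^sub>L (Sinv o\<^sub>L That 0 t)))"
      unfolding Ph_def Qh_def by (simp add: cmp_add1 cmp_add2)
    also have "\<dots> = (That t 0 o\<^sub>L ((S0 o\<^sub>L Sinv) o\<^sub>L That 0 t))" unfolding S0_def by (simp add: cmp_assoc)
    also have "\<dots> = id_blinfun" using Si1 by (simp add: Th_co)
    finally show ?thesis .
  qed
  have PP: "(Ph t o\<^sub>L Ph t) = Ph t" for t
    unfolding Ph_def by (simp add: cmp_assoc r_Th r_SiU r_U0P)
  have QQ: "(Qh t o\<^sub>L Qh t) = Qh t" for t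
    unfolding Qh_def by (simp add: cmp_assoc r_Th r_SiV r_V0Q)
  have Pinv: "(Ph t o\<^sub>L That t s) = (That t s o\<^sub>L Ph s)" for t s
    unfolding Ph_def by (simp add: cmp_assoc Th_co3 Th_co)
  have uPh: "(U s s o\<^sub>L Ph s) = Ph s" for s
  proof -
    have "(U s s o\<^sub>L Ph s) = ((U s s o\<^sub>L (That s 0 o\<^sub>L U 0 0)) o\<^sub>L (Sinv o\<^sub>L That 0 s))"
      unfolding Ph_def by (simp add: cmp_assoc)
    also have "\<dots> = Ph s" unfolding G_U Ph_def by (simp add: cmp_assoc)
    finally show ?thesis .
  qed
  have vQh: "(V s s o\<^sub>L Qh s) = Qh s" for s
  proof -
    have "(V s s o\<^sub>L Qh s) = ((V s s o\<^sub>L (That s 0 o\<^sub>L V 0 0)) o\<^sub>L (Sinv o\<^sub>L That 0 s))"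
      unfolding Qh_def by (simp add: cmp_assoc)
    also have "\<dots> = Qh s" unfolding G_V Qh_def by (simp add: cmp_assoc)
    finally show ?thesis .
  qed
  have b1: "norm (That t s o\<^sub>L Ph s) \<le> Kh * (h t / h s) powr a * \<mu> \<bar>s\<bar> powr \<epsilon> * norm (Ph s)" if st: "s \<le> t" for t s
  proof -
    have "(That t s o\<^sub>L Ph s) = (U t s o\<^sub>L Ph s)"
      using uPh[of s] U_voc[OF st] by (metis cmp_assoc)
    then have "norm (That t s o\<^sub>L Ph s) \<le> norm (U t s) * norm (Ph s)" using norm_cmp by metis
    also have "\<dots> \<le> Kh * wU s t * norm (Ph s)" using U_le[OF st] by (intro mult_right_mono) auto
    finally show ?thesis unfolding wU_def by (simp add: mult_ac)
  qed
  have b2: "norm (That t s o\<^sub>L Qh s) \<le> Kh * (k s / k t) powr (-b) * \<nu> \<bar>s\<bar> powr \<epsilon> * norm (Qh s)" if ts: "t \<le> s" for t s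
  proof -
    have "(That t s o\<^sub>L Qh s) = (V t s o\<^sub>L Qh s)"
      using vQh[of s] V_voc[OF ts] by (metis cmp_assoc)
    then have "norm (That t s o\<^sub>L Qh s) \<le> norm (V t s) * norm (Qh s)" using norm_cmp by metis
    also have "\<dots> \<le> Kh * wV s t * norm (Qh s)" using V_le[OF ts] by (intro mult_right_mono) auto
    finally show ?thesis unfolding wV_def by (simp add: mult_ac)
  qed
  have PhS: "(Ph t o\<^sub>L (U t t + V t t)) = U t t" for t
  proof -
    define W where "W = (That 0 t o\<^sub>L U t t)"
    define W' where "W' = (That 0 t o\<^sub>L V t t)"
    have g1: "(U 0 0 o\<^sub>L W) = W" unfolding W_def by (rule G_U)
    have g2: "(V 0 0 o\<^sub>L W') = W'" unfolding W'_def by (rule G_V)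
    have "(Ph t o\<^sub>L U t t) = (That t 0 o\<^sub>L (U 0 0 o\<^sub>L (Sinv o\<^sub>L W)))" unfolding Ph_def W_def by (simp add: cmp_assoc)
    also have "\<dots> = (That t 0 o\<^sub>L (U 0 0 o\<^sub>L (Sinv o\<^sub>L (U 0 0 o\<^sub>L W))))" by (simp only: g1)
    also have "\<dots> = (That t 0 o\<^sub>L (U 0 0 o\<^sub>L (P 0 o\<^sub>L W)))" by (simp only: r_SiU)
    also have "\<dots> = (That t 0 o\<^sub>L (U 0 0 o\<^sub>L W))" by (simp only: r_U0P)
    also have "\<dots> = (That t 0 o\<^sub>L W)" by (simp only: g1)
    also have "\<dots> = U t t" unfolding W_def by (rule r_Th)
    finally have a: "(Ph t o\<^sub>L U t t) = U t t" .
    have "(Ph t o\<^sub>L V t t) = (That t 0 o\<^sub>L (U 0 0 o\<^sub>L (Sinv o\<^sub>L W')))" unfolding Ph_def W'_def by (simp add: cmp_assoc)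
    also have "\<dots> = (That t 0 o\<^sub>L (U 0 0 o\<^sub>L (Sinv o\<^sub>L (V 0 0 o\<^sub>L W'))))" by (simp only: g2)
    also have "\<dots> = (That t 0 o\<^sub>L (U 0 0 o\<^sub>L (Q 0 o\<^sub>L W')))" by (simp only: r_SiV)
    also have "\<dots> = 0" by (simp only: r_U0Q cmp_zero)
    finally have b: "(Ph t o\<^sub>L V t t) = 0" .
    show ?thesis using a b by (simp add: cmp_add2)
  qed
  have QhS: "(Qh t o\<^sub>L (U t t + V t t)) = V t t" for t
  proof -
    have "Qh t = id_blinfun - Ph t" using sum[of t] by (simp add: algebra_simps)
    then show ?thesis using PhS[of t] by (simp add: cmp_diff1)
  qed
  have nP: "norm (Ph t) \<le> K * \<mu> \<bar>t\<bar> powr \<epsilon> + qq + norm (Ph t) * qq" for t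
  proof -
    have "Ph t = U t t - (Ph t o\<^sub>L ((U t t + V t t) - id_blinfun))"
      using PhS[of t] by (simp add: cmp_diff2)
    then have "norm (Ph t) \<le> norm (U t t) + norm (Ph t o\<^sub>L ((U t t + V t t) - id_blinfun))"
      by (metis norm_triangle_ineq4)
    also have "\<dots> \<le> (K * \<mu> \<bar>t\<bar> powr \<epsilon> + qq) + norm (Ph t) * qq"
    proof (rule add_mono)
      show "norm (U t t) \<le> K * \<mu> \<bar>t\<bar> powr \<epsilon> + qq" by (rule diag_bounds(2))
      show "norm (Ph t o\<^sub>L ((U t t + V t t) - id_blinfun)) \<le> norm (Ph t) * qq"
        using order_trans[OF norm_cmp mult_left_mono[OF diag_bounds(1)]] by simp
    qed
    finally show ?thesis by simp
  qed
  have nQ: "norm (Qh t) \<le> K * \<nu> \<bar>t\<bar> powr \<epsilon> + qq + norm (Qh t) * qq" for t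
  proof -
    have "Qh t = V t t - (Qh t o\<^sub>L ((U t t + V t t) - id_blinfun))"
      using QhS[of t] by (simp add: cmp_diff2)
    then have "norm (Qh t) \<le> norm (V t t) + norm (Qh t o\<^sub>L ((U t t + V t t) - id_blinfun))"
      by (metis norm_triangle_ineq4)
    also have "\<dots> \<le> (K * \<nu> \<bar>t\<bar> powr \<epsilon> + qq) + norm (Qh t) * qq"
    proof (rule add_mono)
      show "norm (V t t) \<le> K * \<nu> \<bar>t\<bar> powr \<epsilon> + qq" by (rule diag_bounds(3))
      show "norm (Qh t o\<^sub>L ((U t t + V t t) - id_blinfun)) \<le> norm (Qh t) * qq"
        using order_trans[OF norm_cmp mult_left_mono[OF diag_bounds(1)]] by simp
    qed
    finally show ?thesis by simp
  qed
  have den: "1 - 2 * K * Kh * c * N = 1 - 2 * qq"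
    unfolding qq_def by (simp add: mult.assoc)
  have fin: "norm (Ph t) \<le> K / (1 - 2 * qq) * (\<mu> \<bar>t\<bar> powr \<epsilon> + \<nu> \<bar>t\<bar> powr \<epsilon>) \<and>
      norm (Qh t) \<le> K / (1 - 2 * qq) * (\<mu> \<bar>t\<bar> powr \<epsilon> + \<nu> \<bar>t\<bar> powr \<epsilon>)" for t
  proof (cases "\<exists>v::'x. v \<noteq> 0")
    case True
    have qK: "qq \<le> K" by (rule qq_le_K[OF K_half[OF True]])
    have "norm (Ph t) \<le> K / (1 - 2 * qq) * (\<mu> \<bar>t\<bar> powr \<epsilon> + \<nu> \<bar>t\<bar> powr \<epsilon>)"
      by (rule arith_final[OF nP qq_nn qq_small qK ge1(2)]) auto
    moreover have "norm (Qh t) \<le> K / (1 - 2 * qq) * (\<nu> \<bar>t\<bar> powr \<epsilon> + \<mu> \<bar>t\<bar> powr \<epsilon>)"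
      by (rule arith_final[OF nQ qq_nn qq_small qK ge1(1)]) auto
    ultimately show ?thesis by (simp add: add.commute)
  next
    case False
    then have z: "F = 0" for F :: "'x \<Rightarrow>\<^sub>L 'x" by (intro blinfun_eqI) auto
    have "0 \<le> K / (1 - 2 * qq) * (\<mu> \<bar>t\<bar> powr \<epsilon> + \<nu> \<bar>t\<bar> powr \<epsilon>)"
      using qq_small by (intro mult_nonneg_nonneg divide_nonneg_pos) auto
    then show ?thesis using z[of "Ph t"] z[of "Qh t"] by simp
  qed
  show ?thesis
  proof (rule exI[of _ Sinv], unfold Ph_eq Qh_eq Kh_alt, unfold den, intro conjI allI impI)
  qed (use Si1[unfolded S0_def] Si2[unfolded S0_def] PP QQ sum Pinv b1 b2 fin in auto)
qed

end


theorem mainTheorem9: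
  fixes A :: "real \<Rightarrow> 'x::banach \<Rightarrow>\<^sub>L 'x"
    and T :: "real \<Rightarrow> real \<Rightarrow> 'x \<Rightarrow>\<^sub>L 'x"
    and P :: "real \<Rightarrow> 'x \<Rightarrow>\<^sub>L 'x"
    and h k \<mu> \<nu> :: "real \<Rightarrow> real"
    and a b \<epsilon> K c \<omega> N :: real
    and Y :: "'y::banach set"
    and B :: "real \<Rightarrow> 'y \<Rightarrow> 'x \<Rightarrow>\<^sub>L 'x"
    and l :: 'y
    and U V :: "real \<Rightarrow> real \<Rightarrow> 'x \<Rightarrow>\<^sub>L 'x"
    and That :: "real \<Rightarrow> real \<Rightarrow> 'x \<Rightarrow>\<^sub>L 'x"
  assumes Y_open: "open Y"
    and A_cont: "continuous_on UNIV A"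
    and T_evol: "evolution_operator A T"
    and gr: "growth_rate h" "growth_rate k" "growth_rate \<mu>" "growth_rate \<nu>"
    and P_proj: "\<And>t. P t o\<^sub>L P t = P t"
    and P_inv: "\<And>t s. P t o\<^sub>L T t s = T t s o\<^sub>L P s"
    and const_ass: "a < 0" "0 \<le> b" "\<epsilon> \<ge> 0" "K > 0"
    and dich_P: "\<And>t s. t \<ge> s \<Longrightarrow>
        norm (T t s o\<^sub>L P s) \<le> K * (h t / h s) powr a * \<mu> \<bar>s\<bar> powr \<epsilon>"
    and dich_Q: "\<And>t s. s \<ge> t \<Longrightarrow>
        norm (T t s o\<^sub>L (id_blinfun - P s)) \<le> K * (k s / k t) powr (-b) * \<nu> \<bar>s\<bar> powr \<epsilon>"
    and lim_k: "((\<lambda>t. k t powr (-b) * \<nu> \<bar>t\<bar> powr \<epsilon>) \<longlongrightarrow> 0) at_top"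
    and lim_h: "((\<lambda>t. h t powr (-a) * \<mu> \<bar>t\<bar> powr \<epsilon>) \<longlongrightarrow> 0) at_bot"
    and c_pos: "c > 0" and \<omega>_pos: "\<omega> > 0"
    and B_bound: "\<And>t y. y \<in> Y \<Longrightarrow>
        norm (B t y) \<le> c * min (\<mu> \<bar>t\<bar> powr (-\<omega>-\<epsilon>)) (\<nu> \<bar>t\<bar> powr (-\<omega>-\<epsilon>))"
    and B_lip: "\<And>t y1 y2. y1 \<in> Y \<Longrightarrow> y2 \<in> Y \<Longrightarrow>
        norm (B t y1 - B t y2) \<le> c * norm (y1 - y2) *
          min (\<mu> \<bar>t\<bar> powr (-\<omega>-\<epsilon>)) (\<nu> \<bar>t\<bar> powr (-\<omega>-\<epsilon>))"
    and N_int1: "\<And>t. (\<lambda>\<tau>. \<mu> \<bar>\<tau>\<bar> powr (-\<omega>)) integrable_on {..t}"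
    and N_int2: "\<And>t. (\<lambda>\<tau>. \<nu> \<bar>\<tau>\<bar> powr (-\<omega>)) integrable_on {t..}"
    and N_bound: "\<And>t. \<nu> \<bar>t\<bar> powr \<epsilon> * integral {..t} (\<lambda>\<tau>. \<mu> \<bar>\<tau>\<bar> powr (-\<omega>))
        + \<mu> \<bar>t\<bar> powr \<epsilon> * integral {t..} (\<lambda>\<tau>. \<nu> \<bar>\<tau>\<bar> powr (-\<omega>)) \<le> N"
    and c_small: "c < 1 / (K * N * (2 * K + 1))"
    and l_Y: "l \<in> Y"
    \<comment> \<open>U = U^l: for each s, the (unique) element of Omega_1 solving the integral equation\<close>
    and U_cont: "\<And>s. continuous_on {s..} (\<lambda>t. U t s)"
    and U_Omega1: "\<And>s. \<exists>M. \<forall>t\<ge>s.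
        norm (U t s) * (h t / h s) powr (-a) * \<mu> \<bar>s\<bar> powr (-\<epsilon>) \<le> M"
    and U_eq: "\<And>t s. t \<ge> s \<Longrightarrow> \<exists>I1 I2.
        ((\<lambda>\<tau>. T t \<tau> o\<^sub>L P \<tau> o\<^sub>L B \<tau> l o\<^sub>L U \<tau> s) has_integral I1) {s..t} \<and>
        ((\<lambda>\<tau>. T t \<tau> o\<^sub>L (id_blinfun - P \<tau>) o\<^sub>L B \<tau> l o\<^sub>L U \<tau> s) has_integral I2) {t..} \<and>
        U t s = (T t s o\<^sub>L P s) + I1 - I2"
    \<comment> \<open>V = V^l: for each s, the (unique) element of Omega_2 solving the integral equation\<close>
    and V_cont: "\<And>s. continuous_on {..s} (\<lambda>t. V t s)"
    and V_Omega2: "\<And>s. \<exists>M. \<forall>t\<le>s.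
        norm (V t s) * (k s / k t) powr b * \<nu> \<bar>s\<bar> powr (-\<epsilon>) \<le> M"
    and V_eq: "\<And>t s. t \<le> s \<Longrightarrow> \<exists>I1 I2.
        ((\<lambda>\<tau>. T t \<tau> o\<^sub>L P \<tau> o\<^sub>L B \<tau> l o\<^sub>L V \<tau> s) has_integral I1) {..t} \<and>
        ((\<lambda>\<tau>. T t \<tau> o\<^sub>L (id_blinfun - P \<tau>) o\<^sub>L B \<tau> l o\<^sub>L V \<tau> s) has_integral I2) {t..s} \<and>
        V t s = (T t s o\<^sub>L (id_blinfun - P s)) + I1 - I2"
    \<comment> \<open>That = evolution operator of x' = (A(t) + B(t,l)) x\<close>
    and That_evol: "evolution_operator (\<lambda>t. A t + B t l) That"
  shows "\<exists>Sinv.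
     (U 0 0 + V 0 0) o\<^sub>L Sinv = id_blinfun \<and> Sinv o\<^sub>L (U 0 0 + V 0 0) = id_blinfun \<and>
     (let S = U 0 0 + V 0 0;
          Ph = (\<lambda>t. That t 0 o\<^sub>L S o\<^sub>L P 0 o\<^sub>L Sinv o\<^sub>L That 0 t);
          Qh = (\<lambda>t. That t 0 o\<^sub>L S o\<^sub>L (id_blinfun - P 0) o\<^sub>L Sinv o\<^sub>L That 0 t);
          Kh = K / (1 - K * c * N)
      in (\<forall>t. Ph t o\<^sub>L Ph t = Ph t \<and> Qh t o\<^sub>L Qh t = Qh t \<and> Ph t + Qh t = id_blinfun) \<and>
         (\<forall>t s. Ph t o\<^sub>L That t s = That t s o\<^sub>L Ph s) \<and>
         (\<forall>t s. t \<ge> s \<longrightarrow>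
            norm (That t s o\<^sub>L Ph s) \<le> Kh * (h t / h s) powr a * \<mu> \<bar>s\<bar> powr \<epsilon> * norm (Ph s)) \<and>
         (\<forall>t s. t \<le> s \<longrightarrow>
            norm (That t s o\<^sub>L Qh s) \<le> Kh * (k s / k t) powr (-b) * \<nu> \<bar>s\<bar> powr \<epsilon> * norm (Qh s)) \<and>
         (\<forall>t. norm (Ph t) \<le> K / (1 - 2 * K * Kh * c * N) * (\<mu> \<bar>t\<bar> powr \<epsilon> + \<nu> \<bar>t\<bar> powr \<epsilon>)) \<and>
         (\<forall>t. norm (Qh t) \<le> K / (1 - 2 * K * Kh * c * N) * (\<mu> \<bar>t\<bar> powr \<epsilon> + \<nu> \<bar>t\<bar> powr \<epsilon>)))"
proof -
  interpret S: setting A T P h k \<mu> \<nu> a b \<epsilon> K c \<omega> N "\<lambda>t. B t l" U V That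
    apply unfold_locales
    using A_cont T_evol gr P_proj P_inv const_ass dich_P dich_Q lim_k lim_h c_pos \<omega>_pos
      B_bound[OF l_Y] N_int1 N_int2 N_bound c_small U_cont U_Omega1 U_eq V_cont V_Omega2 V_eq That_evol
    by auto
  show ?thesis unfolding Let_def by (rule S.main_result)
qed

end
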